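(* With the notation of the context, for every $i\in\{1,\dots,n\}$: (1) if the indecomposable module $L(i,k)$ exists, then $0<k<2n$; (2) $\ell(P_i)=n+\inf\{r\in\mathbb{N}\mid\sigma^r(i)\in\Delta\}$; in particular $n\leqslant\ell(P_i)<2n$; (3) if $n\leqslant k<\ell(P_i)$, then $\ell(P_{\sigma^k(i)})=\ell(P_i)-(k-n)$; (4) if $0<k<\ell(P_i)$, then $\Omega(L(i,k))\cong L(\sigma^k(i),\ell(P_i)-k)$.
   Context: Let $K$ be a field, $n\geqslant2$, $Q$ the cyclic quiver with vertices $1,\dots,n$ and arrows $\alpha_i:i\to i+1$ ($1\leqslant i\leqslant n-1$), $\alpha_n:n\to1$, paths composed right to left. Let $\rho_1=\alpha_n\cdots\alpha_1$ and $\rho_i=\alpha_{i-1}\cdots\alpha_1\alpha_n\cdots\alpha_i$ for $2\leqslant i\leqslant n$. Fix $1\leqslant m\leqslant n$ and $\Delta=\{\lambda_1<\cdots<\lambda_m\}\subseteq\{1,\dots,n\}$, and let $A_{n,m}=KQ/\langle\rho_\lambda:\lambda\in\Delta\rangle$, with Jacobson radical $J$. Modules are finitely generated left $A_{n,m}$-modules. $e_i$ is the idempotent at vertex $i$, $P_i=A_{n,m}e_i$, $S_i=P_i/Je_i$. The Loewy length is $\ell(M)=\min\{s\geqslant1: J^sM=0\}$. $L(i,k)$ denotes the indecomposable module with top $S_i$ and Loewy length $k$ (i.e. $P_i/J^kP_i$ for $1\leqslant k\leqslant\ell(P_i)$). $\sigma$ is the permutation of $\{1,\dots,n\}$ with $\sigma(i)=i+1$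 for $i<n$ and $\sigma(n)=1$; $\sigma^r$ its $r$-th power, $\sigma^0=\mathrm{id}$. $\Omega(M)$ is the kernel of a projective cover of $M$. *)

theory Defs
  imports "HOL-Algebra.QuotRing" "HOL-Algebra.Module"
begin

definition sig :: "nat \<Rightarrow> nat \<Rightarrow> nat" where
  "sig n i = (if i < n then i + 1 else 1)"

text \<open>A path of the cyclic quiver is determined by its start vertex s in {1..n} and
  its length L (it ends at sigma^L(s)); the trivial path at s is (s,0) = e_s.
  An element of the path algebra KQ is a finitely supported K-linear combination
  of paths, i.e. a function (s,L) to K with finite support on {1..n} x N.
  Multiplication is the K-bilinear extension of concatenation, composed right to
  left: for paths p = (s,L1) and q = (sigma^L1 s, L2), q*p = (s, L1+L2).\<close>
type_synonym 'k pel = "nat \<times> nat \<Rightarrow> 'k"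

definition path_alg :: "nat \<Rightarrow> ('k::field) pel ring" where
  "path_alg n = \<lparr> carrier = {f. finite {p. f p \<noteq> 0} \<and> (\<forall>s L. f (s, L) \<noteq> 0 \<longrightarrow> s \<in> {1..n})},
      mult = (\<lambda>f g (s, L). \<Sum>L1\<le>L. f ((sig n ^^ L1) s, L - L1) * g (s, L1)),
      one = (\<lambda>(s, L). if s \<in> {1..n} \<and> L = 0 then 1 else 0),
      zero = (\<lambda>_. 0),
      add = (\<lambda>f g p. f p + g p) \<rparr>"

definition path_el :: "nat \<Rightarrow> nat \<Rightarrow> ('k::field) pel" where
  "path_el s L = (\<lambda>p. if p = (s, L) then 1 else 0)"

definition rho :: "nat \<Rightarrow> nat \<Rightarrow> ('k::field) pel" where
  "rho n lam = path_el lam n"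

definition rel_ideal :: "nat \<Rightarrow> nat set \<Rightarrow> ('k::field) pel set" where
  "rel_ideal n Delta = genideal (path_alg n) {rho n lam | lam. lam \<in> Delta}"

definition Aalg :: "nat \<Rightarrow> nat set \<Rightarrow> ('k::field) pel set ring" where
  "Aalg n Delta = (path_alg n) Quot (rel_ideal n Delta)"

definition idem :: "nat \<Rightarrow> nat set \<Rightarrow> nat \<Rightarrow> ('k::field) pel set" where
  "idem n Delta i = a_r_coset (path_alg n) (rel_ideal n Delta) (path_el i 0)"

definition left_module :: "'a ring \<Rightarrow> ('a, 'b) module \<Rightarrow> bool" where
  "left_module R M \<longleftrightarrow> ring R \<and> abelian_group M \<and>
     (\<forall>a\<in>carrier R. \<forall>x\<in>carrier M. smult M a x \<in> carrier M) \<and>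
     (\<forall>a\<in>carrier R. \<forall>b\<in>carrier R. \<forall>x\<in>carrier M.
        smult M (a \<oplus>\<^bsub>R\<^esub> b) x = smult M a x \<oplus>\<^bsub>M\<^esub> smult M b x) \<and>
     (\<forall>a\<in>carrier R. \<forall>x\<in>carrier M. \<forall>y\<in>carrier M.
        smult M a (x \<oplus>\<^bsub>M\<^esub> y) = smult M a x \<oplus>\<^bsub>M\<^esub> smult M a y) \<and>
     (\<forall>a\<in>carrier R. \<forall>b\<in>carrier R. \<forall>x\<in>carrier M.
        smult M (a \<otimes>\<^bsub>R\<^esub> b) x = smult M a (smult M b x)) \<and>
     (\<forall>x\<in>carrier M. smult M \<one>\<^bsub>R\<^esub> x = x)"

definition submod :: "'a ring \<Rightarrow> ('a, 'b) module \<Rightarrow> 'b set \<Rightarrow> bool" where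
  "submod R M N \<longleftrightarrow> N \<subseteq> carrier M \<and> additive_subgroup N M \<and>
     (\<forall>a\<in>carrier R. \<forall>x\<in>N. smult M a x \<in> N)"

definition submod_gen :: "'a ring \<Rightarrow> ('a, 'b) module \<Rightarrow> 'b set \<Rightarrow> 'b set" where
  "submod_gen R M S = \<Inter>{N. submod R M N \<and> S \<subseteq> N}"

definition fin_gen :: "'a ring \<Rightarrow> ('a, 'b) module \<Rightarrow> bool" where
  "fin_gen R M \<longleftrightarrow> (\<exists>S. finite S \<and> S \<subseteq> carrier M \<and> submod_gen R M S = carrier M)"

definition sub_module :: "('a, 'b) module \<Rightarrow> 'b set \<Rightarrow> ('a, 'b) module" where
  "sub_module M N = M\<lparr>carrier := N\<rparr>"

text \<open>Quotient module M/N (cosets N + x); the multiplicative fields are unused.\<close>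
definition quot_mod :: "('a, 'b) module \<Rightarrow> 'b set \<Rightarrow> ('a, 'b set) module" where
  "quot_mod M N = \<lparr> carrier = a_rcosets\<^bsub>M\<^esub> N, mult = (\<lambda>X Y. N), one = N, zero = N,
      add = set_add M, smult = (\<lambda>a X. set_add M N ((\<lambda>x. smult M a x) ` X)) \<rparr>"

definition mod_hom :: "'a ring \<Rightarrow> ('a, 'b) module \<Rightarrow> ('a, 'c) module \<Rightarrow> ('b \<Rightarrow> 'c) \<Rightarrow> bool" where
  "mod_hom R M N f \<longleftrightarrow> f \<in> carrier M \<rightarrow> carrier N \<and>
     (\<forall>x\<in>carrier M. \<forall>y\<in>carrier M. f (x \<oplus>\<^bsub>M\<^esub> y) = f x \<oplus>\<^bsub>N\<^esub> f y) \<and>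
     (\<forall>a\<in>carrier R. \<forall>x\<in>carrier M. f (smult M a x) = smult N a (f x))"

definition mod_iso :: "'a ring \<Rightarrow> ('a, 'b) module \<Rightarrow> ('a, 'c) module \<Rightarrow> bool" where
  "mod_iso R M N \<longleftrightarrow> (\<exists>f. mod_hom R M N f \<and> bij_betw f (carrier M) (carrier N))"

definition indecomp :: "'a ring \<Rightarrow> ('a, 'b) module \<Rightarrow> bool" where
  "indecomp R M \<longleftrightarrow> carrier M \<noteq> {\<zero>\<^bsub>M\<^esub>} \<and>
     (\<forall>N1 N2. submod R M N1 \<and> submod R M N2 \<and> N1 \<inter> N2 = {\<zero>\<^bsub>M\<^esub>} \<and>
        set_add M N1 N2 = carrier M \<longrightarrow> N1 = {\<zero>\<^bsub>M\<^esub>} \<or> N2 = {\<zero>\<^bsub>M\<^esub>})"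

definition left_ideal :: "'a ring \<Rightarrow> 'a set \<Rightarrow> bool" where
  "left_ideal R L \<longleftrightarrow> additive_subgroup L R \<and> (\<forall>a\<in>carrier R. \<forall>x\<in>L. a \<otimes>\<^bsub>R\<^esub> x \<in> L)"

definition max_left_ideal :: "'a ring \<Rightarrow> 'a set \<Rightarrow> bool" where
  "max_left_ideal R L \<longleftrightarrow> left_ideal R L \<and> L \<noteq> carrier R \<and>
     (\<forall>L'. left_ideal R L' \<and> L \<subseteq> L' \<and> L' \<noteq> carrier R \<longrightarrow> L' = L)"

definition jac :: "'a ring \<Rightarrow> 'a set" where
  "jac R = \<Inter>{L. max_left_ideal R L}"

fun rad_pow :: "'a ring \<Rightarrow> ('a, 'b) module \<Rightarrow> nat \<Rightarrow> 'b set" where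
  "rad_pow R M 0 = carrier M"
| "rad_pow R M (Suc s) =
     submod_gen R M {smult M a x | a x. a \<in> jac R \<and> x \<in> rad_pow R M s}"

definition loewy :: "'a ring \<Rightarrow> ('a, 'b) module \<Rightarrow> nat" where
  "loewy R M = (LEAST s. 1 \<le> s \<and> rad_pow R M s = {\<zero>\<^bsub>M\<^esub>})"

text \<open>HOL cannot quantify over
  all types inside a definition; we test modules whose carrier has type 'b => 'a,
  which contains a copy of the free module on carrier P (finitely supported
  functions carrier P -> R), so this is equivalent to the usual notion.\<close>
definition projective :: "'a ring \<Rightarrow> ('a, 'b) module \<Rightarrow> bool" where
  "projective R P \<longleftrightarrow> left_module R P \<and>
     (\<forall>(M :: ('a, 'b \<Rightarrow> 'a) module) g. left_module R M \<and> mod_hom R M P g \<and>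
        g ` carrier M = carrier P \<longrightarrow>
        (\<exists>h. mod_hom R P M h \<and> (\<forall>x\<in>carrier P. g (h x) = x)))"

definition mod_ker :: "('a, 'b) module \<Rightarrow> ('a, 'c) module \<Rightarrow> ('b \<Rightarrow> 'c) \<Rightarrow> 'b set" where
  "mod_ker P M p = {x \<in> carrier P. p x = \<zero>\<^bsub>M\<^esub>}"

definition superfluous :: "'a ring \<Rightarrow> ('a, 'b) module \<Rightarrow> 'b set \<Rightarrow> bool" where
  "superfluous R P K \<longleftrightarrow> submod R P K \<and>
     (\<forall>N. submod R P N \<and> set_add P N K = carrier P \<longrightarrow> N = carrier P)"

definition proj_cover :: "'a ring \<Rightarrow> ('a, 'b) module \<Rightarrow> ('a, 'c) module \<Rightarrow> ('b \<Rightarrow> 'c) \<Rightarrow> bool" where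
  "proj_cover R P M p \<longleftrightarrow> projective R P \<and> left_module R M \<and> mod_hom R P M p \<and>
     p ` carrier P = carrier M \<and> superfluous R P (mod_ker P M p)"

definition reg_mod :: "'a ring \<Rightarrow> ('a, 'a) module" where
  "reg_mod R = \<lparr> carrier = carrier R, mult = mult R, one = one R, zero = zero R,
      add = add R, smult = mult R \<rparr>"

definition Pmod :: "nat \<Rightarrow> nat set \<Rightarrow> nat \<Rightarrow> (('k::field) pel set, 'k pel set) module" where
  "Pmod n Delta i = sub_module (reg_mod (Aalg n Delta))
     {a \<otimes>\<^bsub>Aalg n Delta\<^esub> idem n Delta i | a. a \<in> carrier (Aalg n Delta)}"

definition Smod :: "nat \<Rightarrow> nat set \<Rightarrow> nat \<Rightarrow> (('k::field) pel set, 'k pel set set) module" where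
  "Smod n Delta i = quot_mod (Pmod n Delta i)
     {a \<otimes>\<^bsub>Aalg n Delta\<^esub> idem n Delta i | a. a \<in> jac (Aalg n Delta)}"

definition Lmod :: "nat \<Rightarrow> nat set \<Rightarrow> nat \<Rightarrow> nat \<Rightarrow> (('k::field) pel set, 'k pel set set) module" where
  "Lmod n Delta i k = quot_mod (Pmod n Delta i) (rad_pow (Aalg n Delta) (Pmod n Delta i) k)"

definition has_top :: "nat \<Rightarrow> nat set \<Rightarrow> nat \<Rightarrow> (('k::field) pel set, 'b) module \<Rightarrow> bool" where
  "has_top n Delta i M \<longleftrightarrow>
     mod_iso (Aalg n Delta) (quot_mod M (rad_pow (Aalg n Delta) M 1)) (Smod n Delta i)"

end

theory Submission
  imports Defs
begin
lemma sig_in: "1 \<le> n \<Longrightarrow> i \<in> {1..n} \<Longrightarrow> sig n i \<in> {1..n}"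
  by (auto simp: sig_def)

lemma sig_pow_in: assumes "1 \<le> n" "i \<in> {1..n}" shows "(sig n ^^ r) i \<in> {1..n}"
  by (induct r) (use assms sig_in in auto)

lemma sig_mod_step: "1 \<le> n \<Longrightarrow> sig n (Suc (x mod n)) = Suc ((Suc x) mod n)"
proof -
  assume n: "1 \<le> n"
  have "x mod n < n" using n by simp
  then show ?thesis by (auto simp: sig_def mod_Suc)
qed

lemma sig_pow_formula0:
  assumes "1 \<le> n" "a < n"
  shows "(sig n ^^ r) (Suc a) = Suc ((a + r) mod n)"
proof (induct r)
  case 0 then show ?case using assms by auto
next
  case (Suc r)
  have "(sig n ^^ Suc r) (Suc a) = sig n (Suc ((a + r) mod n))" using Suc by simp
  also have "\<dots> = Suc ((Suc (a + r)) mod n)"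
    using assms by (simp add: sig_mod_step)
  finally show ?case by simp
qed

lemma sig_pow_formula:
  assumes "1 \<le> n" "i \<in> {1..n}"
  shows "(sig n ^^ r) i = Suc ((i - 1 + r) mod n)"
proof -
  obtain a where a: "i = Suc a" "a < n" using assms by (cases i) auto
  show ?thesis using sig_pow_formula0[OF assms(1) a(2)] a by simp
qed

lemma sig_pow_n: assumes "1 \<le> n" "i \<in> {1..n}" shows "(sig n ^^ n) i = i"
proof -
  obtain a where a: "i = Suc a" "a < n" using assms by (cases i) auto
  show ?thesis using sig_pow_formula0[OF assms(1) a(2)] a by simp
qed

lemma sig_pow_add: "(sig n ^^ (a + b)) i = (sig n ^^ a) ((sig n ^^ b) i)"
  by (simp add: funpow_add)

lemma sig_pow_mod: assumes "1 \<le> n" "i \<in> {1..n}" shows "(sig n ^^ r) i = (sig n ^^ (r mod n)) i"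
proof -
  obtain a where a: "i = Suc a" "a < n" using assms by (cases i) auto
  show ?thesis using sig_pow_formula0[OF assms(1) a(2)] a by (simp add: mod_add_right_eq)
qed

lemma sig_pow_surj: assumes "1 \<le> n" "i \<in> {1..n}" "j \<in> {1..n}"
  shows "\<exists>r<n. (sig n ^^ r) i = j"
proof -
  obtain a where a: "i = Suc a" "a < n" using assms by (cases i) auto
  obtain b where b: "j = Suc b" "b < n" using assms by (cases j) auto
  define r where "r = (b + n - a) mod n"
  have "r < n" using assms by (simp add: r_def)
  moreover have "(a + r) mod n = b"
  proof -
    have "(a + r) mod n = (a + (b + n - a)) mod n" by (simp add: r_def mod_add_right_eq)
    also have "a + (b + n - a) = b + n" using a by auto
    also have "(b + n) mod n = b" using b by simp
    finally show ?thesis .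
  qed
  ultimately show ?thesis using sig_pow_formula0[OF assms(1) a(2)] a b by auto
qed

definition pmul :: "nat \<Rightarrow> ('k::field) pel \<Rightarrow> 'k pel \<Rightarrow> 'k pel" where
  "pmul n f g = (\<lambda>(s, L). \<Sum>L1\<le>L. f ((sig n ^^ L1) s, L - L1) * g (s, L1))"

definition pone :: "nat \<Rightarrow> ('k::field) pel" where
  "pone n = (\<lambda>(s, L). if s \<in> {1..n} \<and> L = 0 then 1 else 0)"

definition pcar :: "nat \<Rightarrow> ('k::field) pel set" where
  "pcar n = {f. \<exists>B. \<forall>s L. f (s, L) \<noteq> 0 \<longrightarrow> s \<in> {1..n} \<and> L \<le> B}"

lemma pmul_apply: "pmul n f g (s, L) = (\<Sum>L1\<le>L. f ((sig n ^^ L1) s, L - L1) * g (s, L1))"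
  by (simp add: pmul_def)

lemma pone_apply: "pone n (s, L) = (if s \<in> {1..n} \<and> L = 0 then 1 else 0)"
  by (simp add: pone_def)

lemma KQ_carrier: "carrier (path_alg n) = pcar n"
proof -
  have "finite {p. f p \<noteq> 0} \<and> (\<forall>s L. f (s, L) \<noteq> 0 \<longrightarrow> s \<in> {1..n}) \<longleftrightarrow>
        (\<exists>B. \<forall>s L. f (s, L) \<noteq> 0 \<longrightarrow> s \<in> {1..n} \<and> L \<le> B)" for f :: "'a pel"
  proof
    assume a: "finite {p. f p \<noteq> 0} \<and> (\<forall>s L. f (s, L) \<noteq> 0 \<longrightarrow> s \<in> {1..n})"
    define B where "B = Max (insert 0 (snd ` {p. f p \<noteq> 0}))"
    have "\<forall>s L. f (s, L) \<noteq> 0 \<longrightarrow> s \<in> {1..n} \<and> L \<le> B"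
    proof (intro allI impI conjI)
      fix s L assume "f (s, L) \<noteq> 0"
      then show "s \<in> {1..n}" using a by blast
      have "L \<in> insert 0 (snd ` {p. f p \<noteq> 0})" using \<open>f (s, L) \<noteq> 0\<close> by force
      then show "L \<le> B" unfolding B_def using a by (intro Max_ge) auto
    qed
    then show "\<exists>B. \<forall>s L. f (s, L) \<noteq> 0 \<longrightarrow> s \<in> {1..n} \<and> L \<le> B" by blast
  next
    assume "\<exists>B. \<forall>s L. f (s, L) \<noteq> 0 \<longrightarrow> s \<in> {1..n} \<and> L \<le> B"
    then obtain B where B: "\<forall>s L. f (s, L) \<noteq> 0 \<longrightarrow> s \<in> {1..n} \<and> L \<le> B" by blast
    have "{p. f p \<noteq> 0} \<subseteq> {1..n} \<times> {..B}" using B by auto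
    then have "finite {p. f p \<noteq> 0}" by (rule finite_subset) auto
    then show "finite {p. f p \<noteq> 0} \<and> (\<forall>s L. f (s, L) \<noteq> 0 \<longrightarrow> s \<in> {1..n})" using B by blast
  qed
  then show ?thesis by (auto simp: path_alg_def pcar_def)
qed

lemma KQ_mult: "mult (path_alg n) = pmul n"
  by (simp add: path_alg_def pmul_def fun_eq_iff)
lemma KQ_add: "add (path_alg n) = (\<lambda>f g p. f p + g p)"
  by (simp add: path_alg_def)
lemma KQ_zero: "zero (path_alg n) = (\<lambda>_. 0)"
  by (simp add: path_alg_def)
lemma KQ_one: "one (path_alg n) = pone n"
  by (simp add: path_alg_def pone_def)

lemmas KQ_simps = KQ_carrier KQ_mult KQ_add KQ_zero KQ_one

lemma pcarD: "f \<in> pcar n \<Longrightarrow> f (s, L) \<noteq> 0 \<Longrightarrow> s \<in> {1..n}"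
  by (auto simp: pcar_def)

lemma pcar_out: "f \<in> pcar n \<Longrightarrow> s \<notin> {1..n} \<Longrightarrow> f (s, L) = 0"
  using pcarD by blast

lemma pmul_closed:
  assumes "f \<in> pcar n" "g \<in> pcar n" shows "pmul n f g \<in> pcar n"
proof -
  obtain Bf where Bf: "\<forall>s L. f (s, L) \<noteq> 0 \<longrightarrow> s \<in> {1..n} \<and> L \<le> Bf" using assms by (auto simp: pcar_def)
  obtain Bg where Bg: "\<forall>s L. g (s, L) \<noteq> 0 \<longrightarrow> s \<in> {1..n} \<and> L \<le> Bg" using assms by (auto simp: pcar_def)
  have "\<forall>s L. pmul n f g (s, L) \<noteq> 0 \<longrightarrow> s \<in> {1..n} \<and> L \<le> Bf + Bg"
  proof (intro allI impI)
    fix s L assume "pmul n f g (s, L) \<noteq> 0"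
    then obtain L1 where "L1 \<in> {..L}" "f ((sig n ^^ L1) s, L - L1) * g (s, L1) \<noteq> 0"
      unfolding pmul_apply by (meson sum.not_neutral_contains_not_neutral)
    then show "s \<in> {1..n} \<and> L \<le> Bf + Bg" using Bf Bg by fastforce
  qed
  then show ?thesis by (auto simp: pcar_def)
qed

lemma padd_closed: "f \<in> pcar n \<Longrightarrow> g \<in> pcar n \<Longrightarrow> (\<lambda>p. f p + g p) \<in> pcar n"
proof -
  assume a: "f \<in> pcar n" "g \<in> pcar n"
  obtain Bf where Bf: "\<forall>s L. f (s, L) \<noteq> 0 \<longrightarrow> s \<in> {1..n} \<and> L \<le> Bf" using a by (auto simp: pcar_def)
  obtain Bg where Bg: "\<forall>s L. g (s, L) \<noteq> 0 \<longrightarrow> s \<in> {1..n} \<and> L \<le> Bg" using a by (auto simp: pcar_def)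
  have "\<forall>s L. f (s, L) + g (s, L) \<noteq> 0 \<longrightarrow> s \<in> {1..n} \<and> L \<le> Bf + Bg"
    using Bf Bg by (metis add.right_neutral add_0 trans_le_add1 trans_le_add2)
  then show ?thesis by (auto simp: pcar_def)
qed

lemma pneg_closed: "f \<in> pcar n \<Longrightarrow> (\<lambda>p. - f p) \<in> pcar n"
  by (auto simp: pcar_def)

lemma pzero_closed: "(\<lambda>_. 0) \<in> pcar n"
  by (auto simp: pcar_def)

lemma pone_closed: "pone n \<in> pcar n"
  by (auto simp: pcar_def pone_apply)

lemma funpow_split: "i \<le> k \<Longrightarrow> (f ^^ (k - i)) ((f ^^ i) x) = (f ^^ k) x"
  by (metis funpow_add le_add_diff_inverse2 o_apply)

lemma pmul_assoc_pt:
  "pmul n (pmul n f g) h (s, L) = pmul n f (pmul n g h) (s, L)"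
proof -
  define F where "F = (\<lambda>a b. f ((sig n ^^ b) ((sig n ^^ a) s), L - (a + b)) * g ((sig n ^^ a) s, b) * h (s, a))"
  have "pmul n (pmul n f g) h (s, L) = (\<Sum>L1\<le>L. \<Sum>L2\<le>L - L1. F L1 L2)"
    unfolding pmul_apply F_def
    by (simp add: sum_distrib_right diff_diff_eq)
  also have "\<dots> = (\<Sum>(a, b)\<in>(SIGMA a:{..L}. {..L - a}). F a b)"
    by (rule sum.Sigma) auto
  also have "(SIGMA a:{..L}. {..L - a}) = {(a, b). a + b \<le> L}" by auto
  also have "(\<Sum>(a, b)\<in>{(a, b). a + b \<le> L}. F a b) = (\<Sum>k\<le>L. \<Sum>i\<le>k. F i (k - i))"
    by (rule sum.triangle_reindex_eq)
  also have "\<dots> = pmul n f (pmul n g h) (s, L)"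
    unfolding pmul_apply F_def
    by (intro sum.cong refl) (simp add: sum_distrib_left mult.assoc funpow_split)
  finally show ?thesis .
qed

lemma pmul_assoc: "pmul n (pmul n f g) h = pmul n f (pmul n g h)"
  by (rule ext, clarify, rule pmul_assoc_pt)

lemma sum_single_nat:
  assumes "k \<le> (L::nat)" "\<And>j. j \<le> L \<Longrightarrow> j \<noteq> k \<Longrightarrow> F j = 0"
  shows "(\<Sum>j\<le>L. F j) = (F k :: 'a::comm_monoid_add)"
proof -
  have "(\<Sum>j\<le>L. F j) = F k + (\<Sum>j\<in>{..L} - {k}. F j)"
    using assms(1) by (subst sum.remove[of _ k]) auto
  also have "(\<Sum>j\<in>{..L} - {k}. F j) = 0" using assms(2) by (intro sum.neutral) auto
  finally show ?thesis by simp
qed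

lemma pone_left: assumes "1 \<le> n" "f \<in> pcar n" shows "pmul n (pone n) f = f"
proof (rule ext, clarify)
  fix s L
  show "pmul n (pone n) f (s, L) = f (s, L)"
  proof (cases "s \<in> {1..n}")
    case True
    have "pmul n (pone n) f (s, L) = pone n ((sig n ^^ L) s, L - L) * f (s, L)"
      unfolding pmul_apply by (rule sum_single_nat) (auto simp: pone_apply)
    then show ?thesis using sig_pow_in[OF assms(1) True] by (simp add: pone_apply)
  next
    case False
    then show ?thesis using pcar_out[OF assms(2)] by (simp add: pmul_apply)
  qed
qed

lemma pone_right: assumes "f \<in> pcar n" shows "pmul n f (pone n) = f"
proof (rule ext, clarify)
  fix s L
  show "pmul n f (pone n) (s, L) = f (s, L)"
  proof (cases "s \<in> {1..n}")
    case True
    have "pmul n f (pone n) (s, L) = f ((sig n ^^ 0) s, L - 0) * pone n (s, 0)"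
      unfolding pmul_apply by (rule sum_single_nat) (auto simp: pone_apply)
    then show ?thesis using True by (simp add: pone_apply)
  next
    case False
    then show ?thesis using pcar_out[OF assms] by (auto simp: pmul_apply pone_apply intro!: sum.neutral)
  qed
qed

lemma KQ_ring: assumes "1 \<le> n" shows "ring (path_alg n :: ('k::field) pel ring)"
proof (rule ringI)
  show "abelian_group (path_alg n :: 'k pel ring)"
  proof (rule abelian_groupI, simp_all add: KQ_simps padd_closed pzero_closed)
    fix x :: "'k pel" assume "x \<in> pcar n"
    then show "\<exists>y\<in>pcar n. (\<lambda>p. y p + x p) = (\<lambda>_. 0)"
      by (intro bexI[of _ "\<lambda>p. - x p"] pneg_closed) auto
  qed (auto simp: add.assoc add.commute)
  show "monoid (path_alg n :: 'k pel ring)"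
    by (rule monoidI) (simp_all add: KQ_simps pmul_closed pone_closed pmul_assoc pone_left[OF assms] pone_right)
qed (simp_all add: KQ_simps pmul_def sum.distrib distrib_left distrib_right fun_eq_iff)

definition bad :: "nat \<Rightarrow> nat set \<Rightarrow> nat \<times> nat \<Rightarrow> bool" where
  "bad n D p = (\<exists>t. t + n \<le> snd p \<and> (sig n ^^ t) (fst p) \<in> D)"

definition badset :: "nat \<Rightarrow> nat set \<Rightarrow> ('k::field) pel set" where
  "badset n D = {f \<in> pcar n. \<forall>p. f p \<noteq> 0 \<longrightarrow> bad n D p}"

definition tr :: "nat \<Rightarrow> nat set \<Rightarrow> ('k::field) pel \<Rightarrow> 'k pel" where
  "tr n D f = (\<lambda>p. if bad n D p then 0 else f p)"

definition sc :: "'k::field \<Rightarrow> 'k pel \<Rightarrow> 'k pel" where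
  "sc c f = (\<lambda>p. c * f p)"

definition clsf :: "nat \<Rightarrow> nat set \<Rightarrow> ('k::field) pel \<Rightarrow> 'k pel set" where
  "clsf n D f = rel_ideal n D +>\<^bsub>path_alg n\<^esub> f"

definition rep :: "nat \<Rightarrow> nat set \<Rightarrow> ('k::field) pel set \<Rightarrow> 'k pel" where
  "rep n D z = tr n D (SOME f. f \<in> pcar n \<and> clsf n D f = z)"

lemma bad_shift: "bad n D ((sig n ^^ L1) s, L2) \<Longrightarrow> bad n D (s, L1 + L2)"
proof -
  assume "bad n D ((sig n ^^ L1) s, L2)"
  then obtain t where "t + n \<le> L2" "(sig n ^^ t) ((sig n ^^ L1) s) \<in> D" by (auto simp: bad_def)
  then have "(t + L1) + n \<le> L1 + L2" "(sig n ^^ (t + L1)) s \<in> D" by (auto simp: funpow_add)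
  then show ?thesis unfolding bad_def by (intro exI[of _ "t + L1"]) auto
qed

lemma bad_ext: "bad n D (s, L1) \<Longrightarrow> L1 \<le> L \<Longrightarrow> bad n D (s, L)"
  by (auto simp: bad_def) (meson le_trans)

lemma bad_0: "1 \<le> n \<Longrightarrow> \<not> bad n D (s, 0)"
  by (auto simp: bad_def)

lemma path_el_apply: "path_el s L p = (if p = (s, L) then 1 else 0)"
  by (simp add: path_el_def)

lemma path_el_pcar: "s \<in> {1..n} \<Longrightarrow> path_el s L \<in> pcar n"
  by (auto simp: pcar_def path_el_def)

lemma sc_pcar: "f \<in> pcar n \<Longrightarrow> sc c f \<in> pcar n"
  by (auto simp: pcar_def sc_def)

lemma sc_pmul: "pmul n (sc c f) g = sc c (pmul n f g)"
  by (auto simp: pmul_def sc_def fun_eq_iff sum_distrib_left mult.assoc)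

lemma pmul_path_el:
  "pmul n (path_el ((sig n ^^ L) s) M) (path_el s L) = path_el s (L + M)"
proof (rule ext, clarify)
  fix s' L'
  show "pmul n (path_el ((sig n ^^ L) s) M) (path_el s L) (s', L') = path_el s (L + M) (s', L')"
  proof (cases "s' = s \<and> L \<le> L'")
    case True
    then have "pmul n (path_el ((sig n ^^ L) s) M) (path_el s L) (s', L') =
       path_el ((sig n ^^ L) s) M ((sig n ^^ L) s', L' - L) * path_el s L (s', L)"
      unfolding pmul_apply by (intro sum_single_nat) (auto simp: path_el_apply)
    then show ?thesis using True by (auto simp: path_el_apply)
  next
    case False
    then show ?thesis by (auto simp: pmul_apply path_el_apply intro!: sum.neutral)
  qed
qed

lemma pmul_bad_left:
  assumes "f \<in> badset n D" "pmul n f g (s, L) \<noteq> 0" shows "bad n D (s, L)"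
proof -
  from assms(2) obtain L1 where L1: "L1 \<le> L" "f ((sig n ^^ L1) s, L - L1) * g (s, L1) \<noteq> 0"
    unfolding pmul_apply by (meson atMost_iff sum.not_neutral_contains_not_neutral)
  then have "bad n D ((sig n ^^ L1) s, L - L1)" using assms(1) by (auto simp: badset_def)
  then show ?thesis using bad_shift L1 by fastforce
qed

lemma pmul_bad_right:
  assumes "g \<in> badset n D" "pmul n f g (s, L) \<noteq> 0" shows "bad n D (s, L)"
proof -
  from assms(2) obtain L1 where L1: "L1 \<le> L" "f ((sig n ^^ L1) s, L - L1) * g (s, L1) \<noteq> 0"
    unfolding pmul_apply by (meson atMost_iff sum.not_neutral_contains_not_neutral)
  then have "bad n D (s, L1)" using assms(1) by (auto simp: badset_def)
  then show ?thesis using bad_ext L1 by blast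
qed

lemma KQ_minus: assumes "1 \<le> n" "f \<in> pcar n"
  shows "\<ominus>\<^bsub>path_alg n\<^esub> f = (\<lambda>p. - f p)"
proof -
  interpret ring "path_alg n :: 'a pel ring" by (rule KQ_ring[OF assms(1)])
  show ?thesis
    by (rule minus_equality) (use assms in \<open>auto simp: KQ_simps pneg_closed\<close>)
qed

lemma badset_ideal: assumes "1 \<le> n" shows "ideal (badset n D) (path_alg n :: ('k::field) pel ring)"
proof -
  interpret R: ring "path_alg n :: 'k pel ring" by (rule KQ_ring[OF assms(1)])
  show ?thesis
  proof (rule idealI)
    show "ring (path_alg n :: 'k pel ring)" by (rule R.ring_axioms)
    show "subgroup (badset n D) (add_monoid (path_alg n :: 'k pel ring))"
    proof (rule subgroup.intro)
      show "badset n D \<subseteq> carrier (add_monoid (path_alg n :: 'k pel ring))"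
        by (auto simp: badset_def KQ_simps)
      show "\<And>x y. x \<in> badset n D \<Longrightarrow> y \<in> badset n D \<Longrightarrow> x \<otimes>\<^bsub>add_monoid (path_alg n)\<^esub> y \<in> badset n D"
        by (auto simp: badset_def KQ_simps padd_closed) (metis add.right_neutral)
      show "\<one>\<^bsub>add_monoid (path_alg n :: 'k pel ring)\<^esub> \<in> badset n D"
        by (auto simp: badset_def KQ_simps pzero_closed)
      show "\<And>x. x \<in> badset n D \<Longrightarrow> inv\<^bsub>add_monoid (path_alg n :: 'k pel ring)\<^esub> x \<in> badset n D"
      proof -
        fix x :: "'k pel" assume x: "x \<in> badset n D"
        have "inv\<^bsub>add_monoid (path_alg n :: 'k pel ring)\<^esub> x = \<ominus>\<^bsub>path_alg n\<^esub> x" by (simp add: a_inv_def)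
        also have "\<dots> = (\<lambda>p. - x p)" using x KQ_minus[OF assms] by (auto simp: badset_def)
        finally show "inv\<^bsub>add_monoid (path_alg n :: 'k pel ring)\<^esub> x \<in> badset n D"
          using x by (auto simp: badset_def pneg_closed)
      qed
    qed
    show "\<And>a x. a \<in> badset n D \<Longrightarrow> x \<in> carrier (path_alg n) \<Longrightarrow> x \<otimes>\<^bsub>path_alg n\<^esub> a \<in> badset n D"
      using pmul_bad_right by (auto simp: badset_def KQ_simps pmul_closed) blast
    show "\<And>a x. a \<in> badset n D \<Longrightarrow> x \<in> carrier (path_alg n) \<Longrightarrow> a \<otimes>\<^bsub>path_alg n\<^esub> x \<in> badset n D"
      using pmul_bad_left by (auto simp: badset_def KQ_simps pmul_closed) blast
  qed
qed

lemma rho_pcar: "lam \<in> {1..n} \<Longrightarrow> rho n lam \<in> pcar n"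
  by (simp add: rho_def path_el_pcar)

context
  fixes n :: nat and D :: "nat set"
  assumes n1: "1 \<le> n" and Dsub: "D \<subseteq> {1..n}"
begin

lemma rel_ideal_sub: "rel_ideal n D \<subseteq> (badset n D :: ('k::field) pel set)"
proof -
  interpret R: ring "path_alg n :: 'k pel ring" by (rule KQ_ring[OF n1])
  have "{rho n lam | lam. lam \<in> D} \<subseteq> (badset n D :: 'k pel set)"
  proof
    fix x :: "'k pel" assume "x \<in> {rho n lam | lam. lam \<in> D}"
    then obtain lam where "lam \<in> D" "x = rho n lam" by blast
    then show "x \<in> badset n D" using Dsub
      by (auto simp: badset_def rho_def path_el_pcar path_el_apply bad_def split: if_splits intro!: exI[of _ 0])
  qed
  then show ?thesis unfolding rel_ideal_def
    by (intro R.genideal_minimal badset_ideal[OF n1])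
qed

lemma rel_ideal_ideal: "ideal (rel_ideal n D) (path_alg n :: ('k::field) pel ring)"
proof -
  interpret R: ring "path_alg n :: 'k pel ring" by (rule KQ_ring[OF n1])
  show ?thesis unfolding rel_ideal_def
    by (rule R.genideal_ideal) (use Dsub in \<open>auto simp: KQ_simps intro!: rho_pcar\<close>)
qed

lemma rho_in: "lam \<in> D \<Longrightarrow> (rho n lam :: ('k::field) pel) \<in> rel_ideal n D"
proof -
  assume "lam \<in> D"
  interpret R: ring "path_alg n :: 'k pel ring" by (rule KQ_ring[OF n1])
  show ?thesis unfolding rel_ideal_def
    by (rule subsetD[OF R.genideal_self]) (use Dsub \<open>lam \<in> D\<close> in \<open>auto simp: KQ_simps intro!: rho_pcar\<close>)
qed

lemma bad_path_in: assumes "bad n D (s, L)" "s \<in> {1..n}"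
  shows "(sc c (path_el s L) :: ('k::field) pel) \<in> rel_ideal n D"
proof -
  interpret I: ideal "rel_ideal n D" "path_alg n :: 'k pel ring" by (rule rel_ideal_ideal)
  obtain t where t: "t + n \<le> L" "(sig n ^^ t) s \<in> D" using assms by (auto simp: bad_def)
  have st: "(sig n ^^ t) s \<in> {1..n}" "(sig n ^^ (t + n)) s \<in> {1..n}" using sig_pow_in[OF n1 assms(2)] by auto
  have e1: "pmul n (rho n ((sig n ^^ t) s)) (path_el s t) = (path_el s (t + n) :: 'k pel)"
    unfolding rho_def by (rule pmul_path_el)
  have e2: "pmul n (sc c (path_el ((sig n ^^ (t + n)) s) (L - (t + n)))) (path_el s (t + n)) = (sc c (path_el s L) :: 'k pel)"
    using t(1) by (simp add: sc_pmul pmul_path_el)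
  have "rho n ((sig n ^^ t) s) \<in> (rel_ideal n D :: 'k pel set)" using t rho_in by blast
  then have "pmul n (rho n ((sig n ^^ t) s)) (path_el s t) \<in> (rel_ideal n D :: 'k pel set)"
    using I.I_r_closed[of "rho n ((sig n ^^ t) s)" "path_el s t"] assms(2)
    by (simp add: KQ_simps path_el_pcar)
  then have "path_el s (t + n) \<in> (rel_ideal n D :: 'k pel set)" using e1 by simp
  then have "pmul n (sc c (path_el ((sig n ^^ (t + n)) s) (L - (t + n)))) (path_el s (t + n)) \<in> (rel_ideal n D :: 'k pel set)"
    using I.I_l_closed[of "path_el s (t + n)" "sc c (path_el ((sig n ^^ (t + n)) s) (L - (t + n)))"] st
    by (simp add: KQ_simps path_el_pcar sc_pcar)
  then show ?thesis using e2 by simp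
qed

lemma badset_sub: "(badset n D :: ('k::field) pel set) \<subseteq> rel_ideal n D"
proof -
  interpret I: ideal "rel_ideal n D" "path_alg n :: 'k pel ring" by (rule rel_ideal_ideal)
  have main: "\<forall>f :: 'k pel. f \<in> pcar n \<and> (\<forall>p. f p \<noteq> 0 \<longrightarrow> bad n D p \<and> p \<in> S) \<longrightarrow> f \<in> rel_ideal n D"
    if "finite S" for S
    using that
  proof (induct S rule: finite_induct)
    case empty
    show ?case
    proof (intro allI impI)
      fix f :: "'k pel" assume "f \<in> pcar n \<and> (\<forall>p. f p \<noteq> 0 \<longrightarrow> bad n D p \<and> p \<in> {})"
      then have "f = \<zero>\<^bsub>path_alg n\<^esub>" by (auto simp: KQ_simps)
      then show "f \<in> rel_ideal n D" using I.zero_closed by simp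
    qed
  next
    case (insert q S)
    show ?case
    proof (intro allI impI)
      fix f :: "'k pel" assume f: "f \<in> pcar n \<and> (\<forall>p. f p \<noteq> 0 \<longrightarrow> bad n D p \<and> p \<in> insert q S)"
      obtain s L where q: "q = (s, L)" by (cases q)
      define f' where "f' = f(q := 0)"
      have f'pcar: "f' \<in> pcar n" using f unfolding f'_def pcar_def
        by (auto split: if_splits) (metis)
      have "\<forall>p. f' p \<noteq> 0 \<longrightarrow> bad n D p \<and> p \<in> S" using f unfolding f'_def by auto
      then have "f' \<in> rel_ideal n D" using insert(3) f'pcar by blast
      moreover have "sc (f q) (path_el s L) \<in> rel_ideal n D"
      proof (cases "f q = 0")
        case True
        then have "sc (f q) (path_el s L) = \<zero>\<^bsub>path_alg n\<^esub>" by (auto simp: sc_def KQ_simps)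
        then show ?thesis using I.zero_closed by simp
      next
        case False
        then have "bad n D (s, L)" "s \<in> {1..n}" using f q pcarD by blast+
        then show ?thesis by (rule bad_path_in)
      qed
      ultimately have "f' \<oplus>\<^bsub>path_alg n\<^esub> sc (f q) (path_el s L) \<in> rel_ideal n D"
        using I.a_closed by blast
      moreover have "f' \<oplus>\<^bsub>path_alg n\<^esub> sc (f q) (path_el s L) = f"
        by (auto simp: KQ_simps f'_def sc_def path_el_apply q fun_eq_iff)
      ultimately show "f \<in> rel_ideal n D" by simp
    qed
  qed
  show ?thesis
  proof
    fix f :: "'k pel" assume f: "f \<in> badset n D"
    then have fp: "f \<in> pcar n" by (simp add: badset_def)
    then have "finite {p. f p \<noteq> 0}" by (simp add: KQ_carrier[symmetric] path_alg_def)
    then show "f \<in> rel_ideal n D" using main[of "{p. f p \<noteq> 0}"] f by (auto simp: badset_def)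
  qed
qed

lemma rel_ideal_eq: "rel_ideal n D = (badset n D :: ('k::field) pel set)"
  using rel_ideal_sub badset_sub by blast

end

lemma tr_apply: "tr n D f p = (if bad n D p then 0 else f p)"
  by (simp add: tr_def)

lemma tr_pcar: "f \<in> pcar n \<Longrightarrow> tr n D f \<in> pcar n"
  by (auto simp: pcar_def tr_def)

lemma tr_tr: "tr n D (tr n D f) = tr n D f"
  by (auto simp: tr_def)

lemma tr_add: "tr n D (\<lambda>p. f p + g p) = (\<lambda>p. tr n D f p + tr n D g p)"
  by (auto simp: tr_def)

context
  fixes n :: nat and D :: "nat set"
  assumes n1: "1 \<le> n" and Dsub: "D \<subseteq> {1..n}"
begin

lemma clsf_concrete: "clsf n D f = {(\<lambda>p. h p + f p) | h. (h :: ('k::field) pel) \<in> badset n D}"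
  unfolding clsf_def rel_ideal_eq[OF n1 Dsub] a_r_coset_def r_coset_def
  by (auto simp: KQ_simps)

lemma cls_self: "f \<in> clsf n D (f :: ('k::field) pel)"
  unfolding clsf_concrete mem_Collect_eq
  by (intro exI[of _ "\<lambda>_. 0"] conjI) (simp_all add: badset_def pzero_closed)

lemma badsetD: "h \<in> badset n D \<Longrightarrow> \<not> bad n D p \<Longrightarrow> h p = 0"
  unfolding badset_def by blast

lemma cls_sub: assumes "f \<in> pcar n" "g \<in> pcar n" "tr n D f = tr n D g"
  shows "clsf n D f \<subseteq> (clsf n D g :: ('k::field) pel set)"
proof
  fix x assume "x \<in> clsf n D f"
  then obtain h where h: "h \<in> badset n D" "x = (\<lambda>p. h p + f p)" unfolding clsf_concrete by blast
  define h' where "h' = (\<lambda>p. h p + (f p + (- g p)))"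
  have hp: "h \<in> pcar n" using h(1) by (simp add: badset_def)
  have "h' \<in> pcar n" unfolding h'_def
    by (intro padd_closed pneg_closed hp assms)
  moreover have "\<forall>p. h' p \<noteq> 0 \<longrightarrow> bad n D p"
  proof (intro allI impI)
    fix p assume "h' p \<noteq> 0"
    show "bad n D p"
    proof (rule ccontr)
      assume nb: "\<not> bad n D p"
      then have "h p = 0" using h(1) by (simp add: badsetD)
      moreover have "f p = g p" using nb assms(3) unfolding tr_def by meson
      ultimately show False using \<open>h' p \<noteq> 0\<close> by (simp add: h'_def)
    qed
  qed
  ultimately have "h' \<in> badset n D" by (simp add: badset_def)
  moreover have "x = (\<lambda>p. h' p + g p)" using h by (simp add: h'_def)
  ultimately show "x \<in> clsf n D g" unfolding clsf_concrete by blast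
qed

lemma cls_eq: assumes "f \<in> pcar n" "g \<in> pcar n"
  shows "clsf n D f = (clsf n D g :: ('k::field) pel set) \<longleftrightarrow> tr n D f = tr n D g"
proof
  assume "clsf n D f = clsf n D g"
  then have "f \<in> clsf n D g" using cls_self by metis
  then obtain h where h: "h \<in> badset n D" "f = (\<lambda>p. h p + g p)" unfolding clsf_concrete by blast
  show "tr n D f = tr n D g"
  proof
    fix p show "tr n D f p = tr n D g p"
      using h badsetD[OF h(1), of p] by (cases "bad n D p") (auto simp: tr_def)
  qed
next
  assume e: "tr n D f = tr n D g"
  show "clsf n D f = clsf n D g" using cls_sub[OF assms e] cls_sub[OF assms(2,1) e[symmetric]] by blast
qed

lemma cls_tr: "f \<in> pcar n \<Longrightarrow> clsf n D (tr n D f) = (clsf n D f :: ('k::field) pel set)"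
  by (simp add: cls_eq tr_pcar tr_tr)

lemma A_carrier: "carrier (Aalg n D) = clsf n D ` (pcar n :: ('k::field) pel set)"
  unfolding Aalg_def FactRing_def A_RCOSETS_def' clsf_def by (auto simp: KQ_simps)

lemma A_ring: "ring (Aalg n D :: ('k::field) pel set ring)"
  unfolding Aalg_def by (rule ideal.quotient_is_ring[OF rel_ideal_ideal[OF n1 Dsub]])

lemma A_zero: "\<zero>\<^bsub>Aalg n D\<^esub> = (clsf n D (\<lambda>_. 0) :: ('k::field) pel set)"
proof -
  have "clsf n D (\<lambda>_. 0) = (badset n D :: 'k pel set)" unfolding clsf_concrete by auto
  then show ?thesis by (simp add: Aalg_def FactRing_def rel_ideal_eq[OF n1 Dsub])
qed

lemma A_one: "\<one>\<^bsub>Aalg n D\<^esub> = (clsf n D (pone n) :: ('k::field) pel set)"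
  by (simp add: Aalg_def FactRing_def clsf_def KQ_simps)

lemma A_add: "f \<in> pcar n \<Longrightarrow> g \<in> pcar n \<Longrightarrow>
  clsf n D f \<oplus>\<^bsub>Aalg n D\<^esub> clsf n D g = (clsf n D (\<lambda>p. f p + g p) :: ('k::field) pel set)"
  unfolding Aalg_def clsf_def
  using ideal.a_rcos_sum[OF rel_ideal_ideal[OF n1 Dsub], of f g]
  by (simp add: FactRing_def KQ_simps)

lemma A_mult: "f \<in> pcar n \<Longrightarrow> g \<in> pcar n \<Longrightarrow>
  clsf n D f \<otimes>\<^bsub>Aalg n D\<^esub> clsf n D g = (clsf n D (pmul n f g) :: ('k::field) pel set)"
  unfolding Aalg_def clsf_def
  using ideal.rcoset_mult_add[OF rel_ideal_ideal[OF n1 Dsub], of f g]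
  by (simp add: FactRing_def KQ_simps)

lemma rep_props: assumes "z \<in> carrier (Aalg n D :: ('k::field) pel set ring)"
  shows "rep n D z \<in> pcar n" "clsf n D (rep n D z) = z"
proof -
  have "z \<in> clsf n D ` pcar n" using assms by (simp add: A_carrier)
  then have ex: "\<exists>f. f \<in> pcar n \<and> clsf n D f = z" by blast
  define f where "f = (SOME f. f \<in> pcar n \<and> clsf n D f = z)"
  have f: "f \<in> pcar n \<and> clsf n D f = z" unfolding f_def by (rule someI_ex[OF ex])
  have r: "rep n D z = tr n D f" by (simp add: rep_def f_def)
  show "rep n D z \<in> pcar n" using f r tr_pcar by auto
  show "clsf n D (rep n D z) = z" using f r cls_tr by auto
qed

lemma rep_cls: assumes "f \<in> pcar n" shows "rep n D (clsf n D f :: ('k::field) pel set) = tr n D f"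
proof -
  have c: "clsf n D f \<in> carrier (Aalg n D :: 'k pel set ring)" using assms by (simp add: A_carrier)
  have "clsf n D (rep n D (clsf n D f)) = clsf n D f" using rep_props(2)[OF c] .
  then have "tr n D (rep n D (clsf n D f)) = tr n D f" using cls_eq rep_props(1)[OF c] assms by blast
  moreover have "tr n D (rep n D (clsf n D f)) = rep n D (clsf n D f)"
    by (simp add: rep_def tr_tr)
  ultimately show ?thesis by simp
qed

lemma rep_tr: "tr n D (rep n D z) = rep n D z"
  by (simp add: rep_def tr_tr)

lemma rep_good: "rep n D z p \<noteq> 0 \<Longrightarrow> \<not> bad n D p"
  by (metis rep_tr tr_apply)

lemma rep_inj: assumes "z \<in> carrier (Aalg n D :: ('k::field) pel set ring)" "w \<in> carrier (Aalg n D)"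
  shows "z = w \<longleftrightarrow> rep n D z = rep n D w"
  using rep_props[OF assms(1)] rep_props[OF assms(2)] by metis

lemma rep_add: assumes "z \<in> carrier (Aalg n D :: ('k::field) pel set ring)" "w \<in> carrier (Aalg n D)"
  shows "rep n D (z \<oplus>\<^bsub>Aalg n D\<^esub> w) = (\<lambda>p. rep n D z p + rep n D w p)"
proof -
  have "z \<oplus>\<^bsub>Aalg n D\<^esub> w = clsf n D (\<lambda>p. rep n D z p + rep n D w p)"
    using A_add[OF rep_props(1)[OF assms(1)] rep_props(1)[OF assms(2)]] rep_props[OF assms(1)] rep_props[OF assms(2)]
    by simp
  then show ?thesis using rep_cls[OF padd_closed[OF rep_props(1)[OF assms(1)] rep_props(1)[OF assms(2)]]]
    by (simp add: tr_add rep_tr)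
qed

lemma rep_mult: assumes "z \<in> carrier (Aalg n D :: ('k::field) pel set ring)" "w \<in> carrier (Aalg n D)"
  shows "rep n D (z \<otimes>\<^bsub>Aalg n D\<^esub> w) = tr n D (pmul n (rep n D z) (rep n D w))"
proof -
  have "z \<otimes>\<^bsub>Aalg n D\<^esub> w = clsf n D (pmul n (rep n D z) (rep n D w))"
    using A_mult[OF rep_props(1)[OF assms(1)] rep_props(1)[OF assms(2)]] rep_props[OF assms(1)] rep_props[OF assms(2)]
    by simp
  then show ?thesis using rep_cls[OF pmul_closed[OF rep_props(1)[OF assms(1)] rep_props(1)[OF assms(2)]]]
    by simp
qed

lemma rep_zero: "rep n D (\<zero>\<^bsub>Aalg n D\<^esub> :: ('k::field) pel set) = (\<lambda>_. 0)"
  by (simp add: A_zero rep_cls pzero_closed tr_def)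

lemma rep_one: "rep n D (\<one>\<^bsub>Aalg n D\<^esub> :: ('k::field) pel set) = pone n"
  by (auto simp: A_one rep_cls pone_closed tr_def pone_apply fun_eq_iff bad_0[OF n1])

lemma rep_minus: assumes "z \<in> carrier (Aalg n D :: ('k::field) pel set ring)"
  shows "rep n D (\<ominus>\<^bsub>Aalg n D\<^esub> z) = (\<lambda>p. - rep n D z p)"
proof -
  interpret A: ring "Aalg n D :: 'k pel set ring" by (rule A_ring)
  have c: "clsf n D (\<lambda>p. - rep n D z p) \<in> carrier (Aalg n D :: 'k pel set ring)"
    using pneg_closed[OF rep_props(1)[OF assms]] by (simp add: A_carrier)
  have "clsf n D (\<lambda>p. - rep n D z p) \<oplus>\<^bsub>Aalg n D\<^esub> z = \<zero>\<^bsub>Aalg n D\<^esub>"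
    using A_add[OF pneg_closed[OF rep_props(1)[OF assms]] rep_props(1)[OF assms]] rep_props(2)[OF assms]
    by (simp add: A_zero)
  then have "\<ominus>\<^bsub>Aalg n D\<^esub> z = clsf n D (\<lambda>p. - rep n D z p)"
    using A.minus_equality c assms by blast
  then show ?thesis using rep_cls[OF pneg_closed[OF rep_props(1)[OF assms]]]
    by (auto simp: tr_def fun_eq_iff) (metis rep_good)
qed

lemma cls_carrier: "f \<in> pcar n \<Longrightarrow> clsf n D f \<in> carrier (Aalg n D :: ('k::field) pel set ring)"
  by (simp add: A_carrier)

lemma idem_cls: "idem n D i = (clsf n D (path_el i 0) :: ('k::field) pel set)"
  by (simp add: idem_def clsf_def)

end

definition Jt :: "nat \<Rightarrow> nat set \<Rightarrow> nat \<Rightarrow> ('k::field) pel set set" where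
  "Jt n D t = {z \<in> carrier (Aalg n D). \<forall>s L. L < t \<longrightarrow> rep n D z (s, L) = 0}"

definition Pset :: "nat \<Rightarrow> nat set \<Rightarrow> nat \<Rightarrow> ('k::field) pel set set" where
  "Pset n D j = {z \<in> carrier (Aalg n D). \<forall>s L. s \<noteq> j \<longrightarrow> rep n D z (s, L) = 0}"

lemma pmul_low:
  assumes "\<forall>s L. L < a \<longrightarrow> f (s, L) = 0" "\<forall>s L. L < b \<longrightarrow> g (s, L) = 0" "L < a + b"
  shows "pmul n f g (s, L) = 0"
  unfolding pmul_apply
proof (rule sum.neutral, rule ballI)
  fix L1 assume "L1 \<in> {..L}"
  show "f ((sig n ^^ L1) s, L - L1) * g (s, L1) = 0"
  proof (cases "L1 < b")
    case True then show ?thesis using assms(2) by simp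
  next
    case False then have "L - L1 < a" using assms(3) \<open>L1 \<in> {..L}\<close> by auto
    then show ?thesis using assms(1) by simp
  qed
qed

lemma pmul_e_right: "pmul n f (path_el j 0) = (\<lambda>(s, L). if s = j then f (s, L) else 0)"
proof (rule ext, clarify)
  fix s L
  show "pmul n f (path_el j 0) (s, L) = (if s = j then f (s, L) else 0)"
  proof (cases "s = j")
    case True
    have "pmul n f (path_el j 0) (s, L) = f ((sig n ^^ 0) s, L - 0) * path_el j 0 (s, 0)"
      unfolding pmul_apply by (rule sum_single_nat) (auto simp: path_el_apply)
    then show ?thesis using True by (simp add: path_el_apply)
  next
    case False
    then show ?thesis by (auto simp: pmul_apply path_el_apply intro!: sum.neutral)
  qed
qed

lemma pmul_e_left: "pmul n (path_el j 0) f (s, L) = (if (sig n ^^ L) s = j then f (s, L) else 0)"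
proof -
  have "pmul n (path_el j 0) f (s, L) = path_el j 0 ((sig n ^^ L) s, L - L) * f (s, L)"
    unfolding pmul_apply by (rule sum_single_nat) (auto simp: path_el_apply)
  then show ?thesis by (simp add: path_el_apply)
qed

context
  fixes n :: nat and D :: "nat set"
  assumes n2: "2 \<le> n" and Dsub: "D \<subseteq> {1..n}" and Dne: "D \<noteq> {}"
begin

lemma n1: "1 \<le> n" using n2 by simp

lemmas rep_props' = rep_props[OF n1 Dsub]
lemmas rep_cls' = rep_cls[OF n1 Dsub]
lemmas rep_inj' = rep_inj[OF n1 Dsub]
lemmas rep_add' = rep_add[OF n1 Dsub]
lemmas rep_mult' = rep_mult[OF n1 Dsub]
lemmas rep_zero' = rep_zero[OF n1 Dsub]
lemmas rep_one' = rep_one[OF n1 Dsub]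
lemmas rep_minus' = rep_minus[OF n1 Dsub]
lemmas cls_carrier' = cls_carrier[OF n1 Dsub]
lemmas A_ring' = A_ring[OF n1 Dsub]
lemmas rep_good' = rep_good[OF n1 Dsub]
lemmas rep_tr' = rep_tr[OF n1 Dsub]

lemma bad_long: assumes "s \<in> {1..n}" "2 * n - 1 \<le> L" shows "bad n D (s, L)"
proof -
  obtain d where d: "d \<in> D" using Dne by blast
  then obtain r where "r < n" "(sig n ^^ r) s = d" using sig_pow_surj[OF n1 assms(1)] Dsub by blast
  then show ?thesis using assms d unfolding bad_def by (intro exI[of _ r]) auto
qed

lemma rep_len: assumes "rep n D z (s, L) \<noteq> 0" "z \<in> carrier (Aalg n D :: ('k::field) pel set ring)"
  shows "s \<in> {1..n}" "L < 2 * n - 1"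
proof -
  show s: "s \<in> {1..n}" by (rule pcarD[OF rep_props'(1)[OF assms(2)] assms(1)])
  have nb: "\<not> bad n D (s, L)" by (rule rep_good[OF n1 Dsub assms(1)])
  show "L < 2 * n - 1"
  proof (rule ccontr)
    assume "\<not> L < 2 * n - 1"
    then have "bad n D (s, L)" using bad_long[OF s] by simp
    then show False using nb by simp
  qed
qed

lemma rep_eq_zero: assumes "z \<in> carrier (Aalg n D :: ('k::field) pel set ring)"
  shows "z = \<zero>\<^bsub>Aalg n D\<^esub> \<longleftrightarrow> (\<forall>p. rep n D z p = 0)"
proof -
  interpret A: ring "Aalg n D :: 'k pel set ring" by (rule A_ring')
  show ?thesis using rep_inj'[OF assms A.zero_closed] by (simp add: rep_zero' fun_eq_iff)
qed

lemma Jt_carrier: "Jt n D t \<subseteq> carrier (Aalg n D :: ('k::field) pel set ring)"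
  by (auto simp: Jt_def)

lemma Jt_0: "Jt n D 0 = carrier (Aalg n D :: ('k::field) pel set ring)"
  by (auto simp: Jt_def)

lemma Jt_mono: "a \<le> b \<Longrightarrow> Jt n D b \<subseteq> (Jt n D a :: ('k::field) pel set set)"
  by (auto simp: Jt_def)

lemma Jt_mult: assumes "z \<in> Jt n D a" "w \<in> (Jt n D b :: ('k::field) pel set set)"
  shows "z \<otimes>\<^bsub>Aalg n D\<^esub> w \<in> Jt n D (a + b)"
proof -
  interpret A: ring "Aalg n D :: 'k pel set ring" by (rule A_ring')
  have c: "z \<in> carrier (Aalg n D)" "w \<in> carrier (Aalg n D)" using assms by (auto simp: Jt_def)
  have "rep n D (z \<otimes>\<^bsub>Aalg n D\<^esub> w) (s, L) = 0" if "L < a + b" for s L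
    using rep_mult'[OF c] pmul_low[of a "rep n D z" b "rep n D w" L n s] assms that
    by (auto simp: Jt_def tr_def)
  then show ?thesis using c by (auto simp: Jt_def)
qed

lemma Jt_top: "Jt n D (2 * n - 1) = {\<zero>\<^bsub>Aalg n D\<^esub> :: ('k::field) pel set}"
proof -
  interpret A: ring "Aalg n D :: 'k pel set ring" by (rule A_ring')
  have "z = \<zero>\<^bsub>Aalg n D\<^esub>" if "z \<in> Jt n D (2 * n - 1)" for z :: "'k pel set"
  proof -
    have c: "z \<in> carrier (Aalg n D)" using that by (simp add: Jt_def)
    have "rep n D z p = 0" for p
    proof (rule ccontr)
      obtain s L where p: "p = (s, L)" by (cases p)
      assume "rep n D z p \<noteq> 0"
      then have "L < 2 * n - 1" using rep_len(2)[OF _ c] p by blast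
      then show False using that \<open>rep n D z p \<noteq> 0\<close> p by (auto simp: Jt_def)
    qed
    then show ?thesis using rep_eq_zero[OF c] by blast
  qed
  moreover have "\<zero>\<^bsub>Aalg n D\<^esub> \<in> (Jt n D (2 * n - 1) :: 'k pel set set)"
    by (auto simp: Jt_def rep_zero')
  ultimately show ?thesis by blast
qed

lemma Jt_zero: "\<zero>\<^bsub>Aalg n D\<^esub> \<in> (Jt n D t :: ('k::field) pel set set)"
proof -
  interpret A: ring "Aalg n D :: 'k pel set ring" by (rule A_ring')
  show ?thesis by (auto simp: Jt_def rep_zero')
qed

lemma Jt_add: "z \<in> Jt n D t \<Longrightarrow> w \<in> Jt n D t \<Longrightarrow> z \<oplus>\<^bsub>Aalg n D\<^esub> w \<in> (Jt n D t :: ('k::field) pel set set)"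
proof -
  interpret A: ring "Aalg n D :: 'k pel set ring" by (rule A_ring')
  show "z \<in> Jt n D t \<Longrightarrow> w \<in> Jt n D t \<Longrightarrow> z \<oplus>\<^bsub>Aalg n D\<^esub> w \<in> Jt n D t"
    by (auto simp: Jt_def rep_add')
qed

lemma Jt_minus: "z \<in> Jt n D t \<Longrightarrow> \<ominus>\<^bsub>Aalg n D\<^esub> z \<in> (Jt n D t :: ('k::field) pel set set)"
proof -
  interpret A: ring "Aalg n D :: 'k pel set ring" by (rule A_ring')
  show "z \<in> Jt n D t \<Longrightarrow> \<ominus>\<^bsub>Aalg n D\<^esub> z \<in> Jt n D t"
    by (auto simp: Jt_def rep_minus')
qed

lemma Jt_lmult: "z \<in> carrier (Aalg n D) \<Longrightarrow> w \<in> Jt n D t \<Longrightarrow> z \<otimes>\<^bsub>Aalg n D\<^esub> w \<in> (Jt n D t :: ('k::field) pel set set)"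
  using Jt_mult[of z 0 w t] Jt_0 by auto

lemma Jt_rmult: "z \<in> Jt n D t \<Longrightarrow> w \<in> carrier (Aalg n D) \<Longrightarrow> z \<otimes>\<^bsub>Aalg n D\<^esub> w \<in> (Jt n D t :: ('k::field) pel set set)"
  using Jt_mult[of z t w 0] Jt_0 by auto

lemma Jt_pow_zero: assumes "y \<in> (Jt n D 1 :: ('k::field) pel set set)"
  shows "y [^]\<^bsub>Aalg n D\<^esub> (2 * n - 1) = \<zero>\<^bsub>Aalg n D\<^esub>"
proof -
  interpret A: ring "Aalg n D :: 'k pel set ring" by (rule A_ring')
  have "y [^]\<^bsub>Aalg n D\<^esub> m \<in> Jt n D m" for m
  proof (induct m)
    case 0 then show ?case by (simp add: Jt_def A.one_closed)
  next
    case (Suc m)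
    then show ?case using Jt_mult[OF Suc assms] by simp
  qed
  then show ?thesis using Jt_top by blast
qed

lemma e_carrier: "j \<in> {1..n} \<Longrightarrow> idem n D j \<in> carrier (Aalg n D :: ('k::field) pel set ring)"
  by (simp add: idem_cls[OF n1 Dsub] cls_carrier' path_el_pcar)

lemma rep_e: "j \<in> {1..n} \<Longrightarrow> rep n D (idem n D j :: ('k::field) pel set) = path_el j 0"
  by (auto simp: idem_cls[OF n1 Dsub] rep_cls' path_el_pcar tr_def path_el_apply fun_eq_iff bad_0[OF n1])

lemma rep_mult_e: assumes "z \<in> carrier (Aalg n D :: ('k::field) pel set ring)" "j \<in> {1..n}"
  shows "rep n D (z \<otimes>\<^bsub>Aalg n D\<^esub> idem n D j) = (\<lambda>(s, L). if s = j then rep n D z (s, L) else 0)"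
proof -
  have "rep n D (z \<otimes>\<^bsub>Aalg n D\<^esub> idem n D j) = tr n D (pmul n (rep n D z) (path_el j 0))"
    by (simp add: rep_mult'[OF assms(1) e_carrier[OF assms(2)]] rep_e[OF assms(2)])
  moreover have "\<forall>p. bad n D p \<longrightarrow> rep n D z p = 0" using rep_good' by blast
  ultimately show ?thesis by (auto simp: pmul_e_right tr_def fun_eq_iff)
qed

lemma Pset_alt: assumes "j \<in> {1..n}"
  shows "Pset n D j = {a \<otimes>\<^bsub>Aalg n D\<^esub> idem n D j | a. a \<in> carrier (Aalg n D :: ('k::field) pel set ring)}"
proof -
  interpret A: ring "Aalg n D :: 'k pel set ring" by (rule A_ring')
  show ?thesis
  proof (rule equalityI)
    show "Pset n D j \<subseteq> {a \<otimes>\<^bsub>Aalg n D\<^esub> idem n D j | a. a \<in> carrier (Aalg n D :: 'k pel set ring)}"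
    proof
      fix z :: "'k pel set" assume z: "z \<in> Pset n D j"
      then have c: "z \<in> carrier (Aalg n D)" by (simp add: Pset_def)
      have "z \<otimes>\<^bsub>Aalg n D\<^esub> idem n D j = z"
        using rep_inj'[OF A.m_closed[OF c e_carrier[OF assms]] c] rep_mult_e[OF c assms] z
        by (auto simp: Pset_def fun_eq_iff)
      then show "z \<in> {a \<otimes>\<^bsub>Aalg n D\<^esub> idem n D j | a. a \<in> carrier (Aalg n D :: 'k pel set ring)}" using c by force
    qed
    show "{a \<otimes>\<^bsub>Aalg n D\<^esub> idem n D j | a. a \<in> carrier (Aalg n D :: 'k pel set ring)} \<subseteq> Pset n D j"
    proof
      fix x assume "x \<in> {a \<otimes>\<^bsub>Aalg n D\<^esub> idem n D j | a. a \<in> carrier (Aalg n D :: 'k pel set ring)}"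
      then obtain a where a: "a \<in> carrier (Aalg n D)" "x = a \<otimes>\<^bsub>Aalg n D\<^esub> idem n D j" by blast
      show "x \<in> Pset n D j"
        using rep_mult_e[OF a(1) assms] A.m_closed[OF a(1) e_carrier[OF assms]] a(2) by (auto simp: Pset_def)
    qed
  qed
qed

lemma Pmod_carrier: "j \<in> {1..n} \<Longrightarrow> carrier (Pmod n D j) = (Pset n D j :: ('k::field) pel set set)"
  by (simp add: Pmod_def sub_module_def reg_mod_def Pset_alt)

lemma Pmod_add: "add (Pmod n D j) = add (Aalg n D :: ('k::field) pel set ring)"
  by (simp add: Pmod_def sub_module_def reg_mod_def)
lemma Pmod_zero: "zero (Pmod n D j) = zero (Aalg n D :: ('k::field) pel set ring)"
  by (simp add: Pmod_def sub_module_def reg_mod_def)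
lemma Pmod_smult: "smult (Pmod n D j) = mult (Aalg n D :: ('k::field) pel set ring)"
  by (simp add: Pmod_def sub_module_def reg_mod_def)

lemma Pset_carrier: "Pset n D j \<subseteq> carrier (Aalg n D :: ('k::field) pel set ring)"
  by (auto simp: Pset_def)

lemma Pset_e: assumes "z \<in> Pset n D j" "j \<in> {1..n}"
  shows "z \<otimes>\<^bsub>Aalg n D\<^esub> idem n D j = (z :: ('k::field) pel set)"
proof -
  interpret A: ring "Aalg n D :: 'k pel set ring" by (rule A_ring')
  have c: "z \<in> carrier (Aalg n D)" using assms by (simp add: Pset_def)
  show ?thesis
    using rep_inj'[OF A.m_closed[OF c e_carrier[OF assms(2)]] c] rep_mult_e[OF c assms(2)] assms(1)
    by (auto simp: Pset_def fun_eq_iff)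
qed

lemma Pset_lmult: "a \<in> carrier (Aalg n D) \<Longrightarrow> z \<in> Pset n D j \<Longrightarrow> a \<otimes>\<^bsub>Aalg n D\<^esub> z \<in> (Pset n D j :: ('k::field) pel set set)"
proof -
  interpret A: ring "Aalg n D :: 'k pel set ring" by (rule A_ring')
  assume a: "a \<in> carrier (Aalg n D)" and z: "z \<in> Pset n D j"
  have c: "z \<in> carrier (Aalg n D)" using z by (simp add: Pset_def)
  have "rep n D (a \<otimes>\<^bsub>Aalg n D\<^esub> z) (s, L) = 0" if "s \<noteq> j" for s L
  proof -
    have "pmul n (rep n D a) (rep n D z) (s, L) = 0"
      unfolding pmul_apply using z that by (auto simp: Pset_def intro!: sum.neutral)
    then show ?thesis using rep_mult'[OF a c] by (simp add: tr_def)
  qed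
  then show ?thesis using a c by (auto simp: Pset_def)
qed

lemma Pset_zero: "\<zero>\<^bsub>Aalg n D\<^esub> \<in> (Pset n D j :: ('k::field) pel set set)"
proof -
  interpret A: ring "Aalg n D :: 'k pel set ring" by (rule A_ring')
  show ?thesis by (auto simp: Pset_def rep_zero')
qed

lemma Pset_add: "z \<in> Pset n D j \<Longrightarrow> w \<in> Pset n D j \<Longrightarrow> z \<oplus>\<^bsub>Aalg n D\<^esub> w \<in> (Pset n D j :: ('k::field) pel set set)"
proof -
  interpret A: ring "Aalg n D :: 'k pel set ring" by (rule A_ring')
  show "z \<in> Pset n D j \<Longrightarrow> w \<in> Pset n D j \<Longrightarrow> z \<oplus>\<^bsub>Aalg n D\<^esub> w \<in> Pset n D j"
    by (auto simp: Pset_def rep_add')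
qed

lemma Pset_minus: "z \<in> Pset n D j \<Longrightarrow> \<ominus>\<^bsub>Aalg n D\<^esub> z \<in> (Pset n D j :: ('k::field) pel set set)"
proof -
  interpret A: ring "Aalg n D :: 'k pel set ring" by (rule A_ring')
  show "z \<in> Pset n D j \<Longrightarrow> \<ominus>\<^bsub>Aalg n D\<^esub> z \<in> Pset n D j"
    by (auto simp: Pset_def rep_minus')
qed

lemma e_Pset: "j \<in> {1..n} \<Longrightarrow> idem n D j \<in> (Pset n D j :: ('k::field) pel set set)"
  by (auto simp: Pset_def e_carrier rep_e path_el_apply)

end

lemma add_subgroupI:
  fixes G (structure)
  assumes "abelian_group G" "S \<subseteq> carrier G" "\<zero> \<in> S" "\<And>x y. x \<in> S \<Longrightarrow> y \<in> S \<Longrightarrow> x \<oplus> y \<in> S"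
    "\<And>x. x \<in> S \<Longrightarrow> \<ominus> x \<in> S"
  shows "additive_subgroup S G"
  unfolding additive_subgroup_def
  by (rule subgroup.intro) (use assms in \<open>simp_all add: a_inv_def\<close>)

lemma pmul_at0: "pmul n f g (s, 0) = f (s, 0) * g (s, 0)"
  by (simp add: pmul_apply)

context
  fixes n :: nat and D :: "nat set"
  assumes n2: "2 \<le> n" and Dsub: "D \<subseteq> {1..n}" and Dne: "D \<noteq> {}"
begin

lemmas n1' = n1[OF n2 Dsub Dne]
lemmas A_ring'' = A_ring'[OF n2 Dsub Dne]
lemmas rep_props'' = rep_props'[OF n2 Dsub Dne]
lemmas rep_cls'' = rep_cls'[OF n2 Dsub Dne]
lemmas rep_inj'' = rep_inj'[OF n2 Dsub Dne]
lemmas rep_add'' = rep_add'[OF n2 Dsub Dne]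
lemmas rep_mult'' = rep_mult'[OF n2 Dsub Dne]
lemmas rep_zero'' = rep_zero'[OF n2 Dsub Dne]
lemmas rep_one'' = rep_one'[OF n2 Dsub Dne]
lemmas rep_minus'' = rep_minus'[OF n2 Dsub Dne]
lemmas cls_carrier'' = cls_carrier'[OF n2 Dsub Dne]
lemmas Jt_lmult' = Jt_lmult[OF n2 Dsub Dne]
lemmas Jt_pow_zero' = Jt_pow_zero[OF n2 Dsub Dne]

lemma Jt1_sub_max: assumes L: "max_left_ideal (Aalg n D) L" and x: "x \<in> (Jt n D 1 :: ('k::field) pel set set)"
  shows "x \<in> L"
proof (rule ccontr)
  interpret A: ring "Aalg n D :: 'k pel set ring" by (rule A_ring'')
  assume xL: "x \<notin> L"
  have Lli: "left_ideal (Aalg n D) L" and Lne: "L \<noteq> carrier (Aalg n D)"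
    and Lmax: "\<And>L'. left_ideal (Aalg n D) L' \<Longrightarrow> L \<subseteq> L' \<Longrightarrow> L' \<noteq> carrier (Aalg n D) \<Longrightarrow> L' = L"
    using L unfolding max_left_ideal_def by blast+
  have Las: "additive_subgroup L (Aalg n D)" and Lmul: "\<And>a y. a \<in> carrier (Aalg n D) \<Longrightarrow> y \<in> L \<Longrightarrow> a \<otimes>\<^bsub>Aalg n D\<^esub> y \<in> L"
    using Lli unfolding left_ideal_def by blast+
  have Lc: "L \<subseteq> carrier (Aalg n D)" using additive_subgroup.a_subset[OF Las] .
  have L0: "\<zero>\<^bsub>Aalg n D\<^esub> \<in> L" using additive_subgroup.zero_closed[OF Las] .
  have Ladd: "\<And>a b. a \<in> L \<Longrightarrow> b \<in> L \<Longrightarrow> a \<oplus>\<^bsub>Aalg n D\<^esub> b \<in> L" using additive_subgroup.a_closed[OF Las] .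
  have Lneg: "\<And>a. a \<in> L \<Longrightarrow> \<ominus>\<^bsub>Aalg n D\<^esub> a \<in> L" using additive_subgroup.a_inv_closed[OF Las] .
  have xc: "x \<in> carrier (Aalg n D)" using x by (simp add: Jt_def)
  define L' where "L' = {l \<oplus>\<^bsub>Aalg n D\<^esub> a \<otimes>\<^bsub>Aalg n D\<^esub> x | l a. l \<in> L \<and> a \<in> carrier (Aalg n D)}"
  have L'c: "L' \<subseteq> carrier (Aalg n D)" unfolding L'_def using Lc xc by auto
  have L'li: "left_ideal (Aalg n D) L'"
    unfolding left_ideal_def
  proof (intro conjI ballI)
    show "additive_subgroup L' (Aalg n D)"
    proof (rule add_subgroupI[OF A.abelian_group_axioms L'c])
      show "\<zero>\<^bsub>Aalg n D\<^esub> \<in> L'" unfolding L'_def using L0 xc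
        by (intro CollectI exI[of _ "\<zero>\<^bsub>Aalg n D\<^esub>"] conjI) auto
      fix u v :: "'k pel set" assume u: "u \<in> L'" and v: "v \<in> L'"
      obtain l1 a1 where 1: "u = l1 \<oplus>\<^bsub>Aalg n D\<^esub> a1 \<otimes>\<^bsub>Aalg n D\<^esub> x" "l1 \<in> L" "a1 \<in> carrier (Aalg n D)" using u L'_def by blast
      obtain l2 a2 where 2: "v = l2 \<oplus>\<^bsub>Aalg n D\<^esub> a2 \<otimes>\<^bsub>Aalg n D\<^esub> x" "l2 \<in> L" "a2 \<in> carrier (Aalg n D)" using v L'_def by blast
      have c: "l1 \<in> carrier (Aalg n D)" "l2 \<in> carrier (Aalg n D)" using 1 2 Lc by auto
      have "u \<oplus>\<^bsub>Aalg n D\<^esub> v = (l1 \<oplus>\<^bsub>Aalg n D\<^esub> l2) \<oplus>\<^bsub>Aalg n D\<^esub> (a1 \<oplus>\<^bsub>Aalg n D\<^esub> a2) \<otimes>\<^bsub>Aalg n D\<^esub> x"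
        using 1 2 c xc by (simp add: A.l_distr A.a_ac)
      then show "u \<oplus>\<^bsub>Aalg n D\<^esub> v \<in> L'" unfolding L'_def using 1 2 Ladd by blast
    next
      fix u :: "'k pel set" assume u: "u \<in> L'"
      obtain l1 a1 where 1: "u = l1 \<oplus>\<^bsub>Aalg n D\<^esub> a1 \<otimes>\<^bsub>Aalg n D\<^esub> x" "l1 \<in> L" "a1 \<in> carrier (Aalg n D)" using u L'_def by blast
      have c: "l1 \<in> carrier (Aalg n D)" using 1 Lc by auto
      have "\<ominus>\<^bsub>Aalg n D\<^esub> u = (\<ominus>\<^bsub>Aalg n D\<^esub> l1) \<oplus>\<^bsub>Aalg n D\<^esub> (\<ominus>\<^bsub>Aalg n D\<^esub> a1) \<otimes>\<^bsub>Aalg n D\<^esub> x"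
        using 1 c xc by (simp add: A.minus_add A.l_minus)
      then show "\<ominus>\<^bsub>Aalg n D\<^esub> u \<in> L'" unfolding L'_def using 1 Lneg by blast
    qed
  next
    fix b u :: "'k pel set" assume b: "b \<in> carrier (Aalg n D)" and u: "u \<in> L'"
    obtain l1 a1 where 1: "u = l1 \<oplus>\<^bsub>Aalg n D\<^esub> a1 \<otimes>\<^bsub>Aalg n D\<^esub> x" "l1 \<in> L" "a1 \<in> carrier (Aalg n D)" using u L'_def by blast
    have c: "l1 \<in> carrier (Aalg n D)" using 1 Lc by auto
    have "b \<otimes>\<^bsub>Aalg n D\<^esub> u = (b \<otimes>\<^bsub>Aalg n D\<^esub> l1) \<oplus>\<^bsub>Aalg n D\<^esub> (b \<otimes>\<^bsub>Aalg n D\<^esub> a1) \<otimes>\<^bsub>Aalg n D\<^esub> x"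
      using 1 c xc b by (simp add: A.r_distr A.m_assoc)
    then show "b \<otimes>\<^bsub>Aalg n D\<^esub> u \<in> L'" unfolding L'_def using 1 Lmul b by blast
  qed
  have LL': "L \<subseteq> L'"
  proof
    fix l :: "'k pel set" assume l: "l \<in> L"
    then have "l = l \<oplus>\<^bsub>Aalg n D\<^esub> \<zero>\<^bsub>Aalg n D\<^esub> \<otimes>\<^bsub>Aalg n D\<^esub> x" using Lc xc by auto
    then show "l \<in> L'" unfolding L'_def using l by blast
  qed
  have "x \<in> L'"
  proof -
    have "x = \<zero>\<^bsub>Aalg n D\<^esub> \<oplus>\<^bsub>Aalg n D\<^esub> \<one>\<^bsub>Aalg n D\<^esub> \<otimes>\<^bsub>Aalg n D\<^esub> x" using xc by simp
    then show ?thesis unfolding L'_def using L0 by blast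
  qed
  then have "L' = carrier (Aalg n D)" using Lmax[OF L'li LL'] xL by blast
  then have "\<one>\<^bsub>Aalg n D\<^esub> \<in> L'" by simp
  then obtain l a where la: "\<one>\<^bsub>Aalg n D\<^esub> = l \<oplus>\<^bsub>Aalg n D\<^esub> a \<otimes>\<^bsub>Aalg n D\<^esub> x" "l \<in> L" "a \<in> carrier (Aalg n D)"
    unfolding L'_def by blast
  define y where "y = a \<otimes>\<^bsub>Aalg n D\<^esub> x"
  have yJ: "y \<in> Jt n D 1" unfolding y_def using Jt_lmult'[OF la(3) x] .
  have yc: "y \<in> carrier (Aalg n D)" using y_def la xc by simp
  have lc: "l \<in> carrier (Aalg n D)" using la Lc by auto
  have l_eq: "l = \<one>\<^bsub>Aalg n D\<^esub> \<ominus>\<^bsub>Aalg n D\<^esub> y"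
    using la(1) yc lc unfolding y_def[symmetric]
    by (metis A.add.inv_solve_right a_minus_def A.one_closed)
  have "\<one>\<^bsub>Aalg n D\<^esub> \<ominus>\<^bsub>Aalg n D\<^esub> y [^]\<^bsub>Aalg n D\<^esub> N \<in> L" for N :: nat
  proof (induct N)
    case 0 then show ?case using L0 by (simp add: A.r_neg a_minus_def)
  next
    case (Suc N)
    have pc: "y [^]\<^bsub>Aalg n D\<^esub> N \<in> carrier (Aalg n D)" using yc by simp
    have "\<one>\<^bsub>Aalg n D\<^esub> \<ominus>\<^bsub>Aalg n D\<^esub> y [^]\<^bsub>Aalg n D\<^esub> Suc N =
      (\<one>\<^bsub>Aalg n D\<^esub> \<ominus>\<^bsub>Aalg n D\<^esub> y [^]\<^bsub>Aalg n D\<^esub> N) \<oplus>\<^bsub>Aalg n D\<^esub> (y [^]\<^bsub>Aalg n D\<^esub> N \<otimes>\<^bsub>Aalg n D\<^esub> l)"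
    proof -
      have e1: "y [^]\<^bsub>Aalg n D\<^esub> N \<otimes>\<^bsub>Aalg n D\<^esub> l = y [^]\<^bsub>Aalg n D\<^esub> N \<oplus>\<^bsub>Aalg n D\<^esub> \<ominus>\<^bsub>Aalg n D\<^esub> (y [^]\<^bsub>Aalg n D\<^esub> Suc N)"
        using pc yc by (simp add: l_eq a_minus_def A.r_distr A.r_minus A.nat_pow_Suc)
      have pc2: "y [^]\<^bsub>Aalg n D\<^esub> Suc N \<in> carrier (Aalg n D)" using yc by simp
      show ?thesis unfolding e1 a_minus_def
        using pc pc2 by (simp add: A.a_assoc A.r_neg1)
    qed
    moreover have "y [^]\<^bsub>Aalg n D\<^esub> N \<otimes>\<^bsub>Aalg n D\<^esub> l \<in> L" using Lmul[OF pc la(2)] .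
    ultimately show ?case using Ladd Suc by simp
  qed
  then have "\<one>\<^bsub>Aalg n D\<^esub> \<ominus>\<^bsub>Aalg n D\<^esub> y [^]\<^bsub>Aalg n D\<^esub> (2 * n - 1) \<in> L" .
  then have one: "\<one>\<^bsub>Aalg n D\<^esub> \<in> L" using Jt_pow_zero'[OF yJ] by (simp add: a_minus_def)
  have "carrier (Aalg n D) \<subseteq> L"
  proof
    fix b :: "'k pel set" assume "b \<in> carrier (Aalg n D)"
    then show "b \<in> L" using Lmul[OF _ one] by (metis A.r_one)
  qed
  then show False using Lne Lc by blast
qed

end

definition Ms :: "nat \<Rightarrow> nat set \<Rightarrow> nat \<Rightarrow> ('k::field) pel set set" where
  "Ms n D s = {z \<in> carrier (Aalg n D). rep n D z (s, 0) = 0}"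

context
  fixes n :: nat and D :: "nat set"
  assumes n2: "2 \<le> n" and Dsub: "D \<subseteq> {1..n}" and Dne: "D \<noteq> {}"
begin

lemmas n1'' = n1'[OF n2 Dsub Dne]
lemmas A_ring3 = A_ring''[OF n2 Dsub Dne]
lemmas rep_props3 = rep_props''[OF n2 Dsub Dne]
lemmas rep_cls3 = rep_cls''[OF n2 Dsub Dne]
lemmas rep_inj3 = rep_inj''[OF n2 Dsub Dne]
lemmas rep_add3 = rep_add''[OF n2 Dsub Dne]
lemmas rep_mult3 = rep_mult''[OF n2 Dsub Dne]
lemmas rep_zero3 = rep_zero''[OF n2 Dsub Dne]
lemmas rep_one3 = rep_one''[OF n2 Dsub Dne]
lemmas rep_minus3 = rep_minus''[OF n2 Dsub Dne]
lemmas cls_carrier3 = cls_carrier''[OF n2 Dsub Dne]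

lemma rep_mult_0: assumes "a \<in> carrier (Aalg n D :: ('k::field) pel set ring)" "z \<in> carrier (Aalg n D)"
  shows "rep n D (a \<otimes>\<^bsub>Aalg n D\<^esub> z) (s, 0) = rep n D a (s, 0) * rep n D z (s, 0)"
  using rep_mult3[OF assms] by (simp add: tr_def bad_0[OF n1''] pmul_at0)

lemma Ms_left_ideal: "left_ideal (Aalg n D) (Ms n D s :: ('k::field) pel set set)"
proof -
  interpret A: ring "Aalg n D :: 'k pel set ring" by (rule A_ring3)
  show ?thesis unfolding left_ideal_def
  proof (intro conjI ballI)
    show "additive_subgroup (Ms n D s) (Aalg n D :: 'k pel set ring)"
      by (rule add_subgroupI[OF A.abelian_group_axioms])
         (auto simp: Ms_def rep_zero3 rep_add3 rep_minus3)
    fix a x :: "'k pel set" assume "a \<in> carrier (Aalg n D)" "x \<in> Ms n D s"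
    then show "a \<otimes>\<^bsub>Aalg n D\<^esub> x \<in> Ms n D s" by (auto simp: Ms_def rep_mult_0)
  qed
qed

lemma Ms_max: assumes s: "s \<in> {1..n}" shows "max_left_ideal (Aalg n D) (Ms n D s :: ('k::field) pel set set)"
proof -
  interpret A: ring "Aalg n D :: 'k pel set ring" by (rule A_ring3)
  have one_not: "\<one>\<^bsub>Aalg n D\<^esub> \<notin> (Ms n D s :: 'k pel set set)"
    using s by (simp add: Ms_def rep_one3 pone_apply)
  have "L' = Ms n D s" if L': "left_ideal (Aalg n D) L'" "Ms n D s \<subseteq> L'" "L' \<noteq> carrier (Aalg n D)"
    for L' :: "'k pel set set"
  proof (rule ccontr)
    assume "L' \<noteq> Ms n D s"
    then obtain z where z: "z \<in> L'" "z \<notin> Ms n D s" using L'(2) by blast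
    have Las: "additive_subgroup L' (Aalg n D)" and Lmul: "\<And>a y. a \<in> carrier (Aalg n D) \<Longrightarrow> y \<in> L' \<Longrightarrow> a \<otimes>\<^bsub>Aalg n D\<^esub> y \<in> L'"
      using L'(1) unfolding left_ideal_def by blast+
    have Lc: "L' \<subseteq> carrier (Aalg n D)" using additive_subgroup.a_subset[OF Las] .
    have zc: "z \<in> carrier (Aalg n D)" using z Lc by auto
    define c where "c = rep n D z (s, 0)"
    have c0: "c \<noteq> 0" using z zc by (simp add: Ms_def c_def)
    define bf where "bf = (\<lambda>p. if p = (s, 0::nat) then inverse c else (0::'k))"
    have bfp: "bf \<in> pcar n" using s by (auto simp: bf_def pcar_def)
    define b where "b = clsf n D bf"
    have bc: "b \<in> carrier (Aalg n D)" unfolding b_def by (rule cls_carrier3[OF bfp])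
    have rb: "rep n D b (s, 0) = inverse c" unfolding b_def rep_cls3[OF bfp]
      by (simp add: tr_def bad_0[OF n1''] bf_def)
    define w where "w = b \<otimes>\<^bsub>Aalg n D\<^esub> z"
    have wL: "w \<in> L'" unfolding w_def using Lmul[OF bc z(1)] .
    have wc: "w \<in> carrier (Aalg n D)" unfolding w_def using bc zc by simp
    have rw: "rep n D w (s, 0) = 1" unfolding w_def using rep_mult_0[OF bc zc] rb c0 by (simp add: c_def)
    define u where "u = \<one>\<^bsub>Aalg n D\<^esub> \<ominus>\<^bsub>Aalg n D\<^esub> w"
    have uc: "u \<in> carrier (Aalg n D)" unfolding u_def using wc by simp
    have "rep n D u (s, 0) = 0" unfolding u_def a_minus_def
      using rep_add3[OF A.one_closed A.a_inv_closed[OF wc]] rep_minus3[OF wc] rw s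
      by (simp add: rep_one3 pone_apply)
    then have "u \<in> L'" using L'(2) uc by (auto simp: Ms_def)
    then have "u \<oplus>\<^bsub>Aalg n D\<^esub> w \<in> L'" using wL additive_subgroup.a_closed[OF Las] by blast
    moreover have "u \<oplus>\<^bsub>Aalg n D\<^esub> w = \<one>\<^bsub>Aalg n D\<^esub>" unfolding u_def a_minus_def
      using wc by (simp add: A.a_assoc A.l_neg)
    ultimately have one: "\<one>\<^bsub>Aalg n D\<^esub> \<in> L'" by simp
    have "carrier (Aalg n D) \<subseteq> L'"
    proof
      fix a :: "'k pel set" assume "a \<in> carrier (Aalg n D)"
      then show "a \<in> L'" using Lmul[OF _ one] by (metis A.r_one)
    qed
    then show False using L'(3) Lc by blast
  qed
  moreover have "Ms n D s \<noteq> carrier (Aalg n D :: 'k pel set ring)" using one_not A.one_closed by blast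
  ultimately show ?thesis unfolding max_left_ideal_def using Ms_left_ideal by blast
qed

lemma jac_eq: "jac (Aalg n D) = (Jt n D 1 :: ('k::field) pel set set)"
proof
  show "Jt n D 1 \<subseteq> jac (Aalg n D :: 'k pel set ring)"
    unfolding jac_def using Jt1_sub_max[OF n2 Dsub Dne] by blast
  show "jac (Aalg n D) \<subseteq> (Jt n D 1 :: 'k pel set set)"
  proof
    fix x :: "'k pel set" assume x: "x \<in> jac (Aalg n D)"
    have xM: "x \<in> Ms n D s" if "s \<in> {1..n}" for s
      using x Ms_max[OF that] unfolding jac_def by blast
    have xc: "x \<in> carrier (Aalg n D)" using xM[of 1] n1'' by (auto simp: Ms_def)
    have "rep n D x (s, L) = 0" if "L < 1" for s L
    proof (cases "s \<in> {1..n}")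
      case True then show ?thesis using xM[OF True] that by (simp add: Ms_def)
    next
      case False then show ?thesis using pcar_out[OF rep_props3(1)[OF xc] False] by simp
    qed
    then show "x \<in> Jt n D 1" using xc by (simp add: Jt_def)
  qed
qed

end

definition r0 :: "nat \<Rightarrow> nat set \<Rightarrow> nat \<Rightarrow> nat" where
  "r0 n D j = (LEAST r. (sig n ^^ r) j \<in> D)"

lemma regsub_abelian:
  assumes "ring R" "S \<subseteq> carrier R" "\<zero>\<^bsub>R\<^esub> \<in> S" "\<And>x y. x \<in> S \<Longrightarrow> y \<in> S \<Longrightarrow> x \<oplus>\<^bsub>R\<^esub> y \<in> S"
    "\<And>x. x \<in> S \<Longrightarrow> \<ominus>\<^bsub>R\<^esub> x \<in> S"
  shows "abelian_group (sub_module (reg_mod R) S)"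
proof -
  interpret R: ring R by fact
  show ?thesis
  proof (rule abelian_groupI, simp_all add: sub_module_def reg_mod_def)
    show "\<And>x y. x \<in> S \<Longrightarrow> y \<in> S \<Longrightarrow> x \<oplus>\<^bsub>R\<^esub> y \<in> S" by fact
    show "\<zero>\<^bsub>R\<^esub> \<in> S" by fact
    show "\<And>x y z. x \<in> S \<Longrightarrow> y \<in> S \<Longrightarrow> z \<in> S \<Longrightarrow> x \<oplus>\<^bsub>R\<^esub> y \<oplus>\<^bsub>R\<^esub> z = x \<oplus>\<^bsub>R\<^esub> (y \<oplus>\<^bsub>R\<^esub> z)"
      using assms(2) by (auto intro: R.a_assoc)
    show "\<And>x y. x \<in> S \<Longrightarrow> y \<in> S \<Longrightarrow> x \<oplus>\<^bsub>R\<^esub> y = y \<oplus>\<^bsub>R\<^esub> x"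
      using assms(2) by (auto intro: R.a_comm)
    show "\<And>x. x \<in> S \<Longrightarrow> \<zero>\<^bsub>R\<^esub> \<oplus>\<^bsub>R\<^esub> x = x" using assms(2) by auto
    show "\<And>x. x \<in> S \<Longrightarrow> \<exists>y\<in>S. y \<oplus>\<^bsub>R\<^esub> x = \<zero>\<^bsub>R\<^esub>"
      using assms(2,5) by (metis R.l_neg subsetD)
  qed
qed

lemma regsub_minus:
  assumes "ring R" "S \<subseteq> carrier R" "\<zero>\<^bsub>R\<^esub> \<in> S" "\<And>x y. x \<in> S \<Longrightarrow> y \<in> S \<Longrightarrow> x \<oplus>\<^bsub>R\<^esub> y \<in> S"
    "\<And>x. x \<in> S \<Longrightarrow> \<ominus>\<^bsub>R\<^esub> x \<in> S" "x \<in> S"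
  shows "\<ominus>\<^bsub>sub_module (reg_mod R) S\<^esub> x = \<ominus>\<^bsub>R\<^esub> x"
proof -
  interpret R: ring R by fact
  interpret M: abelian_group "sub_module (reg_mod R) S" by (rule regsub_abelian[OF assms(1-5)])
  show ?thesis
    by (rule M.minus_equality) (use assms in \<open>auto simp: sub_module_def reg_mod_def intro!: R.l_neg\<close>)
qed

lemma pcar_upd: assumes "f \<in> pcar n" shows "f(q := 0) \<in> pcar n"
proof -
  obtain B where B: "\<forall>s L. f (s, L) \<noteq> 0 \<longrightarrow> s \<in> {1..n} \<and> L \<le> B" using assms by (auto simp: pcar_def)
  have "\<forall>s L. (f(q := 0)) (s, L) \<noteq> 0 \<longrightarrow> s \<in> {1..n} \<and> L \<le> B"
  proof (intro allI impI)
    fix s L assume "(f(q := 0)) (s, L) \<noteq> 0"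
    then have "f (s, L) \<noteq> 0" by (cases "q = (s, L)") auto
    then show "s \<in> {1..n} \<and> L \<le> B" using B by blast
  qed
  then show ?thesis unfolding pcar_def by blast
qed

context
  fixes n :: nat and D :: "nat set"
  assumes n2: "2 \<le> n" and Dsub: "D \<subseteq> {1..n}" and Dne: "D \<noteq> {}"
begin

lemmas n1x = n1'[OF n2 Dsub Dne]
lemmas A_ring4 = A_ring''[OF n2 Dsub Dne]
lemmas rep_props4 = rep_props''[OF n2 Dsub Dne]
lemmas rep_cls4 = rep_cls''[OF n2 Dsub Dne]
lemmas rep_inj4 = rep_inj''[OF n2 Dsub Dne]
lemmas rep_add4 = rep_add''[OF n2 Dsub Dne]
lemmas rep_mult4 = rep_mult''[OF n2 Dsub Dne]
lemmas rep_zero4 = rep_zero''[OF n2 Dsub Dne]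
lemmas cls_carrier4 = cls_carrier''[OF n2 Dsub Dne]
lemmas Pset_carrier4 = Pset_carrier[OF n2 Dsub Dne]
lemmas Pset_zero4 = Pset_zero[OF n2 Dsub Dne]
lemmas Pset_add4 = Pset_add[OF n2 Dsub Dne]
lemmas Pset_minus4 = Pset_minus[OF n2 Dsub Dne]
lemmas Pset_lmult4 = Pset_lmult[OF n2 Dsub Dne]
lemmas Pmod_carrier4 = Pmod_carrier[OF n2 Dsub Dne]
lemmas Jt_mult4 = Jt_mult[OF n2 Dsub Dne]
lemmas Jt_zero4 = Jt_zero[OF n2 Dsub Dne]
lemmas Jt_add4 = Jt_add[OF n2 Dsub Dne]
lemmas Jt_minus4 = Jt_minus[OF n2 Dsub Dne]
lemmas Jt_lmult4 = Jt_lmult[OF n2 Dsub Dne]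
lemmas jac_eq4 = jac_eq[OF n2 Dsub Dne]
lemmas rep_eq_zero4 = rep_eq_zero[OF n2 Dsub Dne]

lemma Pmod_is_regsub: "j \<in> {1..n} \<Longrightarrow> Pmod n D j = sub_module (reg_mod (Aalg n D)) (Pset n D j :: ('k::field) pel set set)"
  by (simp add: Pmod_def Pset_alt[OF n2 Dsub Dne])

lemma Pmod_abelian: "j \<in> {1..n} \<Longrightarrow> abelian_group (Pmod n D j :: (('k::field) pel set, 'k pel set) module)"
  unfolding Pmod_is_regsub
  by (rule regsub_abelian[OF A_ring4 Pset_carrier4 Pset_zero4 Pset_add4 Pset_minus4])

lemma Pmod_minus: "j \<in> {1..n} \<Longrightarrow> x \<in> Pset n D j \<Longrightarrow> \<ominus>\<^bsub>Pmod n D j\<^esub> x = \<ominus>\<^bsub>Aalg n D\<^esub> (x :: ('k::field) pel set)"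
  unfolding Pmod_is_regsub
  by (rule regsub_minus[OF A_ring4 Pset_carrier4 Pset_zero4 Pset_add4 Pset_minus4])

lemma Pmod_ops: "add (Pmod n D j) = add (Aalg n D :: ('k::field) pel set ring)"
  "zero (Pmod n D j) = zero (Aalg n D :: ('k::field) pel set ring)"
  "smult (Pmod n D j) = mult (Aalg n D :: ('k::field) pel set ring)"
  by (simp_all add: Pmod_def sub_module_def reg_mod_def)

lemma cls_Jt: "f \<in> pcar n \<Longrightarrow> (\<forall>s L. L < t \<longrightarrow> f (s, L) = 0) \<Longrightarrow> clsf n D f \<in> (Jt n D t :: ('k::field) pel set set)"
  by (simp add: Jt_def cls_carrier4 rep_cls4 tr_def)

lemma cls_Pset: "f \<in> pcar n \<Longrightarrow> (\<forall>s L. s \<noteq> j \<longrightarrow> f (s, L) = 0) \<Longrightarrow> clsf n D f \<in> (Pset n D j :: ('k::field) pel set set)"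
  by (simp add: Pset_def cls_carrier4 rep_cls4 tr_def)

lemma cls_zero: "clsf n D (\<lambda>_. 0) = (\<zero>\<^bsub>Aalg n D\<^esub> :: ('k::field) pel set)"
  by (simp add: A_zero[OF n1x Dsub])

lemma PJ_submod: assumes j: "j \<in> {1..n}"
  shows "submod (Aalg n D) (Pmod n D j) (Pset n D j \<inter> Jt n D t :: ('k::field) pel set set)"
proof -
  interpret A: ring "Aalg n D :: 'k pel set ring" by (rule A_ring4)
  interpret M: abelian_group "Pmod n D j :: ('k pel set, 'k pel set) module" by (rule Pmod_abelian[OF j])
  show ?thesis unfolding submod_def
  proof (intro conjI ballI)
    show "Pset n D j \<inter> Jt n D t \<subseteq> carrier (Pmod n D j :: ('k pel set, 'k pel set) module)"
      by (auto simp: Pmod_carrier4[OF j])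
    show "additive_subgroup (Pset n D j \<inter> Jt n D t) (Pmod n D j :: ('k pel set, 'k pel set) module)"
      by (rule add_subgroupI[OF M.abelian_group_axioms])
         (auto simp: Pmod_carrier4[OF j] Pmod_ops Pmod_minus[OF j] Pset_zero4 Jt_zero4 Pset_add4 Jt_add4 Pset_minus4 Jt_minus4)
    fix a x :: "'k pel set" assume "a \<in> carrier (Aalg n D)" "x \<in> Pset n D j \<inter> Jt n D t"
    then show "smult (Pmod n D j) a x \<in> Pset n D j \<inter> Jt n D t"
      by (auto simp: Pmod_ops Pset_lmult4 Jt_lmult4)
  qed
qed

lemma rad_pow_P: assumes j: "j \<in> {1..n}"
  shows "rad_pow (Aalg n D) (Pmod n D j) t = (Pset n D j \<inter> Jt n D t :: ('k::field) pel set set)"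
proof (induct t)
  case 0 then show ?case by (auto simp: Pmod_carrier4[OF j] Jt_def Pset_def)
next
  case (Suc t)
  interpret A: ring "Aalg n D :: 'k pel set ring" by (rule A_ring4)
  define G where "G = {smult (Pmod n D j) a x | a x. a \<in> jac (Aalg n D) \<and> x \<in> rad_pow (Aalg n D) (Pmod n D j :: ('k pel set, 'k pel set) module) t}"
  have G: "G = {a \<otimes>\<^bsub>Aalg n D\<^esub> x | a x. a \<in> (Jt n D 1 :: 'k pel set set) \<and> x \<in> Pset n D j \<inter> Jt n D t}"
    unfolding G_def Suc jac_eq4 Pmod_ops ..
  have GT: "G \<subseteq> (Pset n D j \<inter> Jt n D (Suc t) :: 'k pel set set)"
  proof
    fix y assume "y \<in> G"
    then obtain a x where ax: "y = a \<otimes>\<^bsub>Aalg n D\<^esub> x" "a \<in> Jt n D 1" "x \<in> Pset n D j \<inter> Jt n D t"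
      unfolding G by blast
    have ac: "a \<in> carrier (Aalg n D)" using ax(2) Jt_carrier[OF n2 Dsub Dne] by blast
    have "y \<in> Pset n D j" using Pset_lmult4[OF ac] ax by blast
    moreover have "y \<in> Jt n D (1 + t)" using Jt_mult4[OF ax(2)] ax by blast
    ultimately show "y \<in> Pset n D j \<inter> Jt n D (Suc t)" by simp
  qed
  have r: "rad_pow (Aalg n D) (Pmod n D j :: ('k pel set, 'k pel set) module) (Suc t) = \<Inter>{N. submod (Aalg n D) (Pmod n D j) N \<and> G \<subseteq> N}"
    by (simp add: submod_gen_def G_def)
  have sub1: "rad_pow (Aalg n D) (Pmod n D j :: ('k pel set, 'k pel set) module) (Suc t) \<subseteq> Pset n D j \<inter> Jt n D (Suc t)"
    unfolding r using PJ_submod[OF j, of "Suc t"] GT by blast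
  have sub2: "Pset n D j \<inter> Jt n D (Suc t) \<subseteq> N" if N: "submod (Aalg n D) (Pmod n D j :: ('k pel set, 'k pel set) module) N" "G \<subseteq> N" for N
  proof -
    have Nas: "additive_subgroup N (Pmod n D j)" using N(1) by (simp add: submod_def)
    have N0: "\<zero>\<^bsub>Aalg n D\<^esub> \<in> N" using additive_subgroup.zero_closed[OF Nas] by (simp add: Pmod_ops)
    have Nadd: "\<And>a b. a \<in> N \<Longrightarrow> b \<in> N \<Longrightarrow> a \<oplus>\<^bsub>Aalg n D\<^esub> b \<in> N"
      using additive_subgroup.a_closed[OF Nas] by (simp add: Pmod_ops)
    have main: "\<forall>f :: 'k pel. f \<in> pcar n \<and> (\<forall>p. f p \<noteq> 0 \<longrightarrow> p \<in> S \<and> fst p = j \<and> Suc t \<le> snd p) \<longrightarrow> clsf n D f \<in> N"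
      if "finite S" for S
      using that
    proof (induct S rule: finite_induct)
      case empty
      show ?case
      proof (intro allI impI)
        fix f :: "'k pel" assume "f \<in> pcar n \<and> (\<forall>p. f p \<noteq> 0 \<longrightarrow> p \<in> {} \<and> fst p = j \<and> Suc t \<le> snd p)"
        then have "f = (\<lambda>_. 0)" by auto
        then show "clsf n D f \<in> N" using N0 by (simp add: cls_zero)
      qed
    next
      case (insert q S)
      show ?case
      proof (intro allI impI)
        fix f :: "'k pel" assume f: "f \<in> pcar n \<and> (\<forall>p. f p \<noteq> 0 \<longrightarrow> p \<in> insert q S \<and> fst p = j \<and> Suc t \<le> snd p)"
        obtain s L where q: "q = (s, L)" by (cases q)
        define f' where "f' = f(q := 0)"
        have f'pcar: "f' \<in> pcar n" using f unfolding f'_def by (simp add: pcar_upd)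
        have "\<forall>p. f' p \<noteq> 0 \<longrightarrow> p \<in> S \<and> fst p = j \<and> Suc t \<le> snd p" using f unfolding f'_def by auto
        then have f'N: "clsf n D f' \<in> N" using insert(3) f'pcar by blast
        define g where "g = sc (f q) (path_el s L)"
        have gp: "g \<in> pcar n"
        proof (cases "f q = 0")
          case True then show ?thesis by (simp add: g_def sc_def pzero_closed)
        next
          case False then have "s \<in> {1..n}" using f q pcarD by blast
          then show ?thesis by (simp add: g_def sc_pcar path_el_pcar)
        qed
        have gN: "clsf n D g \<in> N"
        proof (cases "f q = 0")
          case True
          then have "g = (\<lambda>_. 0)" by (simp add: g_def sc_def)
          then show ?thesis using N0 by (simp add: cls_zero)
        next
          case False
          then have sj: "s = j" "Suc t \<le> L" using f q by auto
          have jn: "j \<in> {1..n}" by (rule j)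
          define a where "a = clsf n D (sc (f q) (path_el ((sig n ^^ (L - 1)) j) 1))"
          define x where "x = (clsf n D (path_el j (L - 1)) :: 'k pel set)"
          have ap: "sc (f q) (path_el ((sig n ^^ (L - 1)) j) 1) \<in> pcar n"
            by (intro sc_pcar path_el_pcar sig_pow_in[OF n1x jn])
          have xp: "path_el j (L - 1) \<in> pcar n" by (intro path_el_pcar jn)
          have "pmul n (sc (f q) (path_el ((sig n ^^ (L - 1)) j) 1)) (path_el j (L - 1)) = g"
            using sj by (simp add: sc_pmul pmul_path_el g_def)
          then have ax: "a \<otimes>\<^bsub>Aalg n D\<^esub> x = clsf n D g"
            unfolding a_def x_def using A_mult[OF n1x Dsub ap xp] by simp
          have aJ: "a \<in> Jt n D 1" unfolding a_def
            by (rule cls_Jt[OF ap]) (auto simp: sc_def path_el_apply)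
          have xJ: "x \<in> Pset n D j \<inter> Jt n D t" unfolding x_def
            using sj xp by (auto intro!: cls_Jt cls_Pset simp: path_el_apply)
          have "a \<otimes>\<^bsub>Aalg n D\<^esub> x \<in> G" unfolding G using aJ xJ by blast
          then show ?thesis using ax N(2) by auto
        qed
        have "clsf n D f' \<oplus>\<^bsub>Aalg n D\<^esub> clsf n D g \<in> N" using Nadd f'N gN by blast
        moreover have "clsf n D f' \<oplus>\<^bsub>Aalg n D\<^esub> clsf n D g = clsf n D (\<lambda>p. f' p + g p)"
          by (rule A_add[OF n1x Dsub f'pcar gp])
        moreover have "(\<lambda>p. f' p + g p) = f"
          by (auto simp: f'_def g_def sc_def path_el_apply q fun_eq_iff)
        ultimately show "clsf n D f \<in> N" by simp
      qed
    qed
    show ?thesis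
    proof
      fix z :: "'k pel set" assume z: "z \<in> Pset n D j \<inter> Jt n D (Suc t)"
      then have zc: "z \<in> carrier (Aalg n D)" by (simp add: Pset_def)
      have rp: "rep n D z \<in> pcar n" using rep_props4(1)[OF zc] .
      then have fin: "finite {p. rep n D z p \<noteq> 0}" by (simp add: KQ_carrier[symmetric] path_alg_def)
      have "\<forall>p. rep n D z p \<noteq> 0 \<longrightarrow> p \<in> {p. rep n D z p \<noteq> 0} \<and> fst p = j \<and> Suc t \<le> snd p"
      proof (intro allI impI)
        fix p assume nz: "rep n D z p \<noteq> 0"
        obtain s L where p: "p = (s, L)" by (cases p)
        have "s = j"
        proof (rule ccontr)
          assume "s \<noteq> j" then have "rep n D z (s, L) = 0" using z by (simp add: Pset_def)
          then show False using nz p by simp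
        qed
        moreover have "Suc t \<le> L"
        proof (rule ccontr)
          assume "\<not> Suc t \<le> L" then have "rep n D z (s, L) = 0" using z by (simp add: Jt_def)
          then show False using nz p by simp
        qed
        ultimately show "p \<in> {p. rep n D z p \<noteq> 0} \<and> fst p = j \<and> Suc t \<le> snd p" using nz p by simp
      qed
      then have "clsf n D (rep n D z) \<in> N" using main[OF fin] rp by blast
      then show "z \<in> N" using rep_props4(2)[OF zc] by simp
    qed
  qed
  show ?case using sub1 sub2 unfolding r by blast
qed

end

context
  fixes n :: nat and D :: "nat set"
  assumes n2: "2 \<le> n" and Dsub: "D \<subseteq> {1..n}" and Dne: "D \<noteq> {}"
begin

lemmas n1y = n1x[OF n2 Dsub Dne]

lemma r0_ex: assumes j: "j \<in> {1..n}" shows "(sig n ^^ r0 n D j) j \<in> D" "r0 n D j < n"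
proof -
  obtain d where d: "d \<in> D" using Dne by blast
  then obtain r where r: "r < n" "(sig n ^^ r) j = d" using sig_pow_surj[OF n1y j] Dsub by blast
  then have rD: "(sig n ^^ r) j \<in> D" using d by simp
  show "(sig n ^^ r0 n D j) j \<in> D" unfolding r0_def by (rule LeastI[of "\<lambda>r. (sig n ^^ r) j \<in> D", OF rD])
  have "r0 n D j \<le> r" unfolding r0_def by (rule Least_le[of "\<lambda>r. (sig n ^^ r) j \<in> D", OF rD])
  then show "r0 n D j < n" using r by simp
qed

lemma bad_iff: assumes j: "j \<in> {1..n}" shows "bad n D (j, L) \<longleftrightarrow> n + r0 n D j \<le> L"
proof
  assume "bad n D (j, L)"
  then obtain t where t: "t + n \<le> L" "(sig n ^^ t) j \<in> D" by (auto simp: bad_def)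
  have "r0 n D j \<le> t" unfolding r0_def by (rule Least_le[of "\<lambda>r. (sig n ^^ r) j \<in> D", OF t(2)])
  then show "n + r0 n D j \<le> L" using t by simp
next
  assume "n + r0 n D j \<le> L"
  then show "bad n D (j, L)" unfolding bad_def using r0_ex(1)[OF j] by (intro exI[of _ "r0 n D j"]) auto
qed

lemma PJ_zero_iff: assumes j: "j \<in> {1..n}"
  shows "(Pset n D j \<inter> Jt n D t = {\<zero>\<^bsub>Aalg n D\<^esub> :: ('k::field) pel set}) \<longleftrightarrow> n + r0 n D j \<le> t"
proof
  interpret A: ring "Aalg n D :: 'k pel set ring" by (rule A_ring4[OF n2 Dsub Dne])
  assume e: "Pset n D j \<inter> Jt n D t = {\<zero>\<^bsub>Aalg n D\<^esub> :: 'k pel set}"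
  show "n + r0 n D j \<le> t"
  proof (rule ccontr)
    assume "\<not> n + r0 n D j \<le> t"
    define L where "L = n + r0 n D j - 1"
    have tL: "t \<le> L" "L < n + r0 n D j" using \<open>\<not> n + r0 n D j \<le> t\<close> n2 by (auto simp: L_def)
    have nb: "\<not> bad n D (j, L)" using bad_iff[OF j] tL by simp
    have pp: "path_el j L \<in> pcar n" using j by (rule path_el_pcar)
    define w where "w = (clsf n D (path_el j L) :: 'k pel set)"
    have "w \<in> Pset n D j \<inter> Jt n D t" unfolding w_def
      using tL by (auto intro!: cls_Jt[OF n2 Dsub Dne] cls_Pset[OF n2 Dsub Dne] pp simp: path_el_apply)
    then have "w = \<zero>\<^bsub>Aalg n D\<^esub>" using e by blast
    moreover have "rep n D w (j, L) = 1"
      unfolding w_def by (simp add: rep_cls4[OF n2 Dsub Dne pp] tr_def nb path_el_apply)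
    ultimately show False by (simp add: rep_zero4[OF n2 Dsub Dne])
  qed
next
  interpret A: ring "Aalg n D :: 'k pel set ring" by (rule A_ring4[OF n2 Dsub Dne])
  assume le: "n + r0 n D j \<le> t"
  have "z = \<zero>\<^bsub>Aalg n D\<^esub>" if z: "z \<in> Pset n D j \<inter> Jt n D t" for z :: "'k pel set"
  proof -
    have zc: "z \<in> carrier (Aalg n D)" using z by (simp add: Pset_def)
    have "rep n D z p = 0" for p
    proof (rule ccontr)
      assume nz: "rep n D z p \<noteq> 0"
      obtain s L where p: "p = (s, L)" by (cases p)
      have "s = j" using z nz p by (auto simp: Pset_def)
      moreover have "t \<le> L" using z nz p by (auto simp: Jt_def not_less[symmetric])
      ultimately have "bad n D p" using bad_iff[OF j] le p by simp
      then show False using rep_good[OF n1y Dsub nz] by simp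
    qed
    then show ?thesis using rep_eq_zero4[OF n2 Dsub Dne zc] by blast
  qed
  moreover have "\<zero>\<^bsub>Aalg n D\<^esub> \<in> (Pset n D j \<inter> Jt n D t :: 'k pel set set)"
    using Pset_zero4[OF n2 Dsub Dne] Jt_zero4[OF n2 Dsub Dne] by blast
  ultimately show "Pset n D j \<inter> Jt n D t = {\<zero>\<^bsub>Aalg n D\<^esub> :: 'k pel set}" by blast
qed

lemma loewy_P: assumes j: "j \<in> {1..n}"
  shows "loewy (Aalg n D) (Pmod n D j :: (('k::field) pel set, 'k pel set) module) = n + r0 n D j"
proof -
  have z: "\<zero>\<^bsub>Pmod n D j :: ('k pel set, 'k pel set) module\<^esub> = \<zero>\<^bsub>Aalg n D\<^esub>"
    by (simp add: Pmod_ops[OF n2 Dsub Dne])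
  have iff: "(1 \<le> s \<and> rad_pow (Aalg n D) (Pmod n D j :: ('k pel set, 'k pel set) module) s = {\<zero>\<^bsub>Pmod n D j :: ('k pel set, 'k pel set) module\<^esub>})
        \<longleftrightarrow> n + r0 n D j \<le> s" for s
    unfolding z rad_pow_P[OF n2 Dsub Dne j] using PJ_zero_iff[OF j] n2 by auto
  have "loewy (Aalg n D) (Pmod n D j :: ('k pel set, 'k pel set) module) = (LEAST s. n + r0 n D j \<le> s)"
    unfolding loewy_def iff ..
  also have "\<dots> = n + r0 n D j" by (rule Least_equality) auto
  finally show ?thesis .
qed

lemma r0_shift: assumes i: "i \<in> {1..n}" and t: "t < r0 n D i"
  shows "r0 n D ((sig n ^^ t) i) = r0 n D i - t"
  unfolding r0_def[of n D "(sig n ^^ t) i"]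
proof (rule Least_equality)
  have "(sig n ^^ (r0 n D i - t)) ((sig n ^^ t) i) = (sig n ^^ r0 n D i) i"
    using t by (simp add: funpow_split)
  then show "(sig n ^^ (r0 n D i - t)) ((sig n ^^ t) i) \<in> D" using r0_ex(1)[OF i] by simp
next
  fix y assume y: "(sig n ^^ y) ((sig n ^^ t) i) \<in> D"
  then have "(sig n ^^ (y + t)) i \<in> D" by (simp add: funpow_add)
  then have "r0 n D i \<le> y + t" unfolding r0_def by (rule Least_le[of "\<lambda>r. (sig n ^^ r) i \<in> D"])
  then show "r0 n D i - t \<le> y" by simp
qed

lemma part3: assumes i: "i \<in> {1..n}" and k: "n \<le> k" "k < n + r0 n D i"
  shows "n + r0 n D ((sig n ^^ k) i) = (n + r0 n D i) - (k - n)"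
proof -
  have "(sig n ^^ k) i = (sig n ^^ (k - n)) ((sig n ^^ n) i)"
    using k by (metis funpow_split)
  also have "\<dots> = (sig n ^^ (k - n)) i" using sig_pow_n[OF n1y i] by simp
  finally have e: "(sig n ^^ k) i = (sig n ^^ (k - n)) i" .
  show ?thesis unfolding e using r0_shift[OF i, of "k - n"] k by simp
qed

end

lemma (in abelian_group) idem_zero: assumes "x \<in> carrier G" "x \<oplus> x = x" shows "x = \<zero>"
proof -
  have "x = (x \<oplus> x) \<oplus> \<ominus> x" using assms by (simp add: a_assoc r_neg)
  also have "\<dots> = \<zero>" using assms by (simp add: r_neg)
  finally show ?thesis .
qed

locale lmod =
  fixes R :: "'a ring" and M :: "('a, 'b) module"
  assumes lm: "left_module R M"
begin

lemma R_ring: "ring R" using lm by (simp add: left_module_def)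
lemma M_ab: "abelian_group M" using lm by (simp add: left_module_def)
lemma sm_closed: "a \<in> carrier R \<Longrightarrow> x \<in> carrier M \<Longrightarrow> smult M a x \<in> carrier M"
  using lm by (simp add: left_module_def)
lemma sm_ldistr: "a \<in> carrier R \<Longrightarrow> b \<in> carrier R \<Longrightarrow> x \<in> carrier M \<Longrightarrow>
  smult M (a \<oplus>\<^bsub>R\<^esub> b) x = smult M a x \<oplus>\<^bsub>M\<^esub> smult M b x"
  using lm by (simp add: left_module_def)
lemma sm_rdistr: "a \<in> carrier R \<Longrightarrow> x \<in> carrier M \<Longrightarrow> y \<in> carrier M \<Longrightarrow>
  smult M a (x \<oplus>\<^bsub>M\<^esub> y) = smult M a x \<oplus>\<^bsub>M\<^esub> smult M a y"
  using lm by (simp add: left_module_def)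
lemma sm_assoc: "a \<in> carrier R \<Longrightarrow> b \<in> carrier R \<Longrightarrow> x \<in> carrier M \<Longrightarrow>
  smult M (a \<otimes>\<^bsub>R\<^esub> b) x = smult M a (smult M b x)"
  using lm by (simp add: left_module_def)
lemma sm_one: "x \<in> carrier M \<Longrightarrow> smult M \<one>\<^bsub>R\<^esub> x = x"
  using lm by (simp add: left_module_def)

lemma sm_zero_r: assumes "a \<in> carrier R" shows "smult M a \<zero>\<^bsub>M\<^esub> = \<zero>\<^bsub>M\<^esub>"
proof -
  interpret M: abelian_group M by (rule M_ab)
  have "smult M a \<zero>\<^bsub>M\<^esub> \<oplus>\<^bsub>M\<^esub> smult M a \<zero>\<^bsub>M\<^esub> = smult M a \<zero>\<^bsub>M\<^esub>"
    using sm_rdistr[OF assms M.zero_closed M.zero_closed] by simp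
  then show ?thesis using M.idem_zero sm_closed[OF assms M.zero_closed] by blast
qed

lemma sm_zero_l: assumes "x \<in> carrier M" shows "smult M \<zero>\<^bsub>R\<^esub> x = \<zero>\<^bsub>M\<^esub>"
proof -
  interpret M: abelian_group M by (rule M_ab)
  interpret R: ring R by (rule R_ring)
  have "smult M \<zero>\<^bsub>R\<^esub> x \<oplus>\<^bsub>M\<^esub> smult M \<zero>\<^bsub>R\<^esub> x = smult M \<zero>\<^bsub>R\<^esub> x"
    using sm_ldistr[OF R.zero_closed R.zero_closed assms] by simp
  then show ?thesis using M.idem_zero sm_closed[OF R.zero_closed assms] by blast
qed

lemma sm_minus: assumes "a \<in> carrier R" "x \<in> carrier M"
  shows "smult M a (\<ominus>\<^bsub>M\<^esub> x) = \<ominus>\<^bsub>M\<^esub> (smult M a x)"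
proof -
  interpret M: abelian_group M by (rule M_ab)
  have "smult M a (\<ominus>\<^bsub>M\<^esub> x) \<oplus>\<^bsub>M\<^esub> smult M a x = \<zero>\<^bsub>M\<^esub>"
    using sm_rdistr[OF assms(1) M.a_inv_closed[OF assms(2)] assms(2)] sm_zero_r[OF assms(1)] assms
    by (simp add: M.l_neg)
  then show ?thesis
    using M.minus_equality sm_closed assms M.a_inv_closed by metis
qed

end

context
  fixes n :: nat and D :: "nat set"
  assumes n2: "2 \<le> n" and Dsub: "D \<subseteq> {1..n}" and Dne: "D \<noteq> {}"
begin

lemma rad_pow_top:
  fixes M :: "(('k::field) pel set, 'm) module"
  assumes lm: "left_module (Aalg n D) M"
  shows "rad_pow (Aalg n D) M (2 * n - 1) = {\<zero>\<^bsub>M\<^esub>}"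
proof -
  interpret L: lmod "Aalg n D" M by (rule lmod.intro[OF lm])
  interpret M: abelian_group M by (rule L.M_ab)
  interpret A: ring "Aalg n D :: 'k pel set ring" by (rule A_ring4[OF n2 Dsub Dne])
  define X where "X = (\<lambda>s. {x \<in> carrier M. \<forall>c \<in> (Jt n D (2 * n - 1 - s) :: 'k pel set set). smult M c x = \<zero>\<^bsub>M\<^esub>})"
  have Jc: "\<And>t. Jt n D t \<subseteq> carrier (Aalg n D :: 'k pel set ring)" by (rule Jt_carrier[OF n2 Dsub Dne])
  have Xsub: "submod (Aalg n D) M (X s)" for s
    unfolding submod_def
  proof (intro conjI ballI)
    show "X s \<subseteq> carrier M" by (auto simp: X_def)
    show "additive_subgroup (X s) M"
    proof (rule add_subgroupI[OF M.abelian_group_axioms])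
      show "X s \<subseteq> carrier M" by (auto simp: X_def)
      show "\<zero>\<^bsub>M\<^esub> \<in> X s" unfolding X_def
        using L.sm_zero_r subsetD[OF Jc] by blast
      show "x \<oplus>\<^bsub>M\<^esub> y \<in> X s" if "x \<in> X s" "y \<in> X s" for x y
      proof -
        have xy: "x \<in> carrier M" "y \<in> carrier M" using that by (auto simp: X_def)
        have "smult M c (x \<oplus>\<^bsub>M\<^esub> y) = \<zero>\<^bsub>M\<^esub>" if c: "c \<in> (Jt n D (2 * n - 1 - s) :: 'k pel set set)" for c
          using L.sm_rdistr[OF subsetD[OF Jc c] xy] c \<open>x \<in> X s\<close> \<open>y \<in> X s\<close> by (simp add: X_def)
        then show ?thesis using xy by (simp add: X_def)
      qed
      show "\<ominus>\<^bsub>M\<^esub> x \<in> X s" if "x \<in> X s" for x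
      proof -
        have xc: "x \<in> carrier M" using that by (auto simp: X_def)
        have "smult M c (\<ominus>\<^bsub>M\<^esub> x) = \<zero>\<^bsub>M\<^esub>" if c: "c \<in> (Jt n D (2 * n - 1 - s) :: 'k pel set set)" for c
          using L.sm_minus[OF subsetD[OF Jc c] xc] c \<open>x \<in> X s\<close> by (simp add: X_def)
        then show ?thesis using xc by (simp add: X_def)
      qed
    qed
    fix a x assume a: "a \<in> carrier (Aalg n D :: 'k pel set ring)" and x: "x \<in> X s"
    show "smult M a x \<in> X s"
      unfolding X_def
    proof (intro CollectI conjI ballI)
      show "smult M a x \<in> carrier M" using L.sm_closed a x by (auto simp: X_def)
      fix c assume c: "c \<in> (Jt n D (2 * n - 1 - s) :: 'k pel set set)"
      have "smult M c (smult M a x) = smult M (c \<otimes>\<^bsub>Aalg n D\<^esub> a) x"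
        using L.sm_assoc[OF subsetD[OF Jc c] a] x by (simp add: X_def)
      also have "\<dots> = \<zero>\<^bsub>M\<^esub>" using x Jt_rmult[OF n2 Dsub Dne c a] by (auto simp: X_def)
      finally show "smult M c (smult M a x) = \<zero>\<^bsub>M\<^esub>" .
    qed
  qed
  have main: "s \<le> 2 * n - 1 \<Longrightarrow> rad_pow (Aalg n D) M s \<subseteq> X s" for s
  proof (induct s)
    case 0
    show ?case
    proof
      fix x assume x: "x \<in> rad_pow (Aalg n D) M 0"
      then have xc: "x \<in> carrier M" by simp
      have "smult M c x = \<zero>\<^bsub>M\<^esub>" if "c \<in> (Jt n D (2 * n - 1) :: 'k pel set set)" for c
      proof -
        have "c = \<zero>\<^bsub>Aalg n D\<^esub>" using that Jt_top[OF n2 Dsub Dne] by blast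
        then show ?thesis using L.sm_zero_l[OF xc] by simp
      qed
      then show "x \<in> X 0" using xc by (simp add: X_def)
    qed
  next
    case (Suc s)
    have IH: "rad_pow (Aalg n D) M s \<subseteq> X s" using Suc by simp
    have G: "{smult M a x | a x. a \<in> jac (Aalg n D) \<and> x \<in> rad_pow (Aalg n D) M s} \<subseteq> X (Suc s)"
    proof
      fix y assume "y \<in> {smult M a x | a x. a \<in> jac (Aalg n D) \<and> x \<in> rad_pow (Aalg n D) M s}"
      then obtain a x where y: "y = smult M a x" "a \<in> (Jt n D 1 :: 'k pel set set)" "x \<in> X s"
        using IH jac_eq4[OF n2 Dsub Dne] by blast
      have ac: "a \<in> carrier (Aalg n D)" using y(2) Jc by blast
      have xc: "x \<in> carrier M" using y(3) by (simp add: X_def)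
      show "y \<in> X (Suc s)"
        unfolding X_def
      proof (intro CollectI conjI ballI)
        show "y \<in> carrier M" using L.sm_closed[OF ac xc] y by simp
        fix c assume c: "c \<in> (Jt n D (2 * n - 1 - Suc s) :: 'k pel set set)"
        have cc: "c \<in> carrier (Aalg n D)" using c Jc by blast
        have "smult M c y = smult M (c \<otimes>\<^bsub>Aalg n D\<^esub> a) x"
          using L.sm_assoc[OF cc ac xc] y by simp
        moreover have "c \<otimes>\<^bsub>Aalg n D\<^esub> a \<in> Jt n D (2 * n - 1 - Suc s + 1)"
          by (rule Jt_mult[OF n2 Dsub Dne c y(2)])
        moreover have "2 * n - 1 - Suc s + 1 = 2 * n - 1 - s" using Suc.prems by simp
        ultimately show "smult M c y = \<zero>\<^bsub>M\<^esub>" using y(3) by (auto simp: X_def)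
      qed
    qed
    show ?case using Xsub[of "Suc s"] G by (auto simp: submod_gen_def)
  qed
  have "rad_pow (Aalg n D) M (2 * n - 1) \<subseteq> {\<zero>\<^bsub>M\<^esub>}"
  proof
    fix x assume "x \<in> rad_pow (Aalg n D) M (2 * n - 1)"
    then have "x \<in> X (2 * n - 1)" using main by blast
    then have "smult M \<one>\<^bsub>Aalg n D\<^esub> x = \<zero>\<^bsub>M\<^esub>" "x \<in> carrier M"
      by (auto simp: X_def Jt_0[OF n2 Dsub Dne])
    then show "x \<in> {\<zero>\<^bsub>M\<^esub>}" using L.sm_one by simp
  qed
  moreover have "\<zero>\<^bsub>M\<^esub> \<in> rad_pow (Aalg n D) M (2 * n - 1)"
  proof -
    obtain m where m: "2 * n - 1 = Suc m" using n2 by (cases "2 * n - 1") auto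
    have "\<zero>\<^bsub>M\<^esub> \<in> N" if "submod (Aalg n D) M N" for N
      using that additive_subgroup.zero_closed by (auto simp: submod_def)
    then show ?thesis unfolding m by (auto simp: submod_gen_def)
  qed
  ultimately show ?thesis by blast
qed

lemma part1:
  fixes M :: "(('k::field) pel set, 'm) module"
  assumes lm: "left_module (Aalg n D) M"
  shows "0 < loewy (Aalg n D) M \<and> loewy (Aalg n D) M < 2 * n"
proof -
  have P: "1 \<le> 2 * n - 1 \<and> rad_pow (Aalg n D) M (2 * n - 1) = {\<zero>\<^bsub>M\<^esub>}"
    using rad_pow_top[OF lm] n2 by simp
  have "loewy (Aalg n D) M \<le> 2 * n - 1" unfolding loewy_def by (rule Least_le[of "\<lambda>s. 1 \<le> s \<and> rad_pow (Aalg n D) M s = {\<zero>\<^bsub>M\<^esub>}", OF P])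
  moreover have "1 \<le> loewy (Aalg n D) M" unfolding loewy_def using LeastI[of "\<lambda>s. 1 \<le> s \<and> rad_pow (Aalg n D) M s = {\<zero>\<^bsub>M\<^esub>}", OF P] by blast
  ultimately show ?thesis using n2 by simp
qed

end

lemma a_r_coset_eq: "N +>\<^bsub>X\<^esub> x = {h \<oplus>\<^bsub>X\<^esub> x | h. h \<in> N}"
  by (auto simp: a_r_coset_def r_coset_def)

lemma set_add_eq: "set_add X A B = {a \<oplus>\<^bsub>X\<^esub> b | a b. a \<in> A \<and> b \<in> B}"
  by (auto simp: set_add_def set_mult_def)

lemma a_rcosets_eq: "a_rcosets\<^bsub>X\<^esub> N = {N +>\<^bsub>X\<^esub> x | x. x \<in> carrier X}"
  by (auto simp: A_RCOSETS_def')

lemma (in abelian_group) cancel_zero: "a \<in> carrier G \<Longrightarrow> b \<in> carrier G \<Longrightarrow> a \<oplus> b = b \<Longrightarrow> a = \<zero>"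
  by (metis add.r_cancel_one)

lemma first_iso:
  fixes X :: "('a, 'b) module" and Y :: "('a, 'c) module" and R :: "'a ring"
  assumes X: "abelian_group X" and Y: "abelian_group Y"
    and phi: "\<And>x. x \<in> carrier X \<Longrightarrow> \<phi> x \<in> carrier Y"
    and onto: "\<phi> ` carrier X = carrier Y"
    and add: "\<And>x x'. x \<in> carrier X \<Longrightarrow> x' \<in> carrier X \<Longrightarrow> \<phi> (x \<oplus>\<^bsub>X\<^esub> x') = \<phi> x \<oplus>\<^bsub>Y\<^esub> \<phi> x'"
    and smc: "\<And>a x. a \<in> carrier R \<Longrightarrow> x \<in> carrier X \<Longrightarrow> smult X a x \<in> carrier X"
    and sm: "\<And>a x. a \<in> carrier R \<Longrightarrow> x \<in> carrier X \<Longrightarrow> \<phi> (smult X a x) = smult Y a (\<phi> x)"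
    and smd: "\<And>a x x'. a \<in> carrier R \<Longrightarrow> x \<in> carrier X \<Longrightarrow> x' \<in> carrier X \<Longrightarrow>
        smult X a (x \<oplus>\<^bsub>X\<^esub> x') = smult X a x \<oplus>\<^bsub>X\<^esub> smult X a x'"
    and N: "N = {x \<in> carrier X. \<phi> x = \<zero>\<^bsub>Y\<^esub>}"
    and Nsm: "\<And>a h. a \<in> carrier R \<Longrightarrow> h \<in> N \<Longrightarrow> smult X a h \<in> N"
  shows "mod_iso R Y (quot_mod X N)"
proof -
  interpret X: abelian_group X by (rule X)
  interpret Y: abelian_group Y by (rule Y)
  have phi0: "\<phi> \<zero>\<^bsub>X\<^esub> = \<zero>\<^bsub>Y\<^esub>"
  proof -
    have "\<phi> \<zero>\<^bsub>X\<^esub> \<oplus>\<^bsub>Y\<^esub> \<phi> \<zero>\<^bsub>X\<^esub> = \<phi> \<zero>\<^bsub>X\<^esub>" using add[of "\<zero>\<^bsub>X\<^esub>" "\<zero>\<^bsub>X\<^esub>"] by simp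
    then show ?thesis using Y.idem_zero phi by blast
  qed
  have phineg: "\<phi> (\<ominus>\<^bsub>X\<^esub> x) = \<ominus>\<^bsub>Y\<^esub> \<phi> x" if x: "x \<in> carrier X" for x
  proof -
    have "\<phi> (\<ominus>\<^bsub>X\<^esub> x) \<oplus>\<^bsub>Y\<^esub> \<phi> x = \<zero>\<^bsub>Y\<^esub>"
      using add[OF X.a_inv_closed[OF x] x] phi0 x by (simp add: X.l_neg)
    then show ?thesis using Y.minus_equality phi x X.a_inv_closed by metis
  qed
  have NX: "N \<subseteq> carrier X" using N by auto
  have N0: "\<zero>\<^bsub>X\<^esub> \<in> N" using N phi0 by simp
  have Nadd: "h \<oplus>\<^bsub>X\<^esub> h' \<in> N" if "h \<in> N" "h' \<in> N" for h h'
    using that N add by auto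
  have cos_eq: "N +>\<^bsub>X\<^esub> x = N +>\<^bsub>X\<^esub> x' \<longleftrightarrow> \<phi> x = \<phi> x'" if x: "x \<in> carrier X" "x' \<in> carrier X" for x x'
  proof
    assume e: "N +>\<^bsub>X\<^esub> x = N +>\<^bsub>X\<^esub> x'"
    have "x = \<zero>\<^bsub>X\<^esub> \<oplus>\<^bsub>X\<^esub> x" using x by simp
    then have "x \<in> N +>\<^bsub>X\<^esub> x" unfolding a_r_coset_eq using N0 by blast
    then have "x \<in> N +>\<^bsub>X\<^esub> x'" using e by simp
    then obtain h where h: "h \<in> N" "x = h \<oplus>\<^bsub>X\<^esub> x'" unfolding a_r_coset_eq by blast
    then show "\<phi> x = \<phi> x'" using add[of h x'] N x phi by auto
  next
    assume e: "\<phi> x = \<phi> x'"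
    have sub: "N +>\<^bsub>X\<^esub> u \<subseteq> N +>\<^bsub>X\<^esub> u'" if u: "u \<in> carrier X" "u' \<in> carrier X" "\<phi> u = \<phi> u'" for u u'
    proof
      fix v assume "v \<in> N +>\<^bsub>X\<^esub> u"
      then obtain h where h: "h \<in> N" "v = h \<oplus>\<^bsub>X\<^esub> u" unfolding a_r_coset_eq by blast
      have hc: "h \<in> carrier X" using h NX by auto
      define h' where "h' = h \<oplus>\<^bsub>X\<^esub> (u \<oplus>\<^bsub>X\<^esub> \<ominus>\<^bsub>X\<^esub> u')"
      have h'c: "h' \<in> carrier X" using hc u by (simp add: h'_def)
      have "\<phi> h' = \<phi> h \<oplus>\<^bsub>Y\<^esub> (\<phi> u \<oplus>\<^bsub>Y\<^esub> \<ominus>\<^bsub>Y\<^esub> \<phi> u')"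
        unfolding h'_def using hc u by (simp add: add phineg)
      also have "\<dots> = \<zero>\<^bsub>Y\<^esub>" using h N u phi by (simp add: Y.r_neg)
      finally have "h' \<in> N" using N h'c by simp
      moreover have "v = h' \<oplus>\<^bsub>X\<^esub> u'" unfolding h'_def h(2) using hc u by (simp add: X.a_assoc X.l_neg)
      ultimately show "v \<in> N +>\<^bsub>X\<^esub> u'" unfolding a_r_coset_eq by blast
    qed
    show "N +>\<^bsub>X\<^esub> x = N +>\<^bsub>X\<^esub> x'" using sub[OF x e] sub[OF x(2,1) e[symmetric]] by blast
  qed
  define pre where "pre = (\<lambda>y. SOME x. x \<in> carrier X \<and> \<phi> x = y)"
  have pre: "pre y \<in> carrier X \<and> \<phi> (pre y) = y" if "y \<in> carrier Y" for y
  proof -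
    have "y \<in> \<phi> ` carrier X" using that onto by simp
    then obtain x where "x \<in> carrier X" "y = \<phi> x" by (rule imageE)
    then have "\<exists>x. x \<in> carrier X \<and> \<phi> x = y" by blast
    then show ?thesis unfolding pre_def by (rule someI_ex)
  qed
  define psi where "psi = (\<lambda>y. N +>\<^bsub>X\<^esub> pre y)"
  have psi_phi: "psi (\<phi> x) = N +>\<^bsub>X\<^esub> x" if "x \<in> carrier X" for x
  proof -
    have p: "pre (\<phi> x) \<in> carrier X" "\<phi> (pre (\<phi> x)) = \<phi> x" using pre[OF phi[OF that]] by auto
    show ?thesis unfolding psi_def using cos_eq[OF p(1) that] p(2) by simp
  qed
  have car: "carrier (quot_mod X N) = {N +>\<^bsub>X\<^esub> x | x. x \<in> carrier X}"
    by (simp add: quot_mod_def a_rcosets_eq)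
  have qadd: "add (quot_mod X N) (N +>\<^bsub>X\<^esub> x) (N +>\<^bsub>X\<^esub> x') = N +>\<^bsub>X\<^esub> (x \<oplus>\<^bsub>X\<^esub> x')"
    if x: "x \<in> carrier X" "x' \<in> carrier X" for x x'
  proof -
    have "set_add X (N +>\<^bsub>X\<^esub> x) (N +>\<^bsub>X\<^esub> x') = N +>\<^bsub>X\<^esub> (x \<oplus>\<^bsub>X\<^esub> x')"
    proof
      show "set_add X (N +>\<^bsub>X\<^esub> x) (N +>\<^bsub>X\<^esub> x') \<subseteq> N +>\<^bsub>X\<^esub> (x \<oplus>\<^bsub>X\<^esub> x')"
      proof
        fix v assume "v \<in> set_add X (N +>\<^bsub>X\<^esub> x) (N +>\<^bsub>X\<^esub> x')"
        then obtain h h' where hh: "h \<in> N" "h' \<in> N" "v = (h \<oplus>\<^bsub>X\<^esub> x) \<oplus>\<^bsub>X\<^esub> (h' \<oplus>\<^bsub>X\<^esub> x')"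
          unfolding set_add_eq a_r_coset_eq by blast
        have hc: "h \<in> carrier X" "h' \<in> carrier X" using hh NX by auto
        have "v = (h \<oplus>\<^bsub>X\<^esub> h') \<oplus>\<^bsub>X\<^esub> (x \<oplus>\<^bsub>X\<^esub> x')"
          unfolding hh(3) using hc x by (simp add: X.a_assoc X.a_lcomm)
        then show "v \<in> N +>\<^bsub>X\<^esub> (x \<oplus>\<^bsub>X\<^esub> x')" unfolding a_r_coset_eq using Nadd hh by blast
      qed
      show "N +>\<^bsub>X\<^esub> (x \<oplus>\<^bsub>X\<^esub> x') \<subseteq> set_add X (N +>\<^bsub>X\<^esub> x) (N +>\<^bsub>X\<^esub> x')"
      proof
        fix v assume "v \<in> N +>\<^bsub>X\<^esub> (x \<oplus>\<^bsub>X\<^esub> x')"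
        then obtain h where h: "h \<in> N" "v = h \<oplus>\<^bsub>X\<^esub> (x \<oplus>\<^bsub>X\<^esub> x')" unfolding a_r_coset_eq by blast
        have "v = (h \<oplus>\<^bsub>X\<^esub> x) \<oplus>\<^bsub>X\<^esub> (\<zero>\<^bsub>X\<^esub> \<oplus>\<^bsub>X\<^esub> x')"
          using h(2) NX h(1) x by (auto simp: X.a_assoc)
        moreover have "h \<oplus>\<^bsub>X\<^esub> x \<in> N +>\<^bsub>X\<^esub> x" "\<zero>\<^bsub>X\<^esub> \<oplus>\<^bsub>X\<^esub> x' \<in> N +>\<^bsub>X\<^esub> x'"
          unfolding a_r_coset_eq using h N0 by blast+
        ultimately show "v \<in> set_add X (N +>\<^bsub>X\<^esub> x) (N +>\<^bsub>X\<^esub> x')" unfolding set_add_eq by blast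
      qed
    qed
    then show ?thesis by (simp add: quot_mod_def)
  qed
  have qsm: "smult (quot_mod X N) a (N +>\<^bsub>X\<^esub> x) = N +>\<^bsub>X\<^esub> (smult X a x)"
    if a: "a \<in> carrier R" and x: "x \<in> carrier X" for a x
  proof -
    have "set_add X N ((\<lambda>u. smult X a u) ` (N +>\<^bsub>X\<^esub> x)) = N +>\<^bsub>X\<^esub> (smult X a x)"
    proof
      show "set_add X N ((\<lambda>u. smult X a u) ` (N +>\<^bsub>X\<^esub> x)) \<subseteq> N +>\<^bsub>X\<^esub> (smult X a x)"
      proof
        fix v assume "v \<in> set_add X N ((\<lambda>u. smult X a u) ` (N +>\<^bsub>X\<^esub> x))"
        then obtain h h' where hh: "h \<in> N" "h' \<in> N" "v = h \<oplus>\<^bsub>X\<^esub> smult X a (h' \<oplus>\<^bsub>X\<^esub> x)"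
          unfolding set_add_eq a_r_coset_eq by blast
        have c: "h \<in> carrier X" "h' \<in> carrier X" using hh NX by auto
        have "v = (h \<oplus>\<^bsub>X\<^esub> smult X a h') \<oplus>\<^bsub>X\<^esub> smult X a x"
          using hh c x a by (simp add: smd smc X.a_assoc)
        moreover have "h \<oplus>\<^bsub>X\<^esub> smult X a h' \<in> N" using Nadd[OF hh(1) Nsm[OF a hh(2)]] .
        ultimately show "v \<in> N +>\<^bsub>X\<^esub> (smult X a x)" unfolding a_r_coset_eq by blast
      qed
      show "N +>\<^bsub>X\<^esub> (smult X a x) \<subseteq> set_add X N ((\<lambda>u. smult X a u) ` (N +>\<^bsub>X\<^esub> x))"
      proof
        fix v assume "v \<in> N +>\<^bsub>X\<^esub> (smult X a x)"
        then obtain h where h: "h \<in> N" "v = h \<oplus>\<^bsub>X\<^esub> smult X a x" unfolding a_r_coset_eq by blast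
        have "x = \<zero>\<^bsub>X\<^esub> \<oplus>\<^bsub>X\<^esub> x" using x by simp
        then have "x \<in> N +>\<^bsub>X\<^esub> x" unfolding a_r_coset_eq using N0 by blast
        then have "smult X a x \<in> (\<lambda>u. smult X a u) ` (N +>\<^bsub>X\<^esub> x)" by blast
        then show "v \<in> set_add X N ((\<lambda>u. smult X a u) ` (N +>\<^bsub>X\<^esub> x))"
          unfolding set_add_eq using h by blast
      qed
    qed
    then show ?thesis by (simp add: quot_mod_def)
  qed
  have psi_hom: "mod_hom R Y (quot_mod X N) psi"
    unfolding mod_hom_def
  proof (intro conjI ballI)
    show "psi \<in> carrier Y \<rightarrow> carrier (quot_mod X N)"
      unfolding car psi_def using pre by blast
    fix y y' assume y: "y \<in> carrier Y" "y' \<in> carrier Y"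
    have "y \<oplus>\<^bsub>Y\<^esub> y' = \<phi> (pre y \<oplus>\<^bsub>X\<^esub> pre y')" using pre[OF y(1)] pre[OF y(2)] add by simp
    then have "psi (y \<oplus>\<^bsub>Y\<^esub> y') = N +>\<^bsub>X\<^esub> (pre y \<oplus>\<^bsub>X\<^esub> pre y')" using psi_phi pre y by simp
    also have "\<dots> = add (quot_mod X N) (psi y) (psi y')" unfolding psi_def using qadd pre y by simp
    finally show "psi (y \<oplus>\<^bsub>Y\<^esub> y') = psi y \<oplus>\<^bsub>quot_mod X N\<^esub> psi y'" by simp
  next
    fix a y assume a: "a \<in> carrier R" and y: "y \<in> carrier Y"
    have "smult Y a y = \<phi> (smult X a (pre y))" using sm[OF a] pre[OF y] by simp
    then have "psi (smult Y a y) = N +>\<^bsub>X\<^esub> (smult X a (pre y))" using psi_phi smc[OF a] pre[OF y] by simp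
    also have "\<dots> = smult (quot_mod X N) a (psi y)" unfolding psi_def using qsm[OF a] pre[OF y] by simp
    finally show "psi (smult Y a y) = smult (quot_mod X N) a (psi y)" .
  qed
  have "bij_betw psi (carrier Y) (carrier (quot_mod X N))"
    unfolding bij_betw_def
  proof
    show "inj_on psi (carrier Y)"
    proof
      fix y y' assume y: "y \<in> carrier Y" "y' \<in> carrier Y" and e: "psi y = psi y'"
      then show "y = y'" unfolding psi_def using cos_eq pre by metis
    qed
    show "psi ` carrier Y = carrier (quot_mod X N)"
    proof
      show "psi ` carrier Y \<subseteq> carrier (quot_mod X N)" unfolding car psi_def using pre by blast
      show "carrier (quot_mod X N) \<subseteq> psi ` carrier Y"
        unfolding car using psi_phi phi by force
    qed
  qed
  then show ?thesis unfolding mod_iso_def using psi_hom by blast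
qed

lemma pmul_path_right:
  "pmul n g (path_el i k) (s, L) = (if s = i \<and> k \<le> L then g ((sig n ^^ k) i, L - k) else 0)"
proof (cases "s = i \<and> k \<le> L")
  case True
  have "pmul n g (path_el i k) (s, L) = g ((sig n ^^ k) s, L - k) * path_el i k (s, k)"
    unfolding pmul_apply using True by (intro sum_single_nat) (auto simp: path_el_apply)
  then show ?thesis using True by (simp add: path_el_apply)
next
  case False
  then show ?thesis by (auto simp: pmul_apply path_el_apply intro!: sum.neutral)
qed

context
  fixes n :: nat and D :: "nat set"
  assumes n2: "2 \<le> n" and Dsub: "D \<subseteq> {1..n}" and Dne: "D \<noteq> {}"
begin

lemmas n1z = n1y[OF n2 Dsub Dne]

lemma w_props: assumes i: "i \<in> {1..n}" and k: "k < n + r0 n D i"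
  shows "clsf n D (path_el i k) \<in> carrier (Aalg n D :: ('k::field) pel set ring)"
    "rep n D (clsf n D (path_el i k) :: 'k pel set) = path_el i k"
proof -
  have pp: "path_el i k \<in> pcar n" by (rule path_el_pcar[OF i])
  show "clsf n D (path_el i k) \<in> carrier (Aalg n D :: 'k pel set ring)" by (rule cls_carrier4[OF n2 Dsub Dne pp])
  have nb: "\<not> bad n D (i, k)" using bad_iff[OF n2 Dsub Dne i] k by simp
  show "rep n D (clsf n D (path_el i k) :: 'k pel set) = path_el i k"
    using nb by (auto simp: rep_cls4[OF n2 Dsub Dne pp] tr_def path_el_apply fun_eq_iff)
qed

lemma rep_yw: assumes i: "i \<in> {1..n}" and k: "k < n + r0 n D i"
  and y: "y \<in> carrier (Aalg n D :: ('k::field) pel set ring)"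
  shows "rep n D (y \<otimes>\<^bsub>Aalg n D\<^esub> clsf n D (path_el i k)) (s, L) =
    (if s = i \<and> k \<le> L \<and> L < n + r0 n D i then rep n D y ((sig n ^^ k) i, L - k) else 0)"
proof -
  have "rep n D (y \<otimes>\<^bsub>Aalg n D\<^esub> clsf n D (path_el i k)) = tr n D (pmul n (rep n D y) (path_el i k))"
    using rep_mult4[OF n2 Dsub Dne y w_props(1)[OF i k]] by (simp add: w_props(2)[OF i k])
  then show ?thesis using bad_iff[OF n2 Dsub Dne i, of L]
    by (auto simp: tr_def pmul_path_right not_le)
qed

lemma yw_in: assumes i: "i \<in> {1..n}" and k: "k < n + r0 n D i"
  and y: "y \<in> (Pset n D ((sig n ^^ k) i) :: ('k::field) pel set set)"
  shows "y \<otimes>\<^bsub>Aalg n D\<^esub> clsf n D (path_el i k) \<in> Pset n D i \<inter> Jt n D k"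
proof -
  interpret A: ring "Aalg n D :: 'k pel set ring" by (rule A_ring4[OF n2 Dsub Dne])
  have yc: "y \<in> carrier (Aalg n D)" using y by (simp add: Pset_def)
  have c: "y \<otimes>\<^bsub>Aalg n D\<^esub> clsf n D (path_el i k) \<in> carrier (Aalg n D)"
    by (rule A.m_closed[OF yc w_props(1)[OF i k]])
  show ?thesis using c by (auto simp: Pset_def Jt_def rep_yw[OF i k yc])
qed

lemma yw_zero: assumes i: "i \<in> {1..n}" and k: "k < n + r0 n D i"
  and y: "y \<in> (Pset n D ((sig n ^^ k) i) :: ('k::field) pel set set)"
  shows "y \<otimes>\<^bsub>Aalg n D\<^esub> clsf n D (path_el i k) = \<zero>\<^bsub>Aalg n D\<^esub> \<longleftrightarrow> y \<in> Jt n D (n + r0 n D i - k)"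
proof -
  interpret A: ring "Aalg n D :: 'k pel set ring" by (rule A_ring4[OF n2 Dsub Dne])
  have yc: "y \<in> carrier (Aalg n D)" using y by (simp add: Pset_def)
  have c: "y \<otimes>\<^bsub>Aalg n D\<^esub> clsf n D (path_el i k) \<in> carrier (Aalg n D)"
    by (rule A.m_closed[OF yc w_props(1)[OF i k]])
  have yj: "rep n D y (s, M) = 0" if "s \<noteq> (sig n ^^ k) i" for s M using y that by (simp add: Pset_def)
  have "y \<otimes>\<^bsub>Aalg n D\<^esub> clsf n D (path_el i k) = \<zero>\<^bsub>Aalg n D\<^esub> \<longleftrightarrow>
        (\<forall>L. k \<le> L \<and> L < n + r0 n D i \<longrightarrow> rep n D y ((sig n ^^ k) i, L - k) = 0)"
    unfolding rep_eq_zero4[OF n2 Dsub Dne c] by (auto simp: rep_yw[OF i k yc])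
  also have "\<dots> \<longleftrightarrow> (\<forall>M. M < n + r0 n D i - k \<longrightarrow> rep n D y ((sig n ^^ k) i, M) = 0)"
  proof
    assume a: "\<forall>L. k \<le> L \<and> L < n + r0 n D i \<longrightarrow> rep n D y ((sig n ^^ k) i, L - k) = 0"
    show "\<forall>M. M < n + r0 n D i - k \<longrightarrow> rep n D y ((sig n ^^ k) i, M) = 0"
    proof (intro allI impI)
      fix M assume "M < n + r0 n D i - k"
      then show "rep n D y ((sig n ^^ k) i, M) = 0" using a[rule_format, of "M + k"] by simp
    qed
  next
    assume a: "\<forall>M. M < n + r0 n D i - k \<longrightarrow> rep n D y ((sig n ^^ k) i, M) = 0"
    show "\<forall>L. k \<le> L \<and> L < n + r0 n D i \<longrightarrow> rep n D y ((sig n ^^ k) i, L - k) = 0"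
      using a by auto
  qed
  also have "\<dots> \<longleftrightarrow> y \<in> Jt n D (n + r0 n D i - k)"
    using yc yj by (auto simp: Jt_def) (metis)
  finally show ?thesis .
qed

lemma yw_onto: assumes i: "i \<in> {1..n}" and k: "k < n + r0 n D i"
  and x: "x \<in> (Pset n D i \<inter> Jt n D k :: ('k::field) pel set set)"
  shows "\<exists>y \<in> Pset n D ((sig n ^^ k) i). y \<otimes>\<^bsub>Aalg n D\<^esub> clsf n D (path_el i k) = x"
proof -
  define j where "j = (sig n ^^ k) i"
  have jn: "j \<in> {1..n}" unfolding j_def by (rule sig_pow_in[OF n1z i])
  have xc: "x \<in> carrier (Aalg n D)" using x by (simp add: Pset_def)
  define h where "h = rep n D x"
  have hp: "h \<in> pcar n" unfolding h_def by (rule rep_props4(1)[OF n2 Dsub Dne xc])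
  have hi: "h (s, L) = 0" if "s \<noteq> i" for s L using x that by (simp add: h_def Pset_def)
  have hk: "h (s, L) = 0" if "L < k" for s L using x that by (simp add: h_def Jt_def)
  define g where "g = (\<lambda>(s, M). if s = j then h (i, M + k) else 0)"
  have gp: "g \<in> pcar n"
  proof -
    obtain B where B: "\<forall>s L. h (s, L) \<noteq> 0 \<longrightarrow> s \<in> {1..n} \<and> L \<le> B" using hp by (auto simp: pcar_def)
    have "\<forall>s M. g (s, M) \<noteq> 0 \<longrightarrow> s \<in> {1..n} \<and> M \<le> B"
    proof (intro allI impI)
      fix s M assume "g (s, M) \<noteq> 0"
      then have "s = j" "h (i, M + k) \<noteq> 0" by (auto simp: g_def split: if_splits)
      then show "s \<in> {1..n} \<and> M \<le> B" using B jn by fastforce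
    qed
    then show ?thesis by (auto simp: pcar_def)
  qed
  define y where "y = (clsf n D g :: 'k pel set)"
  have yP: "y \<in> Pset n D j" unfolding y_def by (rule cls_Pset[OF n2 Dsub Dne gp]) (auto simp: g_def)
  have "pmul n g (path_el i k) = h"
  proof (rule ext, clarify)
    fix s L show "pmul n g (path_el i k) (s, L) = h (s, L)"
      by (auto simp: pmul_path_right g_def j_def hi hk not_le)
  qed
  then have "y \<otimes>\<^bsub>Aalg n D\<^esub> clsf n D (path_el i k) = clsf n D h"
    unfolding y_def using A_mult[OF n1z Dsub gp path_el_pcar[OF i]] by simp
  also have "\<dots> = x" unfolding h_def by (rule rep_props4(2)[OF n2 Dsub Dne xc])
  finally show ?thesis using yP unfolding j_def by blast
qed

end

lemma (in lmod) sm_minus_l: assumes "a \<in> carrier R" "x \<in> carrier M"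
  shows "smult M (\<ominus>\<^bsub>R\<^esub> a) x = \<ominus>\<^bsub>M\<^esub> (smult M a x)"
proof -
  interpret M: abelian_group M by (rule M_ab)
  interpret R: ring R by (rule R_ring)
  have "smult M (\<ominus>\<^bsub>R\<^esub> a) x \<oplus>\<^bsub>M\<^esub> smult M a x = \<zero>\<^bsub>M\<^esub>"
    using sm_ldistr[OF R.a_inv_closed[OF assms(1)] assms(1) assms(2)] sm_zero_l[OF assms(2)] assms
    by (simp add: R.l_neg)
  moreover have "smult M a x \<in> carrier M" by (rule sm_closed[OF assms])
  moreover have "smult M (\<ominus>\<^bsub>R\<^esub> a) x \<in> carrier M" by (rule sm_closed[OF R.a_inv_closed[OF assms(1)] assms(2)])
  ultimately have "\<ominus>\<^bsub>M\<^esub> (smult M a x) = smult M (\<ominus>\<^bsub>R\<^esub> a) x" by (rule M.minus_equality)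
  then show ?thesis by simp
qed

definition cmod :: "'a ring \<Rightarrow> 'a set \<Rightarrow> 'p \<Rightarrow> ('a, 'p \<Rightarrow> 'a) module" where
  "cmod A S u = \<lparr>carrier = (\<lambda>x. \<lambda>_. x) ` S, mult = (\<lambda>a b. a), one = (\<lambda>_. \<zero>\<^bsub>A\<^esub>),
     zero = (\<lambda>_. \<zero>\<^bsub>A\<^esub>), add = (\<lambda>a b. \<lambda>_. a u \<oplus>\<^bsub>A\<^esub> b u), smult = (\<lambda>r a. \<lambda>_. r \<otimes>\<^bsub>A\<^esub> a u)\<rparr>"

lemma cmod_simps: "carrier (cmod A S u) = (\<lambda>x. \<lambda>_. x) ` S" "zero (cmod A S u) = (\<lambda>_. \<zero>\<^bsub>A\<^esub>)"
  "add (cmod A S u) = (\<lambda>a b. \<lambda>_. a u \<oplus>\<^bsub>A\<^esub> b u)" "smult (cmod A S u) = (\<lambda>r a. \<lambda>_. r \<otimes>\<^bsub>A\<^esub> a u)"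
  by (simp_all add: cmod_def)

lemma cmod_carrierD: "\<phi> \<in> carrier (cmod A S u) \<Longrightarrow> \<phi> = (\<lambda>_. \<phi> u) \<and> \<phi> u \<in> S"
  by (auto simp: cmod_simps)

lemma cmod_carrierD': "\<phi> \<in> carrier (cmod A S u) \<Longrightarrow> (\<lambda>_. \<phi> u) = \<phi>"
  by (auto simp: cmod_simps)

lemma cmod_carrierI: "x \<in> S \<Longrightarrow> (\<lambda>_. x) \<in> carrier (cmod A S u)"
  by (auto simp: cmod_simps)

lemma cmod_left_module:
  assumes R: "ring A" and S: "S \<subseteq> carrier A" "\<zero>\<^bsub>A\<^esub> \<in> S" "\<And>x y. x \<in> S \<Longrightarrow> y \<in> S \<Longrightarrow> x \<oplus>\<^bsub>A\<^esub> y \<in> S"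
    "\<And>x. x \<in> S \<Longrightarrow> \<ominus>\<^bsub>A\<^esub> x \<in> S" "\<And>a x. a \<in> carrier A \<Longrightarrow> x \<in> S \<Longrightarrow> a \<otimes>\<^bsub>A\<^esub> x \<in> S"
  shows "left_module A (cmod A S u)"
proof -
  interpret A: ring A by (rule R)
  have c: "x \<in> carrier A" if "x \<in> S" for x using that S(1) by blast
  have ab: "abelian_group (cmod A S u)"
  proof (rule abelian_groupI)
    fix x y assume x: "x \<in> carrier (cmod A S u)" and y: "y \<in> carrier (cmod A S u)"
    have xu: "x u \<in> S" by (rule conjunct2[OF cmod_carrierD[OF x]])
    have yu: "y u \<in> S" by (rule conjunct2[OF cmod_carrierD[OF y]])
    have "(\<lambda>_. x u \<oplus>\<^bsub>A\<^esub> y u) \<in> carrier (cmod A S u)" by (rule cmod_carrierI[OF S(3)[OF xu yu]])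
    then show "x \<oplus>\<^bsub>cmod A S u\<^esub> y \<in> carrier (cmod A S u)" by (simp add: cmod_simps)
  next
    show "\<zero>\<^bsub>cmod A S u\<^esub> \<in> carrier (cmod A S u)" using cmod_carrierI[OF S(2)] by (simp add: cmod_simps)
  next
    fix x y z assume xyz: "x \<in> carrier (cmod A S u)" "y \<in> carrier (cmod A S u)" "z \<in> carrier (cmod A S u)"
    have u: "x u \<in> carrier A" "y u \<in> carrier A" "z u \<in> carrier A"
      by (rule c[OF conjunct2[OF cmod_carrierD[OF xyz(1)]]], rule c[OF conjunct2[OF cmod_carrierD[OF xyz(2)]]],
          rule c[OF conjunct2[OF cmod_carrierD[OF xyz(3)]]])
    show "x \<oplus>\<^bsub>cmod A S u\<^esub> y \<oplus>\<^bsub>cmod A S u\<^esub> z = x \<oplus>\<^bsub>cmod A S u\<^esub> (y \<oplus>\<^bsub>cmod A S u\<^esub> z)"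
      using u by (simp add: cmod_simps A.a_assoc)
  next
    fix x y assume xy: "x \<in> carrier (cmod A S u)" "y \<in> carrier (cmod A S u)"
    have u: "x u \<in> carrier A" "y u \<in> carrier A"
      by (rule c[OF conjunct2[OF cmod_carrierD[OF xy(1)]]], rule c[OF conjunct2[OF cmod_carrierD[OF xy(2)]]])
    show "x \<oplus>\<^bsub>cmod A S u\<^esub> y = y \<oplus>\<^bsub>cmod A S u\<^esub> x"
      using u by (simp add: cmod_simps A.a_comm)
  next
    fix x assume x: "x \<in> carrier (cmod A S u)"
    have xu: "x u \<in> carrier A" by (rule c[OF conjunct2[OF cmod_carrierD[OF x]]])
    have "\<zero>\<^bsub>cmod A S u\<^esub> \<oplus>\<^bsub>cmod A S u\<^esub> x = (\<lambda>_. x u)" using xu by (simp add: cmod_simps)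
    also have "\<dots> = x" by (rule cmod_carrierD'[OF x])
    finally show "\<zero>\<^bsub>cmod A S u\<^esub> \<oplus>\<^bsub>cmod A S u\<^esub> x = x" .
  next
    fix x assume x: "x \<in> carrier (cmod A S u)"
    have xu: "x u \<in> S" by (rule conjunct2[OF cmod_carrierD[OF x]])
    have "(\<lambda>_. \<ominus>\<^bsub>A\<^esub> x u) \<in> carrier (cmod A S u)" by (rule cmod_carrierI[OF S(4)[OF xu]])
    moreover have "(\<lambda>_. \<ominus>\<^bsub>A\<^esub> x u) \<oplus>\<^bsub>cmod A S u\<^esub> x = \<zero>\<^bsub>cmod A S u\<^esub>"
      using xu c by (simp add: cmod_simps A.l_neg)
    ultimately show "\<exists>y\<in>carrier (cmod A S u). y \<oplus>\<^bsub>cmod A S u\<^esub> x = \<zero>\<^bsub>cmod A S u\<^esub>" by blast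
  qed
  show ?thesis unfolding left_module_def
  proof (intro conjI ballI)
    show "ring A" by (rule R)
    show "abelian_group (cmod A S u)" by (rule ab)
  next
    fix a x assume a: "a \<in> carrier A" and x: "x \<in> carrier (cmod A S u)"
    have xu: "x u \<in> S" by (rule conjunct2[OF cmod_carrierD[OF x]])
    show "smult (cmod A S u) a x \<in> carrier (cmod A S u)"
      using cmod_carrierI[OF S(5)[OF a xu]] by (simp add: cmod_simps)
  next
    fix a b x assume a: "a \<in> carrier A" and b: "b \<in> carrier A" and x: "x \<in> carrier (cmod A S u)"
    have xu: "x u \<in> S" by (rule conjunct2[OF cmod_carrierD[OF x]])
    show "smult (cmod A S u) (a \<oplus>\<^bsub>A\<^esub> b) x = smult (cmod A S u) a x \<oplus>\<^bsub>cmod A S u\<^esub> smult (cmod A S u) b x"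
      using a b c[OF xu] by (simp add: cmod_simps A.l_distr)
    show "smult (cmod A S u) (a \<otimes>\<^bsub>A\<^esub> b) x = smult (cmod A S u) a (smult (cmod A S u) b x)"
      using a b c[OF xu] by (simp add: cmod_simps A.m_assoc)
  next
    fix a x y assume a: "a \<in> carrier A" and x: "x \<in> carrier (cmod A S u)" and y: "y \<in> carrier (cmod A S u)"
    have xu: "x u \<in> S" by (rule conjunct2[OF cmod_carrierD[OF x]])
    have yu: "y u \<in> S" by (rule conjunct2[OF cmod_carrierD[OF y]])
    show "smult (cmod A S u) a (x \<oplus>\<^bsub>cmod A S u\<^esub> y) = smult (cmod A S u) a x \<oplus>\<^bsub>cmod A S u\<^esub> smult (cmod A S u) a y"
      using a c[OF xu] c[OF yu] by (simp add: cmod_simps A.r_distr)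
  next
    fix x assume x: "x \<in> carrier (cmod A S u)"
    have xu: "x u \<in> S" by (rule conjunct2[OF cmod_carrierD[OF x]])
    have "smult (cmod A S u) \<one>\<^bsub>A\<^esub> x = (\<lambda>_. x u)" using c[OF xu] by (simp add: cmod_simps)
    also have "\<dots> = x" by (rule cmod_carrierD'[OF x])
    finally show "smult (cmod A S u) \<one>\<^bsub>A\<^esub> x = x" .
  qed
qed

lemma sub_abelian:
  assumes M: "abelian_group M" and K: "K \<subseteq> carrier M" "\<zero>\<^bsub>M\<^esub> \<in> K" "\<And>x y. x \<in> K \<Longrightarrow> y \<in> K \<Longrightarrow> x \<oplus>\<^bsub>M\<^esub> y \<in> K"
    "\<And>x. x \<in> K \<Longrightarrow> \<ominus>\<^bsub>M\<^esub> x \<in> K"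
  shows "abelian_group (M\<lparr>carrier := K\<rparr>)"
proof -
  interpret M: abelian_group M by (rule M)
  show ?thesis
  proof (rule abelian_groupI, simp_all)
    show "\<And>x y. x \<in> K \<Longrightarrow> y \<in> K \<Longrightarrow> x \<oplus>\<^bsub>M\<^esub> y \<in> K" by fact
    show "\<zero>\<^bsub>M\<^esub> \<in> K" by fact
    show "\<And>x y z. x \<in> K \<Longrightarrow> y \<in> K \<Longrightarrow> z \<in> K \<Longrightarrow> x \<oplus>\<^bsub>M\<^esub> y \<oplus>\<^bsub>M\<^esub> z = x \<oplus>\<^bsub>M\<^esub> (y \<oplus>\<^bsub>M\<^esub> z)"
    proof -
      fix x y z assume "x \<in> K" "y \<in> K" "z \<in> K"
      then have "x \<in> carrier M" "y \<in> carrier M" "z \<in> carrier M" using K(1) by (simp_all add: subsetD)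
      then show "x \<oplus>\<^bsub>M\<^esub> y \<oplus>\<^bsub>M\<^esub> z = x \<oplus>\<^bsub>M\<^esub> (y \<oplus>\<^bsub>M\<^esub> z)" by (rule M.a_assoc)
    qed
    show "\<And>x y. x \<in> K \<Longrightarrow> y \<in> K \<Longrightarrow> x \<oplus>\<^bsub>M\<^esub> y = y \<oplus>\<^bsub>M\<^esub> x"
    proof -
      fix x y assume "x \<in> K" "y \<in> K"
      then have "x \<in> carrier M" "y \<in> carrier M" using K(1) by (simp_all add: subsetD)
      then show "x \<oplus>\<^bsub>M\<^esub> y = y \<oplus>\<^bsub>M\<^esub> x" by (rule M.a_comm)
    qed
    show "\<And>x. x \<in> K \<Longrightarrow> \<zero>\<^bsub>M\<^esub> \<oplus>\<^bsub>M\<^esub> x = x"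
    proof -
      fix x assume "x \<in> K"
      then have "x \<in> carrier M" using K(1) by (simp add: subsetD)
      then show "\<zero>\<^bsub>M\<^esub> \<oplus>\<^bsub>M\<^esub> x = x" by simp
    qed
    show "\<And>x. x \<in> K \<Longrightarrow> \<exists>y\<in>K. y \<oplus>\<^bsub>M\<^esub> x = \<zero>\<^bsub>M\<^esub>"
    proof -
      fix x assume x: "x \<in> K"
      then have "x \<in> carrier M" using K(1) by (simp add: subsetD)
      then have "\<ominus>\<^bsub>M\<^esub> x \<oplus>\<^bsub>M\<^esub> x = \<zero>\<^bsub>M\<^esub>" by (rule M.l_neg)
      then show "\<exists>y\<in>K. y \<oplus>\<^bsub>M\<^esub> x = \<zero>\<^bsub>M\<^esub>" using K(4)[OF x] by blast
    qed
  qed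
qed

lemma quot_zero_iff:
  assumes X: "abelian_group X" and N: "N \<subseteq> carrier X" "\<zero>\<^bsub>X\<^esub> \<in> N"
    "\<And>x y. x \<in> N \<Longrightarrow> y \<in> N \<Longrightarrow> x \<oplus>\<^bsub>X\<^esub> y \<in> N" "\<And>x. x \<in> N \<Longrightarrow> \<ominus>\<^bsub>X\<^esub> x \<in> N"
    and x: "x \<in> carrier X"
  shows "N +>\<^bsub>X\<^esub> x = N \<longleftrightarrow> x \<in> N"
proof
  interpret X: abelian_group X by (rule X)
  assume e: "N +>\<^bsub>X\<^esub> x = N"
  have "x = \<zero>\<^bsub>X\<^esub> \<oplus>\<^bsub>X\<^esub> x" using x by simp
  then have "x \<in> N +>\<^bsub>X\<^esub> x" unfolding a_r_coset_eq using N(2) by blast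
  then show "x \<in> N" using e by simp
next
  interpret X: abelian_group X by (rule X)
  assume xN: "x \<in> N"
  show "N +>\<^bsub>X\<^esub> x = N"
  proof
    show "N +>\<^bsub>X\<^esub> x \<subseteq> N" unfolding a_r_coset_eq using xN N(3) by blast
    show "N \<subseteq> N +>\<^bsub>X\<^esub> x"
    proof
      fix h assume h: "h \<in> N"
      have hc: "h \<in> carrier X" using h N(1) by blast
      have "h = (h \<oplus>\<^bsub>X\<^esub> \<ominus>\<^bsub>X\<^esub> x) \<oplus>\<^bsub>X\<^esub> x" using hc x by (simp add: X.a_assoc X.l_neg)
      moreover have "h \<oplus>\<^bsub>X\<^esub> \<ominus>\<^bsub>X\<^esub> x \<in> N" using N(3)[OF h N(4)[OF xN]] .
      ultimately show "h \<in> N +>\<^bsub>X\<^esub> x" unfolding a_r_coset_eq by blast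
    qed
  qed
qed

lemma quot_smult:
  assumes X: "abelian_group X" and N: "N \<subseteq> carrier X" "\<zero>\<^bsub>X\<^esub> \<in> N"
    "\<And>x y. x \<in> N \<Longrightarrow> y \<in> N \<Longrightarrow> x \<oplus>\<^bsub>X\<^esub> y \<in> N"
    and Nsm: "\<And>h. h \<in> N \<Longrightarrow> smult X a h \<in> N"
    and smc: "\<And>x. x \<in> carrier X \<Longrightarrow> smult X a x \<in> carrier X"
    and smd: "\<And>x x'. x \<in> carrier X \<Longrightarrow> x' \<in> carrier X \<Longrightarrow> smult X a (x \<oplus>\<^bsub>X\<^esub> x') = smult X a x \<oplus>\<^bsub>X\<^esub> smult X a x'"
    and x: "x \<in> carrier X"
  shows "smult (quot_mod X N) a (N +>\<^bsub>X\<^esub> x) = N +>\<^bsub>X\<^esub> (smult X a x)"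
proof -
  interpret X: abelian_group X by (rule X)
  have "set_add X N ((\<lambda>u. smult X a u) ` (N +>\<^bsub>X\<^esub> x)) = N +>\<^bsub>X\<^esub> (smult X a x)"
  proof
    show "set_add X N ((\<lambda>u. smult X a u) ` (N +>\<^bsub>X\<^esub> x)) \<subseteq> N +>\<^bsub>X\<^esub> (smult X a x)"
    proof
      fix v assume "v \<in> set_add X N ((\<lambda>u. smult X a u) ` (N +>\<^bsub>X\<^esub> x))"
      then obtain h h' where hh: "h \<in> N" "h' \<in> N" "v = h \<oplus>\<^bsub>X\<^esub> smult X a (h' \<oplus>\<^bsub>X\<^esub> x)"
        unfolding set_add_eq a_r_coset_eq by blast
      have c: "h \<in> carrier X" "h' \<in> carrier X" using hh N(1) by auto
      have "v = (h \<oplus>\<^bsub>X\<^esub> smult X a h') \<oplus>\<^bsub>X\<^esub> smult X a x"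
        using hh c x by (simp add: smd smc X.a_assoc)
      moreover have "h \<oplus>\<^bsub>X\<^esub> smult X a h' \<in> N" using N(3)[OF hh(1) Nsm[OF hh(2)]] .
      ultimately show "v \<in> N +>\<^bsub>X\<^esub> (smult X a x)" unfolding a_r_coset_eq by blast
    qed
    show "N +>\<^bsub>X\<^esub> (smult X a x) \<subseteq> set_add X N ((\<lambda>u. smult X a u) ` (N +>\<^bsub>X\<^esub> x))"
    proof
      fix v assume "v \<in> N +>\<^bsub>X\<^esub> (smult X a x)"
      then obtain h where h: "h \<in> N" "v = h \<oplus>\<^bsub>X\<^esub> smult X a x" unfolding a_r_coset_eq by blast
      have "x = \<zero>\<^bsub>X\<^esub> \<oplus>\<^bsub>X\<^esub> x" using x by simp
      then have "x \<in> N +>\<^bsub>X\<^esub> x" unfolding a_r_coset_eq using N(2) by blast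
      then have "smult X a x \<in> (\<lambda>u. smult X a u) ` (N +>\<^bsub>X\<^esub> x)" by blast
      then show "v \<in> set_add X N ((\<lambda>u. smult X a u) ` (N +>\<^bsub>X\<^esub> x))"
        unfolding set_add_eq using h by blast
    qed
  qed
  then show ?thesis by (simp add: quot_mod_def)
qed

context
  fixes n :: nat and D :: "nat set"
  assumes n2: "2 \<le> n" and Dsub: "D \<subseteq> {1..n}" and Dne: "D \<noteq> {}"
begin

lemmas n1w = n1z[OF n2 Dsub Dne]
lemmas A_ringw = A_ring4[OF n2 Dsub Dne]
lemmas Pset_carrierw = Pset_carrier4[OF n2 Dsub Dne]
lemmas Pset_zerow = Pset_zero4[OF n2 Dsub Dne]
lemmas Pset_addw = Pset_add4[OF n2 Dsub Dne]
lemmas Pset_minusw = Pset_minus4[OF n2 Dsub Dne]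
lemmas Pset_lmultw = Pset_lmult4[OF n2 Dsub Dne]
lemmas Pset_ew = Pset_e[OF n2 Dsub Dne]
lemmas e_Psetw = e_Pset[OF n2 Dsub Dne]
lemmas Pmod_carrierw = Pmod_carrier4[OF n2 Dsub Dne]
lemmas Pmod_opsw = Pmod_ops[OF n2 Dsub Dne]
lemmas Pmod_minusw = Pmod_minus[OF n2 Dsub Dne]
lemmas Pmod_abelianw = Pmod_abelian[OF n2 Dsub Dne]
lemmas rad_pow_Pw = rad_pow_P[OF n2 Dsub Dne]
lemmas Jt_zerow = Jt_zero4[OF n2 Dsub Dne]
lemmas Jt_addw = Jt_add4[OF n2 Dsub Dne]
lemmas Jt_minusw = Jt_minus4[OF n2 Dsub Dne]
lemmas Jt_lmultw = Jt_lmult4[OF n2 Dsub Dne]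
lemmas Jt_monow = Jt_mono[OF n2 Dsub Dne]
lemmas Jt_pow_zerow = Jt_pow_zero[OF n2 Dsub Dne]
lemmas w_propsw = w_props[OF n2 Dsub Dne]
lemmas yw_inw = yw_in[OF n2 Dsub Dne]
lemmas yw_zerow = yw_zero[OF n2 Dsub Dne]
lemmas yw_ontow = yw_onto[OF n2 Dsub Dne]

lemma part4:
  fixes P :: "(('k::field) pel set, 'p) module" and p
  assumes i: "i \<in> {1..n}" and k0: "0 < k" and kl: "k < n + r0 n D i"
    and pc: "proj_cover (Aalg n D) P (Lmod n D i k) p"
  shows "mod_iso (Aalg n D) (sub_module P (mod_ker P (Lmod n D i k) p))
           (Lmod n D ((sig n ^^ k) i) (n + r0 n D i - k))"
proof -
  interpret A: ring "Aalg n D :: 'k pel set ring" by (rule A_ringw)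
  define Pi where "Pi = (Pmod n D i :: ('k pel set, 'k pel set) module)"
  define Nk where "Nk = (Pset n D i \<inter> Jt n D k :: 'k pel set set)"
  define Lk where "Lk = (Lmod n D i k :: ('k pel set, 'k pel set set) module)"
  define K where "K = mod_ker P Lk p"
  have Lk_eq: "Lk = quot_mod Pi Nk" unfolding Lk_def Lmod_def Pi_def Nk_def by (simp add: rad_pow_Pw[OF i])
  have proj: "projective (Aalg n D) P" and Ll: "left_module (Aalg n D) Lk" and ph: "mod_hom (Aalg n D) P Lk p"
    and onto: "p ` carrier P = carrier Lk" and sup: "superfluous (Aalg n D) P K"
    using pc unfolding proj_cover_def Lk_def K_def by blast+
  have Pl: "left_module (Aalg n D) P" using proj unfolding projective_def by blast
  interpret LP: lmod "Aalg n D" P by (rule lmod.intro[OF Pl])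
  interpret LL: lmod "Aalg n D" Lk by (rule lmod.intro[OF Ll])
  interpret PM: abelian_group P by (rule LP.M_ab)
  interpret LM: abelian_group Lk by (rule LL.M_ab)
  have Pc: "\<And>x. x \<in> Pset n D i \<Longrightarrow> x \<in> carrier (Aalg n D)" using Pset_carrierw by blast
  have Pi_ab: "abelian_group Pi" unfolding Pi_def by (rule Pmod_abelianw[OF i])
  have Pi_car: "carrier Pi = Pset n D i" unfolding Pi_def by (rule Pmod_carrierw[OF i])
  have Pi_add: "add Pi = add (Aalg n D)" and Pi_zero: "zero Pi = zero (Aalg n D)"
    and Pi_sm: "smult Pi = mult (Aalg n D)" unfolding Pi_def by (rule Pmod_opsw)+
  have Nk_sub: "Nk \<subseteq> carrier Pi" unfolding Nk_def Pi_car by blast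
  have Nk0: "\<zero>\<^bsub>Pi\<^esub> \<in> Nk" unfolding Nk_def Pi_zero using Pset_zerow Jt_zerow by blast
  have Nk_add: "\<And>x y. x \<in> Nk \<Longrightarrow> y \<in> Nk \<Longrightarrow> x \<oplus>\<^bsub>Pi\<^esub> y \<in> Nk"
    unfolding Nk_def Pi_add using Pset_addw Jt_addw by blast
  have Nk_neg: "\<And>x. x \<in> Nk \<Longrightarrow> \<ominus>\<^bsub>Pi\<^esub> x \<in> Nk"
  proof -
    fix x assume x: "x \<in> Nk"
    then have "\<ominus>\<^bsub>Pi\<^esub> x = \<ominus>\<^bsub>Aalg n D\<^esub> x" unfolding Pi_def Nk_def using Pmod_minusw[OF i] by blast
    moreover have "\<ominus>\<^bsub>Aalg n D\<^esub> x \<in> Nk" using x unfolding Nk_def by (auto intro: Pset_minusw Jt_minusw)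
    ultimately show "\<ominus>\<^bsub>Pi\<^esub> x \<in> Nk" by simp
  qed
  have Nk_sm: "\<And>a h. a \<in> carrier (Aalg n D) \<Longrightarrow> h \<in> Nk \<Longrightarrow> a \<otimes>\<^bsub>Aalg n D\<^esub> h \<in> Nk"
    unfolding Nk_def using Pset_lmultw Jt_lmultw by blast
  define \<pi> where "\<pi> = (\<lambda>x. Nk +>\<^bsub>Pi\<^esub> x)"
  have Lk_car: "carrier Lk = \<pi> ` Pset n D i"
    unfolding Lk_eq \<pi>_def by (auto simp: quot_mod_def a_rcosets_eq Pi_car)
  have Lk_zero: "\<zero>\<^bsub>Lk\<^esub> = Nk" unfolding Lk_eq by (simp add: quot_mod_def)
  have Lk_sm: "smult Lk a (\<pi> x) = \<pi> (a \<otimes>\<^bsub>Aalg n D\<^esub> x)" if a: "a \<in> carrier (Aalg n D)" and x: "x \<in> Pset n D i" for a x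
  proof -
    have "smult (quot_mod Pi Nk) a (Nk +>\<^bsub>Pi\<^esub> x) = Nk +>\<^bsub>Pi\<^esub> (smult Pi a x)"
    proof (rule quot_smult[OF Pi_ab Nk_sub Nk0 Nk_add])
      show "\<And>h. h \<in> Nk \<Longrightarrow> smult Pi a h \<in> Nk" unfolding Pi_sm using Nk_sm[OF a] .
      show "\<And>x. x \<in> carrier Pi \<Longrightarrow> smult Pi a x \<in> carrier Pi" unfolding Pi_sm Pi_car using Pset_lmultw[OF a] .
      show "\<And>x x'. x \<in> carrier Pi \<Longrightarrow> x' \<in> carrier Pi \<Longrightarrow> smult Pi a (x \<oplus>\<^bsub>Pi\<^esub> x') = smult Pi a x \<oplus>\<^bsub>Pi\<^esub> smult Pi a x'"
      proof -
        fix x x' assume "x \<in> carrier Pi" "x' \<in> carrier Pi"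
        then have "x \<in> carrier (Aalg n D)" "x' \<in> carrier (Aalg n D)" unfolding Pi_car using Pc by blast+
        then show "smult Pi a (x \<oplus>\<^bsub>Pi\<^esub> x') = smult Pi a x \<oplus>\<^bsub>Pi\<^esub> smult Pi a x'"
          unfolding Pi_sm Pi_add by (rule A.r_distr[OF _ _ a])
      qed
      show "x \<in> carrier Pi" unfolding Pi_car by (rule x)
    qed
    then show ?thesis unfolding Lk_eq \<pi>_def Pi_sm by simp
  qed
  have pi_zero: "\<pi> x = Nk \<longleftrightarrow> x \<in> Nk" if x: "x \<in> Pset n D i" for x
    unfolding \<pi>_def
  proof (rule quot_zero_iff[OF Pi_ab Nk_sub Nk0 Nk_add Nk_neg])
    show "x \<in> carrier Pi" unfolding Pi_car by (rule x)
  qed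
  define ei where "ei = (idem n D i :: 'k pel set)"
  have eiP: "ei \<in> Pset n D i" unfolding ei_def by (rule e_Psetw[OF i])
  have "\<pi> ei \<in> p ` carrier P" unfolding onto Lk_car using eiP by blast
  then obtain y where y: "y \<in> carrier P" "p y = \<pi> ei" by blast
  define f where "f = (\<lambda>x. smult P x y)"
  have F1: "\<And>x. x \<in> Pset n D i \<Longrightarrow> f x \<in> carrier P" unfolding f_def using LP.sm_closed[OF _ y(1)] Pc by blast
  have F2: "\<And>x x'. x \<in> Pset n D i \<Longrightarrow> x' \<in> Pset n D i \<Longrightarrow> f (x \<oplus>\<^bsub>Aalg n D\<^esub> x') = f x \<oplus>\<^bsub>P\<^esub> f x'"
    unfolding f_def using LP.sm_ldistr[OF _ _ y(1)] Pc by blast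
  have F3: "\<And>a x. a \<in> carrier (Aalg n D) \<Longrightarrow> x \<in> Pset n D i \<Longrightarrow> f (a \<otimes>\<^bsub>Aalg n D\<^esub> x) = smult P a (f x)"
    unfolding f_def using LP.sm_assoc[OF _ _ y(1)] Pc by blast
  have ph_add: "\<And>u v. u \<in> carrier P \<Longrightarrow> v \<in> carrier P \<Longrightarrow> p (u \<oplus>\<^bsub>P\<^esub> v) = p u \<oplus>\<^bsub>Lk\<^esub> p v"
    and ph_sm: "\<And>a u. a \<in> carrier (Aalg n D) \<Longrightarrow> u \<in> carrier P \<Longrightarrow> p (smult P a u) = smult Lk a (p u)"
    and ph_car: "\<And>u. u \<in> carrier P \<Longrightarrow> p u \<in> carrier Lk"
    using ph unfolding mod_hom_def by (blast, blast, blast)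
  have F4: "p (f x) = \<pi> x" if x: "x \<in> Pset n D i" for x
  proof -
    have "p (f x) = smult Lk x (p y)" unfolding f_def by (rule ph_sm[OF Pc[OF x] y(1)])
    also have "\<dots> = \<pi> (x \<otimes>\<^bsub>Aalg n D\<^esub> ei)" unfolding y(2) by (rule Lk_sm[OF Pc[OF x] eiP])
    also have "x \<otimes>\<^bsub>Aalg n D\<^esub> ei = x" unfolding ei_def by (rule Pset_ew[OF x i])
    finally show ?thesis .
  qed
  have F5: "f \<zero>\<^bsub>Aalg n D\<^esub> = \<zero>\<^bsub>P\<^esub>" unfolding f_def by (rule LP.sm_zero_l[OF y(1)])
  have F6: "\<And>x. x \<in> Pset n D i \<Longrightarrow> f (\<ominus>\<^bsub>Aalg n D\<^esub> x) = \<ominus>\<^bsub>P\<^esub> f x"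
    unfolding f_def using LP.sm_minus_l[OF _ y(1)] Pc by blast
  have p0: "p \<zero>\<^bsub>P\<^esub> = \<zero>\<^bsub>Lk\<^esub>"
  proof -
    have "p \<zero>\<^bsub>P\<^esub> \<oplus>\<^bsub>Lk\<^esub> p \<zero>\<^bsub>P\<^esub> = p \<zero>\<^bsub>P\<^esub>" using ph_add[OF PM.zero_closed PM.zero_closed] by simp
    then show ?thesis using LM.idem_zero ph_car[OF PM.zero_closed] by blast
  qed
  have pneg: "p (\<ominus>\<^bsub>P\<^esub> u) = \<ominus>\<^bsub>Lk\<^esub> p u" if u: "u \<in> carrier P" for u
  proof -
    have "p (\<ominus>\<^bsub>P\<^esub> u) \<oplus>\<^bsub>Lk\<^esub> p u = \<zero>\<^bsub>Lk\<^esub>"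
      using ph_add[OF PM.a_inv_closed[OF u] u] p0 u by (simp add: PM.l_neg)
    moreover have "p u \<in> carrier Lk" by (rule ph_car[OF u])
    moreover have "p (\<ominus>\<^bsub>P\<^esub> u) \<in> carrier Lk" by (rule ph_car[OF PM.a_inv_closed[OF u]])
    ultimately have "\<ominus>\<^bsub>Lk\<^esub> p u = p (\<ominus>\<^bsub>P\<^esub> u)" by (rule LM.minus_equality)
    then show ?thesis by simp
  qed
  have Kdef: "K = {z \<in> carrier P. p z = Nk}" unfolding K_def mod_ker_def Lk_zero ..
  have F7: "f ` Pset n D i = carrier P"
  proof -
    have sm: "submod (Aalg n D) P (f ` Pset n D i)"
      unfolding submod_def
    proof (intro conjI ballI)
      show "f ` Pset n D i \<subseteq> carrier P" using F1 by blast
      show "additive_subgroup (f ` Pset n D i) P"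
      proof (rule add_subgroupI[OF PM.abelian_group_axioms])
        show "f ` Pset n D i \<subseteq> carrier P" using F1 by blast
        show "\<zero>\<^bsub>P\<^esub> \<in> f ` Pset n D i" using F5 Pset_zerow by (metis image_eqI)
        show "u \<oplus>\<^bsub>P\<^esub> v \<in> f ` Pset n D i" if uv: "u \<in> f ` Pset n D i" "v \<in> f ` Pset n D i" for u v
        proof -
          obtain x x' where "x \<in> Pset n D i" "x' \<in> Pset n D i" "u = f x" "v = f x'" using uv by blast
          then show ?thesis using F2 Pset_addw by (metis image_eqI)
        qed
        show "\<ominus>\<^bsub>P\<^esub> u \<in> f ` Pset n D i" if uu: "u \<in> f ` Pset n D i" for u
        proof -
          obtain x where "x \<in> Pset n D i" "u = f x" using uu by blast
          then show ?thesis using F6 Pset_minusw by (metis image_eqI)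
        qed
      qed
      fix a :: "'k pel set" and u assume a: "a \<in> carrier (Aalg n D)" and u: "u \<in> f ` Pset n D i"
      obtain x where x: "x \<in> Pset n D i" "u = f x" using u by blast
      have "smult P a u = f (a \<otimes>\<^bsub>Aalg n D\<^esub> x)" using F3[OF a x(1)] x(2) by simp
      then show "smult P a u \<in> f ` Pset n D i" using Pset_lmultw[OF a x(1)] by blast
    qed
    have "set_add P (f ` Pset n D i) K = carrier P"
    proof
      show "set_add P (f ` Pset n D i) K \<subseteq> carrier P"
      proof
        fix v assume "v \<in> set_add P (f ` Pset n D i) K"
        then obtain a b where ab: "a \<in> f ` Pset n D i" "b \<in> K" "v = a \<oplus>\<^bsub>P\<^esub> b" unfolding set_add_eq by blast
        have "a \<in> carrier P" using ab(1) F1 by blast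
        moreover have "b \<in> carrier P" using ab(2) Kdef by blast
        ultimately show "v \<in> carrier P" using ab(3) by simp
      qed
      show "carrier P \<subseteq> set_add P (f ` Pset n D i) K"
      proof
        fix z assume z: "z \<in> carrier P"
        have "p z \<in> \<pi> ` Pset n D i" using ph_car[OF z] Lk_car by simp
        then obtain x where x: "x \<in> Pset n D i" "p z = \<pi> x" by blast
        have fx: "f x \<in> carrier P" by (rule F1[OF x(1)])
        define b where "b = \<ominus>\<^bsub>P\<^esub> f x \<oplus>\<^bsub>P\<^esub> z"
        have bc: "b \<in> carrier P" unfolding b_def using fx z by simp
        have "p b = \<ominus>\<^bsub>Lk\<^esub> p (f x) \<oplus>\<^bsub>Lk\<^esub> p z"
          unfolding b_def using ph_add[OF PM.a_inv_closed[OF fx] z] pneg[OF fx] by simp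
        also have "\<dots> = \<zero>\<^bsub>Lk\<^esub>" unfolding F4[OF x(1)] x(2)[symmetric]
          using ph_car[OF z] by (simp add: LM.l_neg)
        finally have "b \<in> K" unfolding Kdef using bc Lk_zero by simp
        moreover have "z = f x \<oplus>\<^bsub>P\<^esub> b" unfolding b_def using fx z by (simp add: PM.r_neg1 PM.r_neg2)
        ultimately show "z \<in> set_add P (f ` Pset n D i) K" unfolding set_add_eq using x(1) by blast
      qed
    qed
    then show ?thesis using sup sm unfolding superfluous_def by blast
  qed
  text \<open>projectivity gives a section h\<close>
  define M' where "M' = (cmod (Aalg n D :: 'k pel set ring) (Pset n D i) (undefined :: 'p))"
  have M'l: "left_module (Aalg n D) M'" unfolding M'_def
    by (rule cmod_left_module[OF A.ring_axioms Pset_carrierw Pset_zerow Pset_addw Pset_minusw Pset_lmultw])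
  define g where "g = (\<lambda>\<phi> :: 'p \<Rightarrow> 'k pel set. f (\<phi> undefined))"
  have gh: "mod_hom (Aalg n D) M' P g"
    unfolding mod_hom_def
  proof (intro conjI ballI)
    show "g \<in> carrier M' \<rightarrow> carrier P"
    proof
      fix \<phi> assume ph0: "\<phi> \<in> carrier M'"
      have "\<phi> undefined \<in> Pset n D i" using ph0 unfolding M'_def by (rule conjunct2[OF cmod_carrierD])
      then show "g \<phi> \<in> carrier P" unfolding g_def by (rule F1)
    qed
  next
    fix \<phi> \<psi> assume ph1: "\<phi> \<in> carrier M'" and ps1: "\<psi> \<in> carrier M'"
    have "\<phi> undefined \<in> Pset n D i" using ph1 unfolding M'_def by (rule conjunct2[OF cmod_carrierD])
    moreover have "\<psi> undefined \<in> Pset n D i" using ps1 unfolding M'_def by (rule conjunct2[OF cmod_carrierD])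
    ultimately show "g (\<phi> \<oplus>\<^bsub>M'\<^esub> \<psi>) = g \<phi> \<oplus>\<^bsub>P\<^esub> g \<psi>"
      unfolding g_def M'_def cmod_simps using F2 by simp
  next
    fix a :: "'k pel set" and \<phi> assume a: "a \<in> carrier (Aalg n D)" and ph2: "\<phi> \<in> carrier M'"
    have "\<phi> undefined \<in> Pset n D i" using ph2 unfolding M'_def by (rule conjunct2[OF cmod_carrierD])
    then show "g (smult M' a \<phi>) = smult P a (g \<phi>)"
      unfolding g_def M'_def cmod_simps using F3[OF a] by simp
  qed
  have gonto: "g ` carrier M' = carrier P"
  proof
    show "g ` carrier M' \<subseteq> carrier P" using gh unfolding mod_hom_def by blast
    show "carrier P \<subseteq> g ` carrier M'"
    proof
      fix z assume "z \<in> carrier P"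
      then obtain x where x: "x \<in> Pset n D i" "z = f x" using F7 by blast
      have "(\<lambda>_. x) \<in> carrier M'" unfolding M'_def by (rule cmod_carrierI[OF x(1)])
      moreover have "g (\<lambda>_. x) = z" unfolding g_def x(2) by simp
      ultimately show "z \<in> g ` carrier M'" by (metis image_eqI)
    qed
  qed
  obtain h where hh: "mod_hom (Aalg n D) P M' h" and hg: "\<And>z. z \<in> carrier P \<Longrightarrow> g (h z) = z"
    using proj M'l gh gonto unfolding projective_def by blast
  define h' where "h' = (\<lambda>z. h z undefined)"
  have hcar: "\<And>z. z \<in> carrier P \<Longrightarrow> h z \<in> carrier M'" using hh unfolding mod_hom_def by blast
  have H1: "h' z \<in> Pset n D i" if "z \<in> carrier P" for z
    unfolding h'_def using hcar[OF that] unfolding M'_def by (rule conjunct2[OF cmod_carrierD])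
  have H2: "f (h' z) = z" if "z \<in> carrier P" for z using hg[OF that] unfolding g_def h'_def .
  have H3: "h' (u \<oplus>\<^bsub>P\<^esub> v) = h' u \<oplus>\<^bsub>Aalg n D\<^esub> h' v" if "u \<in> carrier P" "v \<in> carrier P" for u v
  proof -
    have "h (u \<oplus>\<^bsub>P\<^esub> v) = h u \<oplus>\<^bsub>M'\<^esub> h v" using hh that unfolding mod_hom_def by blast
    then show ?thesis unfolding h'_def M'_def cmod_simps by simp
  qed
  have H4: "h' (smult P a u) = a \<otimes>\<^bsub>Aalg n D\<^esub> h' u" if "a \<in> carrier (Aalg n D)" "u \<in> carrier P" for a u
  proof -
    have "h (smult P a u) = smult M' a (h u)" using hh that unfolding mod_hom_def by blast
    then show ?thesis unfolding h'_def M'_def cmod_simps by simp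
  qed
  have H5: "h' \<zero>\<^bsub>P\<^esub> = \<zero>\<^bsub>Aalg n D\<^esub>"
  proof -
    have "h' \<zero>\<^bsub>P\<^esub> \<oplus>\<^bsub>Aalg n D\<^esub> h' \<zero>\<^bsub>P\<^esub> = h' \<zero>\<^bsub>P\<^esub>" using H3[OF PM.zero_closed PM.zero_closed] by simp
    then show ?thesis using A.idem_zero Pc[OF H1[OF PM.zero_closed]] by blast
  qed
  define t where "t = h' (f ei)"
  have tP: "t \<in> Pset n D i" unfolding t_def by (rule H1[OF F1[OF eiP]])
  have E: "h' (f x) = x \<otimes>\<^bsub>Aalg n D\<^esub> t" if x: "x \<in> Pset n D i" for x
  proof -
    have "f x = f (x \<otimes>\<^bsub>Aalg n D\<^esub> ei)" unfolding ei_def using Pset_ew[OF x i] by simp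
    also have "\<dots> = smult P x (f ei)" by (rule F3[OF Pc[OF x] eiP])
    finally have "h' (f x) = h' (smult P x (f ei))" by simp
    also have "\<dots> = x \<otimes>\<^bsub>Aalg n D\<^esub> t" unfolding t_def by (rule H4[OF Pc[OF x] F1[OF eiP]])
    finally show ?thesis .
  qed
  define j where "j = ei \<oplus>\<^bsub>Aalg n D\<^esub> \<ominus>\<^bsub>Aalg n D\<^esub> t"
  have jP: "j \<in> Pset n D i" unfolding j_def by (rule Pset_addw[OF eiP Pset_minusw[OF tP]])
  have eic: "ei \<in> carrier (Aalg n D)" and tc: "t \<in> carrier (Aalg n D)" and jc: "j \<in> carrier (Aalg n D)"
    using Pc eiP tP jP by blast+
  have jt: "j \<oplus>\<^bsub>Aalg n D\<^esub> t = ei" unfolding j_def using eic tc by (simp add: A.a_assoc A.l_neg)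
  have fj: "f j = \<zero>\<^bsub>P\<^esub>"
  proof -
    have "f j \<oplus>\<^bsub>P\<^esub> f t = f ei" using F2[OF jP tP] jt by simp
    moreover have "f t = f ei" unfolding t_def by (rule H2[OF F1[OF eiP]])
    ultimately have "f j \<oplus>\<^bsub>P\<^esub> f ei = f ei" by simp
    then show ?thesis using PM.cancel_zero F1[OF jP] F1[OF eiP] by blast
  qed
  have "\<pi> j = Nk" using F4[OF jP] fj p0 Lk_zero by simp
  then have "j \<in> Nk" using pi_zero[OF jP] by simp
  then have jJ: "j \<in> Jt n D 1" unfolding Nk_def using Jt_monow[of 1 k] k0 by auto
  have "j \<otimes>\<^bsub>Aalg n D\<^esub> t = \<zero>\<^bsub>Aalg n D\<^esub>" using E[OF jP] fj H5 by simp
  moreover have "t = ei \<oplus>\<^bsub>Aalg n D\<^esub> \<ominus>\<^bsub>Aalg n D\<^esub> j"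
    unfolding j_def using eic tc by (simp add: A.minus_add A.a_assoc[symmetric] A.r_neg)
  ultimately have "j \<otimes>\<^bsub>Aalg n D\<^esub> (ei \<oplus>\<^bsub>Aalg n D\<^esub> \<ominus>\<^bsub>Aalg n D\<^esub> j) = \<zero>\<^bsub>Aalg n D\<^esub>" by simp
  then have "j \<oplus>\<^bsub>Aalg n D\<^esub> \<ominus>\<^bsub>Aalg n D\<^esub> (j \<otimes>\<^bsub>Aalg n D\<^esub> j) = \<zero>\<^bsub>Aalg n D\<^esub>"
    using jc eic Pset_ew[OF jP i] unfolding ei_def by (simp add: A.r_distr A.r_minus)
  then have jj: "j \<otimes>\<^bsub>Aalg n D\<^esub> j = j"
    using jc by (metis A.add.inv_solve_right A.l_zero A.m_closed A.zero_closed)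
  have jpow: "j [^]\<^bsub>Aalg n D\<^esub> (Suc m) = j" for m
  proof (induct m)
    case 0 then show ?case using jc by simp
  next
    case (Suc m) then show ?case using jc jj by (simp add: A.nat_pow_Suc)
  qed
  have "j [^]\<^bsub>Aalg n D\<^esub> (2 * n - 1) = \<zero>\<^bsub>Aalg n D\<^esub>" by (rule Jt_pow_zerow[OF jJ])
  moreover have "2 * n - 1 = Suc (2 * n - 2)" using n2 by simp
  ultimately have j0: "j = \<zero>\<^bsub>Aalg n D\<^esub>" using jpow by metis
  have t_ei: "t = ei" using \<open>t = ei \<oplus>\<^bsub>Aalg n D\<^esub> \<ominus>\<^bsub>Aalg n D\<^esub> j\<close> j0 eic by simp
  have hf: "h' (f x) = x" if x: "x \<in> Pset n D i" for x
    using E[OF x] t_ei Pset_ew[OF x i] unfolding ei_def by simp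
  have finj: "f x = f x' \<Longrightarrow> x \<in> Pset n D i \<Longrightarrow> x' \<in> Pset n D i \<Longrightarrow> x = x'" for x x'
    using hf by metis
  have f0iff: "f x = \<zero>\<^bsub>P\<^esub> \<longleftrightarrow> x = \<zero>\<^bsub>Aalg n D\<^esub>" if x: "x \<in> Pset n D i" for x
    using finj[OF _ x Pset_zerow] F5 by metis
  have K_eq: "K = f ` Nk"
  proof
    show "K \<subseteq> f ` Nk"
    proof
      fix z assume z: "z \<in> K"
      then have zc: "z \<in> carrier P" and pz: "p z = Nk" unfolding Kdef by blast+
      have "\<pi> (h' z) = Nk" using F4[OF H1[OF zc]] H2[OF zc] pz by simp
      then have "h' z \<in> Nk" using pi_zero[OF H1[OF zc]] by simp
      then show "z \<in> f ` Nk" using H2[OF zc] by (metis image_eqI)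
    qed
    show "f ` Nk \<subseteq> K"
    proof
      fix z assume "z \<in> f ` Nk"
      then obtain x where x: "x \<in> Nk" "z = f x" by blast
      have xP: "x \<in> Pset n D i" using x(1) unfolding Nk_def by blast
      have "p z = Nk" using F4[OF xP] pi_zero[OF xP] x by simp
      then show "z \<in> K" unfolding Kdef using F1[OF xP] x(2) by simp
    qed
  qed
  define m where "m = (sig n ^^ k) i"
  have mn: "m \<in> {1..n}" unfolding m_def by (rule sig_pow_in[OF n1w i])
  define w where "w = (clsf n D (path_el i k) :: 'k pel set)"
  have wc: "w \<in> carrier (Aalg n D)" unfolding w_def by (rule w_propsw(1)[OF i kl])
  define Y where "Y = sub_module P K"
  define X where "X = (Pmod n D m :: ('k pel set, 'k pel set) module)"
  define N where "N = (Pset n D m \<inter> Jt n D (n + r0 n D i - k) :: 'k pel set set)"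
  have NkP: "\<And>x. x \<in> Nk \<Longrightarrow> x \<in> Pset n D i" unfolding Nk_def by blast
  have Kc: "K \<subseteq> carrier P" unfolding Kdef by blast
  have Y_ab: "abelian_group Y" unfolding Y_def sub_module_def
  proof (rule sub_abelian[OF PM.abelian_group_axioms Kc])
    have "f \<zero>\<^bsub>Aalg n D\<^esub> \<in> f ` Nk" using Nk0 unfolding Pi_zero by blast
    then show "\<zero>\<^bsub>P\<^esub> \<in> K" unfolding K_eq F5 .
    show "x \<oplus>\<^bsub>P\<^esub> y \<in> K" if xy: "x \<in> K" "y \<in> K" for x y
    proof -
      obtain a b where "a \<in> Nk" "b \<in> Nk" "x = f a" "y = f b" using xy unfolding K_eq by blast
      then show ?thesis unfolding K_eq using F2[OF NkP NkP] Nk_add[unfolded Pi_add] by (metis image_eqI)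
    qed
    show "\<ominus>\<^bsub>P\<^esub> x \<in> K" if xK: "x \<in> K" for x
    proof -
      obtain a where a: "a \<in> Nk" "x = f a" using xK unfolding K_eq by blast
      have "\<ominus>\<^bsub>Aalg n D\<^esub> a \<in> Nk" using a(1) unfolding Nk_def using Pset_minusw Jt_minusw by blast
      then show ?thesis unfolding K_eq using F6[OF NkP[OF a(1)]] a(2) by (metis image_eqI)
    qed
  qed
  have Y_simps: "carrier Y = K" "add Y = add P" "zero Y = zero P" "smult Y = smult P"
    unfolding Y_def sub_module_def by simp_all
  have X_simps: "carrier X = Pset n D m" "add X = add (Aalg n D)" "zero X = zero (Aalg n D)" "smult X = mult (Aalg n D)"
    unfolding X_def using Pmod_carrierw[OF mn] Pmod_opsw by simp_all
  have Pmc: "\<And>x. x \<in> Pset n D m \<Longrightarrow> x \<in> carrier (Aalg n D)" using Pset_carrierw by blast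
  have ywN: "\<And>x. x \<in> Pset n D m \<Longrightarrow> x \<otimes>\<^bsub>Aalg n D\<^esub> w \<in> Nk"
    unfolding Nk_def w_def m_def using yw_inw[OF i kl] by blast
  have iso: "mod_iso (Aalg n D) Y (quot_mod X N)"
  proof (rule first_iso[where \<phi> = "\<lambda>x. f (x \<otimes>\<^bsub>Aalg n D\<^esub> w)"])
    show "abelian_group X" unfolding X_def by (rule Pmod_abelianw[OF mn])
    show "abelian_group Y" by (rule Y_ab)
    show "\<And>x. x \<in> carrier X \<Longrightarrow> f (x \<otimes>\<^bsub>Aalg n D\<^esub> w) \<in> carrier Y"
      unfolding X_simps Y_simps K_eq using ywN by blast
    show "(\<lambda>x. f (x \<otimes>\<^bsub>Aalg n D\<^esub> w)) ` carrier X = carrier Y"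
    proof
      show "(\<lambda>x. f (x \<otimes>\<^bsub>Aalg n D\<^esub> w)) ` carrier X \<subseteq> carrier Y"
        unfolding X_simps Y_simps K_eq using ywN by blast
      show "carrier Y \<subseteq> (\<lambda>x. f (x \<otimes>\<^bsub>Aalg n D\<^esub> w)) ` carrier X"
      proof
        fix z assume "z \<in> carrier Y"
        then obtain x where x: "x \<in> Nk" "z = f x" unfolding Y_simps K_eq by blast
        obtain y' where y': "y' \<in> Pset n D m" "y' \<otimes>\<^bsub>Aalg n D\<^esub> w = x"
          using yw_ontow[OF i kl x(1)[unfolded Nk_def]] unfolding m_def w_def by blast
        show "z \<in> (\<lambda>x. f (x \<otimes>\<^bsub>Aalg n D\<^esub> w)) ` carrier X"
          unfolding X_simps using y' x(2) by blast
      qed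
    qed
    show "\<And>x x'. x \<in> carrier X \<Longrightarrow> x' \<in> carrier X \<Longrightarrow>
      f ((x \<oplus>\<^bsub>X\<^esub> x') \<otimes>\<^bsub>Aalg n D\<^esub> w) = f (x \<otimes>\<^bsub>Aalg n D\<^esub> w) \<oplus>\<^bsub>Y\<^esub> f (x' \<otimes>\<^bsub>Aalg n D\<^esub> w)"
    proof -
      fix x x' assume "x \<in> carrier X" "x' \<in> carrier X"
      then have xx: "x \<in> Pset n D m" "x' \<in> Pset n D m" unfolding X_simps .
      have "(x \<oplus>\<^bsub>Aalg n D\<^esub> x') \<otimes>\<^bsub>Aalg n D\<^esub> w = x \<otimes>\<^bsub>Aalg n D\<^esub> w \<oplus>\<^bsub>Aalg n D\<^esub> x' \<otimes>\<^bsub>Aalg n D\<^esub> w"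
        using Pmc[OF xx(1)] Pmc[OF xx(2)] wc by (simp add: A.l_distr)
      then show "f ((x \<oplus>\<^bsub>X\<^esub> x') \<otimes>\<^bsub>Aalg n D\<^esub> w) = f (x \<otimes>\<^bsub>Aalg n D\<^esub> w) \<oplus>\<^bsub>Y\<^esub> f (x' \<otimes>\<^bsub>Aalg n D\<^esub> w)"
        unfolding X_simps Y_simps using F2[OF NkP[OF ywN[OF xx(1)]] NkP[OF ywN[OF xx(2)]]] by simp
    qed
    show "\<And>a x. a \<in> carrier (Aalg n D) \<Longrightarrow> x \<in> carrier X \<Longrightarrow> smult X a x \<in> carrier X"
      unfolding X_simps using Pset_lmultw by blast
    show "\<And>a x. a \<in> carrier (Aalg n D) \<Longrightarrow> x \<in> carrier X \<Longrightarrow>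
      f (smult X a x \<otimes>\<^bsub>Aalg n D\<^esub> w) = smult Y a (f (x \<otimes>\<^bsub>Aalg n D\<^esub> w))"
    proof -
      fix a x :: "'k pel set" assume a: "a \<in> carrier (Aalg n D)" and xX: "x \<in> carrier X"
      have x: "x \<in> Pset n D m" using xX unfolding X_simps by simp
      have "(a \<otimes>\<^bsub>Aalg n D\<^esub> x) \<otimes>\<^bsub>Aalg n D\<^esub> w = a \<otimes>\<^bsub>Aalg n D\<^esub> (x \<otimes>\<^bsub>Aalg n D\<^esub> w)"
        using a Pmc[OF x] wc by (simp add: A.m_assoc)
      then show "f (smult X a x \<otimes>\<^bsub>Aalg n D\<^esub> w) = smult Y a (f (x \<otimes>\<^bsub>Aalg n D\<^esub> w))"
        unfolding X_simps Y_simps using F3[OF a NkP[OF ywN[OF x]]] by simp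
    qed
    show "\<And>a x x'. a \<in> carrier (Aalg n D) \<Longrightarrow> x \<in> carrier X \<Longrightarrow> x' \<in> carrier X \<Longrightarrow>
      smult X a (x \<oplus>\<^bsub>X\<^esub> x') = smult X a x \<oplus>\<^bsub>X\<^esub> smult X a x'"
    proof -
      fix a x x' :: "'k pel set" assume a: "a \<in> carrier (Aalg n D)" and "x \<in> carrier X" "x' \<in> carrier X"
      then have "x \<in> carrier (Aalg n D)" "x' \<in> carrier (Aalg n D)" unfolding X_simps using Pmc by blast+
      then show "smult X a (x \<oplus>\<^bsub>X\<^esub> x') = smult X a x \<oplus>\<^bsub>X\<^esub> smult X a x'"
        unfolding X_simps by (rule A.r_distr[OF _ _ a])
    qed
    show "N = {x \<in> carrier X. f (x \<otimes>\<^bsub>Aalg n D\<^esub> w) = \<zero>\<^bsub>Y\<^esub>}"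
    proof -
      have "f (x \<otimes>\<^bsub>Aalg n D\<^esub> w) = \<zero>\<^bsub>P\<^esub> \<longleftrightarrow> x \<in> Jt n D (n + r0 n D i - k)" if x: "x \<in> Pset n D m" for x
        using f0iff[OF NkP[OF ywN[OF x]]] yw_zerow[OF i kl x[unfolded m_def]] unfolding w_def by simp
      then show ?thesis unfolding N_def X_simps Y_simps by blast
    qed
    show "\<And>a h. a \<in> carrier (Aalg n D) \<Longrightarrow> h \<in> N \<Longrightarrow> smult X a h \<in> N"
      unfolding X_simps N_def using Pset_lmultw Jt_lmultw by blast
  qed
  have "Lmod n D ((sig n ^^ k) i) (n + r0 n D i - k) = quot_mod X N"
    unfolding Lmod_def X_def N_def m_def by (simp only: rad_pow_Pw[OF mn[unfolded m_def]])
  then show ?thesis using iso unfolding Y_def K_def Lk_def by simp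
qed

end

theorem lemma4p9:
  fixes n :: nat and Delta :: "nat set" and i :: nat
  assumes "2 \<le> n" and "Delta \<subseteq> {1..n}" and "Delta \<noteq> {}" and "i \<in> {1..n}"
  shows
    "(\<forall>k (M :: (('k::field) pel set, 'm) module).
        left_module (Aalg n Delta) M \<and> fin_gen (Aalg n Delta) M \<and>
        indecomp (Aalg n Delta) M \<and> has_top n Delta i M \<and> loewy (Aalg n Delta) M = k
        \<longrightarrow> 0 < k \<and> k < 2 * n)
   \<and> loewy (Aalg n Delta) (Pmod n Delta i :: ('k pel set, 'k pel set) module)
        = n + (LEAST r. (sig n ^^ r) i \<in> Delta)
   \<and> n \<le> loewy (Aalg n Delta) (Pmod n Delta i :: ('k pel set, 'k pel set) module)
   \<and> loewy (Aalg n Delta) (Pmod n Delta i :: ('k pel set, 'k pel set) module) < 2 * n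
   \<and> (\<forall>k. n \<le> k \<and> k < loewy (Aalg n Delta) (Pmod n Delta i :: ('k pel set, 'k pel set) module)
        \<longrightarrow> loewy (Aalg n Delta) (Pmod n Delta ((sig n ^^ k) i) :: ('k pel set, 'k pel set) module)
            = loewy (Aalg n Delta) (Pmod n Delta i :: ('k pel set, 'k pel set) module) - (k - n))
   \<and> (\<forall>k (P :: ('k pel set, 'p) module) p.
        0 < k \<and> k < loewy (Aalg n Delta) (Pmod n Delta i :: ('k pel set, 'k pel set) module) \<and>
        proj_cover (Aalg n Delta) P (Lmod n Delta i k) p
        \<longrightarrow> mod_iso (Aalg n Delta) (sub_module P (mod_ker P (Lmod n Delta i k) p))
              (Lmod n Delta ((sig n ^^ k) i)
                 (loewy (Aalg n Delta) (Pmod n Delta i :: ('k pel set, 'k pel set) module) - k)))"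
proof -
  note n2 = assms(1) and Dsub = assms(2) and Dne = assms(3) and i = assms(4)
  have lP: "loewy (Aalg n Delta) (Pmod n Delta i :: ('k pel set, 'k pel set) module) = n + r0 n Delta i"
    by (rule loewy_P[OF n2 Dsub Dne i])
  have r0lt: "r0 n Delta i < n" by (rule r0_ex(2)[OF n2 Dsub Dne i])
  show ?thesis
  proof (intro conjI)
    show "\<forall>k (M :: ('k pel set, 'm) module). left_module (Aalg n Delta) M \<and> fin_gen (Aalg n Delta) M \<and>
        indecomp (Aalg n Delta) M \<and> has_top n Delta i M \<and> loewy (Aalg n Delta) M = k
        \<longrightarrow> 0 < k \<and> k < 2 * n"
    proof (intro allI impI)
    fix k and M :: "('k pel set, 'm) module"
    assume "left_module (Aalg n Delta) M \<and> fin_gen (Aalg n Delta) M \<and>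
        indecomp (Aalg n Delta) M \<and> has_top n Delta i M \<and> loewy (Aalg n Delta) M = k"
    then show "0 < k \<and> k < 2 * n" using part1[OF n2 Dsub Dne, of M] by blast
    qed
  next
    show "loewy (Aalg n Delta) (Pmod n Delta i :: ('k pel set, 'k pel set) module) = n + (LEAST r. (sig n ^^ r) i \<in> Delta)"
      using lP by (simp add: r0_def)
  next
    show "n \<le> loewy (Aalg n Delta) (Pmod n Delta i :: ('k pel set, 'k pel set) module)" using lP by simp
  next
    show "loewy (Aalg n Delta) (Pmod n Delta i :: ('k pel set, 'k pel set) module) < 2 * n" using lP r0lt by simp
  next
    show "\<forall>k. n \<le> k \<and> k < loewy (Aalg n Delta) (Pmod n Delta i :: ('k pel set, 'k pel set) module)
        \<longrightarrow> loewy (Aalg n Delta) (Pmod n Delta ((sig n ^^ k) i) :: ('k pel set, 'k pel set) module)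
            = loewy (Aalg n Delta) (Pmod n Delta i :: ('k pel set, 'k pel set) module) - (k - n)"
    proof (intro allI impI)
    fix k assume k: "n \<le> k \<and> k < loewy (Aalg n Delta) (Pmod n Delta i :: ('k pel set, 'k pel set) module)"
    have kn: "(sig n ^^ k) i \<in> {1..n}" by (rule sig_pow_in[OF _ i]) (use n2 in simp)
    show "loewy (Aalg n Delta) (Pmod n Delta ((sig n ^^ k) i) :: ('k pel set, 'k pel set) module)
            = loewy (Aalg n Delta) (Pmod n Delta i :: ('k pel set, 'k pel set) module) - (k - n)"
      unfolding lP loewy_P[OF n2 Dsub Dne kn] using part3[OF n2 Dsub Dne i] k lP by simp
    qed
  next
    show "\<forall>k (P :: ('k pel set, 'p) module) p.
        0 < k \<and> k < loewy (Aalg n Delta) (Pmod n Delta i :: ('k pel set, 'k pel set) module) \<and>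
        proj_cover (Aalg n Delta) P (Lmod n Delta i k) p
        \<longrightarrow> mod_iso (Aalg n Delta) (sub_module P (mod_ker P (Lmod n Delta i k) p))
              (Lmod n Delta ((sig n ^^ k) i)
                 (loewy (Aalg n Delta) (Pmod n Delta i :: ('k pel set, 'k pel set) module) - k))"
    proof (intro allI impI)
    fix k and P :: "('k pel set, 'p) module" and p
    assume a: "0 < k \<and> k < loewy (Aalg n Delta) (Pmod n Delta i :: ('k pel set, 'k pel set) module) \<and>
        proj_cover (Aalg n Delta) P (Lmod n Delta i k) p"
    then have "mod_iso (Aalg n Delta) (sub_module P (mod_ker P (Lmod n Delta i k) p))
           (Lmod n Delta ((sig n ^^ k) i) (n + r0 n Delta i - k))"
      using part4[OF n2 Dsub Dne i, of k P p] lP by simp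
    then show "mod_iso (Aalg n Delta) (sub_module P (mod_ker P (Lmod n Delta i k) p))
              (Lmod n Delta ((sig n ^^ k) i)
                 (loewy (Aalg n Delta) (Pmod n Delta i :: ('k pel set, 'k pel set) module) - k))"
      unfolding lP .
    qed
  qed
qed

end
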